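(* Fix $k\ge 1$ and let $(\mathbf A,\mathbf A')$ and $(\mathbf B,\mathbf B')$ be promise templates (with $\mathbf B$ finite as well). The following are equivalent: (1) there exist a Datalog interpretation $\phi$ of width at most $k$ and a gadget $\gamma$ such that $\gamma\circ\phi$ is a reduction from $\mathrm{PCSP}(\mathbf A,\mathbf A')$ to $\mathrm{PCSP}(\mathbf B,\mathbf B')$; (2) the $k$-consistency reduction $\kappa_k^{\mathbf A,\mathbf B}$ is a reduction from $\mathrm{PCSP}(\mathbf A,\mathbf A')$ to $\mathrm{PCSP}(\mathbf B,\mathbf B')$.
   Context: Structures. A (multisorted relational) signature consists of types and relation symbols, each symbol $R$ having an arity $\mathrm{ar}_R$, a tuple of types. A structure $\mathbf A$ consists of a set $A_t$ per type and relations $R^{\mathbf A}\subseteq A_{\mathrm{ar}_R(1)}\times\dots\times A_{\mathrm{ar}_R(k)}$; elements of different types are distinct. A homomorphism is a type-preserving family of maps preserving all relations; write $\mathbf A\to\mathbf B$. For a finite set $F$, the power $\mathbf B^F$ has domains $B_t^F$ (maps $F\to B_t$) and $(b_1,\dots,b_m)\in R^{\mathbf B^F}$ iff $(b_1(i),\dots,b_m(i))\in R^{\mathbf B}$ for all $i\in F$. Promise CSP. A promise template is a pair $(\mathbf A,\mathbf A')$ of structures of the same signature, $\mathbf A$ finite, $\mathbf A\to\mathbf A'$. $\mathrm{PCSP}(\mathbf A,\mathbf A')$: given finite $\mathbf X$, answer yes if $\mathbf X\to\mathbf A$, no if $\mathbf X\not\to\mathbf A'$. A map $\psi$ on structures is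 a reduction from $\mathrm{PCSP}(\mathbf A,\mathbf A')$ to $\mathrm{PCSP}(\mathbf B,\mathbf B')$ if $\mathbf X\to\mathbf A\Rightarrow\psi(\mathbf X)\to\mathbf B$ and $\psi(\mathbf X)\to\mathbf B'\Rightarrow\mathbf X\to\mathbf A'$. Datalog interpretations. A Datalog program with input signature $\Pi$: a signature $\Delta\supseteq\Pi$ with the same types, finitely many rules $t_0\leftarrow t_1,\dots,t_r$ with typed atomic $\Delta$-formulas (relational atoms or equalities; heads use neither $\Pi$-symbols nor equality), a designated output symbol, least-fixed-point semantics; its width is the maximum number of variables in a rule. A Datalog interpretation $\phi$ from $\Pi$- to $\Sigma$-structures: a program $\phi_t$ per $\Sigma$-type and $\phi_R$ per $\Sigma$-symbol (arity of $\phi_R$ = concatenation of arities of $\phi_{\mathrm{ar}_R(i)}$); $\phi(\mathbf A)$ has $t$-th domain $\phi_t(\mathbf A)$ and $(w_1,\dots,w_k)\in R^{\phi(\mathbf A)}$ iff the concatenation is in $\phi_R(\mathbf A)$. Its width is the maximal width of its programs. Gadgets. A gadget $\gamma$ from $\Pi$- to $\Sigma$-structures: a $\Sigma$-structure $\mathbf D_t^\gamma$ per $\Pi$-type $t$, a $\Sigma$-structure $\mathbf R^\gamma$ per $\Pi$-symbol $R$, and homomorphisms $p_{R,i}^\gamma\colon\mathbf D^\gamma_{\mathrm{ar}_R(i)}\to\mathbf R^\gamma$. $\gamma(\mathbf A)$: a copy of $\mathbf D^\gamma_t$ per $a\in A_t$ (elements $(a;d)$), a copy of $\mathbf R^\gamma$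 per $a\in R^{\mathbf A}$ (elements $(a;e)$), identify $(a;p^\gamma_{R,i}(e))$ with $(a_i;e)$, and take the quotient. $k$-consistency reduction. Let $\mathbf A$ be a $\Pi$-structure and $\mathbf B$ a $\Sigma$-structure. For a $\Pi$-structure $\mathbf X$ and a set $K$ of at most $k$ elements of $\mathbf X$, a partial homomorphism $K\to\mathbf A$ is a type-preserving map $f\colon K\to A$ such that $(f(v_1),\dots,f(v_m))\in R^{\mathbf A}$ for every $(v_1,\dots,v_m)\in R^{\mathbf X}$ with all $v_i\in K$. $\kappa_k^{\mathbf A,\mathbf B}(\mathbf X)$ is built as follows: (1) for each $K$ with $|K|\le k$ let $\mathcal F_K$ be the set of partial homomorphisms $K\to\mathbf A$; (2) for each $L\subset K$ (both of size $\le k$), remove from $\mathcal F_L$ every $h$ that is not the restriction of some $g\in\mathcal F_K$, and remove from $\mathcal F_K$ every $g$ with $g|_L\notin\mathcal F_L$; (3) repeat (2) until nothing changes; (4) for each $K$ take a copy of $\mathbf B^{\mathcal F_K}$ with elements $(K;b)$, $b\colon\mathcal F_K\to B_t$; (5) for each $L\subseteq K$ and $b\colon\mathcal F_L\to B_t$ identify $(K;b\circ\rho_{K,L})$ with $(L;b)$, where $\rho_{K,L}\colon\mathcal F_K\to\mathcal F_L$ is restriction $g\mapsto g|_L$. The output is the quotient by the generated equivalence relation, with relations the images of those of the copies. *)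

theory Defs
  imports Main "HOL-Library.FuncSet"
begin

section \<open>Multisorted relational structures\<close>

(* A signature is given by a type of sorts 's, a type of relation symbols 'r and an
   arity map ar :: 'r => 's list.  A structure has a domain per sort and a relation per
   symbol (tuples are lists). *)
record ('s, 'r, 'e) struct =
  sdom :: "'s \<Rightarrow> 'e set"
  srel :: "'r \<Rightarrow> 'e list set"

definition elems :: "('s, 'r, 'e) struct \<Rightarrow> 'e set" where
  "elems A = (\<Union>s. sdom A s)"

definition wf_struct :: "('r \<Rightarrow> 's list) \<Rightarrow> ('s, 'r, 'e) struct \<Rightarrow> bool" where
  "wf_struct ar A \<longleftrightarrow>
     (\<forall>s s'. s \<noteq> s' \<longrightarrow> sdom A s \<inter> sdom A s' = {}) \<and>
     (\<forall>R. \<forall>tup \<in> srel A R. list_all2 (\<lambda>x s. x \<in> sdom A s) tup (ar R))"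

definition finite_struct :: "('s, 'r, 'e) struct \<Rightarrow> bool" where
  "finite_struct A \<longleftrightarrow> (\<forall>s. finite (sdom A s))"

definition is_hom :: "('s, 'r, 'e) struct \<Rightarrow> ('s, 'r, 'f) struct \<Rightarrow> ('e \<Rightarrow> 'f) \<Rightarrow> bool" where
  "is_hom A B h \<longleftrightarrow>
     (\<forall>s. \<forall>a \<in> sdom A s. h a \<in> sdom B s) \<and>
     (\<forall>R. \<forall>tup \<in> srel A R. map h tup \<in> srel B R)"

definition hom_to :: "('s, 'r, 'e) struct \<Rightarrow> ('s, 'r, 'f) struct \<Rightarrow> bool" (infix "\<rightarrow>\<^sub>h" 50) where
  "A \<rightarrow>\<^sub>h B \<longleftrightarrow> (\<exists>h. is_hom A B h)"

text \<open>Power B^F: elements of sort t are (tagged) maps F -> B_t.\<close>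
definition power :: "('r \<Rightarrow> 's list) \<Rightarrow> ('s, 'r, 'b) struct \<Rightarrow> 'f set
                     \<Rightarrow> ('s, 'r, 's \<times> ('f \<Rightarrow> 'b)) struct" where
  "power ar B F =
     \<lparr> sdom = (\<lambda>t. {(t, b) | b. b \<in> F \<rightarrow>\<^sub>E sdom B t}),
       srel = (\<lambda>R. {bs. length bs = length (ar R) \<and>
                        (\<forall>i < length bs. fst (bs ! i) = ar R ! i \<and>
                                         snd (bs ! i) \<in> F \<rightarrow>\<^sub>E sdom B (ar R ! i)) \<and>
                        (\<forall>f \<in> F. map (\<lambda>b. snd b f) bs \<in> srel B R)}) \<rparr>"

section \<open>Promise templates and reductions\<close>

definition promise_template :: "('r \<Rightarrow> 's list) \<Rightarrow> ('s, 'r, 'a) struct \<Rightarrow> ('s, 'r, 'b) struct \<Rightarrow> bool" where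
  "promise_template ar A A' \<longleftrightarrow>
     wf_struct ar A \<and> wf_struct ar A' \<and> finite_struct A \<and> A \<rightarrow>\<^sub>h A'"

text \<open>A reduction from PCSP(A,A') to PCSP(B,B'); instances X are finite structures whose
  elements are natural numbers (every finite structure is isomorphic to such a one).\<close>
definition pcsp_reduction ::
  "('rp \<Rightarrow> 'sp list) \<Rightarrow> ('sp, 'rp, 'a) struct \<Rightarrow> ('sp, 'rp, 'a2) struct
   \<Rightarrow> ('sb, 'rb, 'b) struct \<Rightarrow> ('sb, 'rb, 'b2) struct
   \<Rightarrow> (('sp, 'rp, nat) struct \<Rightarrow> ('sb, 'rb, 'y) struct) \<Rightarrow> bool" where
  "pcsp_reduction arP A A' B B' \<psi> \<longleftrightarrow>
     (\<forall>X :: ('sp, 'rp, nat) struct. wf_struct arP X \<and> finite_struct X \<longrightarrow>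
        (X \<rightarrow>\<^sub>h A \<longrightarrow> \<psi> X \<rightarrow>\<^sub>h B) \<and> (\<psi> X \<rightarrow>\<^sub>h B' \<longrightarrow> X \<rightarrow>\<^sub>h A'))"

section \<open>Datalog programs and interpretations\<close>

text \<open>Symbols of the extended signature Delta: Inl R for input symbols, Inr n for
  (IDB) symbols n :: nat.  Variables are natural numbers.\<close>
datatype 'pr atom = Rel "'pr + nat" "nat list" | Eq nat nat

record ('ps, 'pr) drule =
  hd_sym  :: nat
  hd_args :: "nat list"
  body    :: "'pr atom list"
  vty     :: "nat \<Rightarrow> 'ps"

record ('ps, 'pr) prog =
  rules  :: "('ps, 'pr) drule list"
  idb_ar :: "nat \<Rightarrow> 'ps list"
  outp   :: nat

fun atom_vars :: "'pr atom \<Rightarrow> nat set" where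
  "atom_vars (Rel _ xs) = set xs"
| "atom_vars (Eq x y) = {x, y}"

definition rule_vars :: "('ps, 'pr) drule \<Rightarrow> nat set" where
  "rule_vars r = set (hd_args r) \<union> (\<Union>a \<in> set (body r). atom_vars a)"

fun wt_atom :: "('pr \<Rightarrow> 'ps list) \<Rightarrow> (nat \<Rightarrow> 'ps list) \<Rightarrow> (nat \<Rightarrow> 'ps) \<Rightarrow> 'pr atom \<Rightarrow> bool" where
  "wt_atom ar ia ty (Rel (Inl R) xs) = (map ty xs = ar R)"
| "wt_atom ar ia ty (Rel (Inr S) xs) = (map ty xs = ia S)"
| "wt_atom ar ia ty (Eq x y) = (ty x = ty y)"

definition wf_prog :: "('pr \<Rightarrow> 'ps list) \<Rightarrow> ('ps, 'pr) prog \<Rightarrow> bool" where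
  "wf_prog ar P \<longleftrightarrow>
     (\<forall>r \<in> set (rules P).
        map (vty r) (hd_args r) = idb_ar P (hd_sym r) \<and>
        (\<forall>a \<in> set (body r). wt_atom ar (idb_ar P) (vty r) a))"

definition prog_ar :: "('ps, 'pr) prog \<Rightarrow> 'ps list" where
  "prog_ar P = idb_ar P (outp P)"

definition prog_width :: "('ps, 'pr) prog \<Rightarrow> nat" where
  "prog_width P = Max (insert 0 ((\<lambda>r. card (rule_vars r)) ` set (rules P)))"

fun atom_holds :: "('ps, 'pr, 'e) struct \<Rightarrow> (nat \<times> 'e list) set \<Rightarrow> (nat \<Rightarrow> 'e) \<Rightarrow> 'pr atom \<Rightarrow> bool" where
  "atom_holds A I v (Rel (Inl R) xs) = (map v xs \<in> srel A R)"
| "atom_holds A I v (Rel (Inr S) xs) = ((S, map v xs) \<in> I)"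
| "atom_holds A I v (Eq x y) = (v x = v y)"

definition dl_step :: "('ps, 'pr) prog \<Rightarrow> ('ps, 'pr, 'e) struct \<Rightarrow> (nat \<times> 'e list) set \<Rightarrow> (nat \<times> 'e list) set" where
  "dl_step P A I =
     {(hd_sym r, map v (hd_args r)) | r v.
        r \<in> set (rules P) \<and> (\<forall>x \<in> rule_vars r. v x \<in> sdom A (vty r x)) \<and>
        (\<forall>a \<in> set (body r). atom_holds A I v a)}"

definition dl_output :: "('ps, 'pr) prog \<Rightarrow> ('ps, 'pr, 'e) struct \<Rightarrow> 'e list set" where
  "dl_output P A = {ts. (outp P, ts) \<in> lfp (dl_step P A)}"

record ('ps, 'pr, 'ss, 'sr) interp =
  iT :: "'ss \<Rightarrow> ('ps, 'pr) prog"
  iR :: "'sr \<Rightarrow> ('ps, 'pr) prog"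

definition wf_interp :: "('pr \<Rightarrow> 'ps list) \<Rightarrow> ('sr \<Rightarrow> 'ss list) \<Rightarrow> ('ps, 'pr, 'ss, 'sr) interp \<Rightarrow> bool" where
  "wf_interp arP arS \<phi> \<longleftrightarrow>
     (\<forall>s. wf_prog arP (iT \<phi> s)) \<and>
     (\<forall>R. wf_prog arP (iR \<phi> R) \<and>
          prog_ar (iR \<phi> R) = concat (map (\<lambda>s. prog_ar (iT \<phi> s)) (arS R)))"

definition interp_width_le :: "('ps, 'pr, 'ss, 'sr) interp \<Rightarrow> nat \<Rightarrow> bool" where
  "interp_width_le \<phi> k \<longleftrightarrow> (\<forall>s. prog_width (iT \<phi> s) \<le> k) \<and> (\<forall>R. prog_width (iR \<phi> R) \<le> k)"

text \<open>The output signature of an interpretation with sorts and symbols coded by natural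
  numbers is required to be finite: only finitely many sorts / symbols carry a nonempty
  program, and arities of those symbols only use those sorts.\<close>
definition interp_finite_sig :: "(nat \<Rightarrow> nat list) \<Rightarrow> ('ps, 'pr, nat, nat) interp \<Rightarrow> bool" where
  "interp_finite_sig arS \<phi> \<longleftrightarrow>
     (\<exists>St Sr. finite St \<and> finite Sr \<and>
        (\<forall>s. s \<notin> St \<longrightarrow> rules (iT \<phi> s) = []) \<and>
        (\<forall>R. R \<notin> Sr \<longrightarrow> rules (iR \<phi> R) = []) \<and>
        (\<forall>R \<in> Sr. set (arS R) \<subseteq> St))"

text \<open>Elements of sort s of phi(A) are the tuples of the output of phi_s, tagged by s.\<close>
definition interp_app :: "('sr \<Rightarrow> 'ss list) \<Rightarrow> ('ps, 'pr, 'ss, 'sr) interp \<Rightarrow> ('ps, 'pr, 'e) struct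
                          \<Rightarrow> ('ss, 'sr, 'ss \<times> 'e list) struct" where
  "interp_app arS \<phi> A =
     \<lparr> sdom = (\<lambda>s. {(s, w) | w. w \<in> dl_output (iT \<phi> s) A}),
       srel = (\<lambda>R. {zip (arS R) ws | ws. length ws = length (arS R) \<and>
                       (\<forall>i < length ws. ws ! i \<in> dl_output (iT \<phi> (arS R ! i)) A) \<and>
                       concat ws \<in> dl_output (iR \<phi> R) A}) \<rparr>"

section \<open>Gluing copies of structures along identifications\<close>

definition glue_pre :: "'i set \<Rightarrow> ('i \<Rightarrow> ('s, 'r, 'c) struct) \<Rightarrow> ('i \<times> 'c) set" where
  "glue_pre I C = {(i, c). i \<in> I \<and> c \<in> elems (C i)}"

definition glue_eq :: "'i set \<Rightarrow> ('i \<Rightarrow> ('s, 'r, 'c) struct) \<Rightarrow> (('i \<times> 'c) \<times> ('i \<times> 'c)) set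
                       \<Rightarrow> (('i \<times> 'c) \<times> ('i \<times> 'c)) set" where
  "glue_eq I C E =
     (let E' = E \<inter> (glue_pre I C \<times> glue_pre I C) in (E' \<union> E'\<inverse>)\<^sup>*)"

definition glue :: "'i set \<Rightarrow> ('i \<Rightarrow> ('s, 'r, 'c) struct) \<Rightarrow> (('i \<times> 'c) \<times> ('i \<times> 'c)) set
                    \<Rightarrow> ('s, 'r, ('i \<times> 'c) set) struct" where
  "glue I C E =
     \<lparr> sdom = (\<lambda>s. {glue_eq I C E `` {(i, c)} | i c. i \<in> I \<and> c \<in> sdom (C i) s}),
       srel = (\<lambda>R. {map (\<lambda>c. glue_eq I C E `` {(i, c)}) tup | i tup.
                       i \<in> I \<and> tup \<in> srel (C i) R}) \<rparr>"

section \<open>Gadgets\<close>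

record ('ss, 'sr, 'bs, 'br, 'g) gadget =
  gD :: "'ss \<Rightarrow> ('bs, 'br, 'g) struct"
  gR :: "'sr \<Rightarrow> ('bs, 'br, 'g) struct"
  gp :: "'sr \<Rightarrow> nat \<Rightarrow> 'g \<Rightarrow> 'g"

definition wf_gadget :: "('sr \<Rightarrow> 'ss list) \<Rightarrow> ('br \<Rightarrow> 'bs list) \<Rightarrow> ('ss, 'sr, 'bs, 'br, 'g) gadget \<Rightarrow> bool" where
  "wf_gadget arS arB \<gamma> \<longleftrightarrow>
     (\<forall>t. wf_struct arB (gD \<gamma> t)) \<and> (\<forall>R. wf_struct arB (gR \<gamma> R)) \<and>
     (\<forall>R i. i < length (arS R) \<longrightarrow> is_hom (gD \<gamma> (arS R ! i)) (gR \<gamma> R) (gp \<gamma> R i))"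

definition gadget_app :: "('sr \<Rightarrow> 'ss list) \<Rightarrow> ('ss, 'sr, 'bs, 'br, 'g) gadget \<Rightarrow> ('ss, 'sr, 'e) struct
      \<Rightarrow> ('bs, 'br, ((('ss \<times> 'e) + ('sr \<times> 'e list)) \<times> 'g) set) struct" where
  "gadget_app arS \<gamma> Y =
     glue ({Inl (t, a) | t a. a \<in> sdom Y t} \<union> {Inr (R, tup) | R tup. tup \<in> srel Y R})
          (\<lambda>i. case i of Inl (t, a) \<Rightarrow> gD \<gamma> t | Inr (R, tup) \<Rightarrow> gR \<gamma> R)
          {((Inr (R, tup), gp \<gamma> R i d), (Inl (arS R ! i, tup ! i), d)) | R tup i d.
              tup \<in> srel Y R \<and> i < length (arS R) \<and> d \<in> elems (gD \<gamma> (arS R ! i))}"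

section \<open>The k-consistency reduction\<close>

definition partial_hom :: "('ps, 'pr, 'x) struct \<Rightarrow> ('ps, 'pr, 'a) struct \<Rightarrow> 'x set \<Rightarrow> ('x \<Rightarrow> 'a option) \<Rightarrow> bool" where
  "partial_hom X A K f \<longleftrightarrow>
     dom f = K \<and>
     (\<forall>t. \<forall>v \<in> K \<inter> sdom X t. \<exists>a \<in> sdom A t. f v = Some a) \<and>
     (\<forall>R. \<forall>tup \<in> srel X R. set tup \<subseteq> K \<longrightarrow> map (the \<circ> f) tup \<in> srel A R)"

definition kc_sets :: "nat \<Rightarrow> ('ps, 'pr, 'x) struct \<Rightarrow> 'x set set" where
  "kc_sets k X = {K. K \<subseteq> elems X \<and> finite K \<and> card K \<le> k}"

definition kc_init :: "nat \<Rightarrow> ('ps, 'pr, 'x) struct \<Rightarrow> ('ps, 'pr, 'a) struct \<Rightarrow> 'x set \<Rightarrow> ('x \<Rightarrow> 'a option) set" where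
  "kc_init k X A K = (if K \<in> kc_sets k X then {f. partial_hom X A K f} else {})"

text \<open>One round of step (2), performed for all pairs L \<subseteq> K simultaneously.\<close>
definition kc_step :: "nat \<Rightarrow> ('ps, 'pr, 'x) struct \<Rightarrow> ('x set \<Rightarrow> ('x \<Rightarrow> 'a option) set)
                       \<Rightarrow> ('x set \<Rightarrow> ('x \<Rightarrow> 'a option) set)" where
  "kc_step k X F = (\<lambda>K.
     {g \<in> F K. (\<forall>L \<in> kc_sets k X. L \<subseteq> K \<longrightarrow> g |` L \<in> F L) \<and>
              (\<forall>M \<in> kc_sets k X. K \<subseteq> M \<longrightarrow> (\<exists>g' \<in> F M. g' |` K = g))})"

text \<open>Step (3): repeat until nothing changes (the decreasing sequence stabilises for finite X).\<close>
definition kc_family :: "nat \<Rightarrow> ('ps, 'pr, 'x) struct \<Rightarrow> ('ps, 'pr, 'a) struct \<Rightarrow> 'x set \<Rightarrow> ('x \<Rightarrow> 'a option) set" where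
  "kc_family k X A = (\<lambda>K. \<Inter>n. ((kc_step k X ^^ n) (kc_init k X A)) K)"

definition kappa :: "('pr \<Rightarrow> 'ps list) \<Rightarrow> ('br \<Rightarrow> 'bs list) \<Rightarrow> nat \<Rightarrow> ('ps, 'pr, 'a) struct
      \<Rightarrow> ('bs, 'br, 'b) struct \<Rightarrow> ('ps, 'pr, 'x) struct
      \<Rightarrow> ('bs, 'br, ('x set \<times> ('bs \<times> (('x \<Rightarrow> 'a option) \<Rightarrow> 'b))) set) struct" where
  "kappa arP arB k A B X =
     (let F = kc_family k X A in
      glue (kc_sets k X) (\<lambda>K. power arB B (F K))
        {((K, (t, restrict (\<lambda>g. b (g |` L)) (F K))), (L, (t, b))) | K L t b.
            K \<in> kc_sets k X \<and> L \<in> kc_sets k X \<and> L \<subseteq> K \<and> b \<in> F L \<rightarrow>\<^sub>E sdom B t})"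

end

theory Submission
  imports Defs
begin


lemma is_hom_comp: "is_hom A B h \<Longrightarrow> is_hom B C g \<Longrightarrow> is_hom A C (g \<circ> h)"
  unfolding is_hom_def by (auto simp: map_map[symmetric] simp del: map_map)

lemma hom_to_trans: "A \<rightarrow>\<^sub>h B \<Longrightarrow> B \<rightarrow>\<^sub>h C \<Longrightarrow> A \<rightarrow>\<^sub>h C"
  unfolding hom_to_def using is_hom_comp by blast

lemma glue_eq_const:
  assumes resp: "\<And>p q. (p,q) \<in> E \<Longrightarrow> p \<in> glue_pre I C \<Longrightarrow> q \<in> glue_pre I C \<Longrightarrow> m p = m q"
    and "(p, q) \<in> glue_eq I C E"
  shows "m p = m q"
proof -
  let ?E' = "E \<inter> (glue_pre I C \<times> glue_pre I C)"
  have "(p,q) \<in> (?E' \<union> ?E'\<inverse>)\<^sup>*" using assms(2) by (simp add: glue_eq_def Let_def)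
  then show ?thesis
  proof (induction rule: rtrancl_induct)
    case base then show ?case by simp
  next
    case (step y z) then show ?case using resp[of y z] resp[of z y] by auto
  qed
qed

definition glue_map :: "('i \<times> 'c \<Rightarrow> 'x) \<Rightarrow> ('i \<times> 'c) set \<Rightarrow> 'x" where
  "glue_map m cls = m (SOME p. p \<in> cls)"

lemma glue_map_eq:
  assumes resp: "\<And>p q. (p,q) \<in> E \<Longrightarrow> p \<in> glue_pre I C \<Longrightarrow> q \<in> glue_pre I C \<Longrightarrow> m p = m q"
  shows "glue_map m (glue_eq I C E `` {p}) = m p"
proof -
  have "p \<in> glue_eq I C E `` {p}" by (simp add: glue_eq_def Let_def)
  then have ex: "\<exists>q. q \<in> glue_eq I C E `` {p}" by blast
  have "(p, SOME q. q \<in> glue_eq I C E `` {p}) \<in> glue_eq I C E"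
    using someI_ex[OF ex] by simp
  moreover have "\<And>q. (p,q) \<in> glue_eq I C E \<Longrightarrow> m p = m q"
    by (rule glue_eq_const) (rule resp)
  ultimately show ?thesis unfolding glue_map_def by metis
qed

lemma glue_hom:
  assumes resp: "\<And>p q. (p,q) \<in> E \<Longrightarrow> p \<in> glue_pre I C \<Longrightarrow> q \<in> glue_pre I C \<Longrightarrow> m p = m q"
    and homs: "\<And>i. i \<in> I \<Longrightarrow> is_hom (C i) T (\<lambda>c. m (i, c))"
  shows "is_hom (glue I C E) T (glue_map m)"
proof -
  have gm: "\<And>p. glue_map m (glue_eq I C E `` {p}) = m p"
    by (rule glue_map_eq) (rule resp)
  show ?thesis unfolding is_hom_def
proof (intro conjI allI ballI)
  fix s a assume "a \<in> sdom (glue I C E) s"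
  then obtain i c where a: "a = glue_eq I C E `` {(i, c)}" "i \<in> I" "c \<in> sdom (C i) s"
    by (auto simp: glue_def)
  then show "glue_map m a \<in> sdom T s" using gm homs[of i]
    by (auto simp: is_hom_def)
next
  fix R tup assume "tup \<in> srel (glue I C E) R"
  then obtain i t where a: "tup = map (\<lambda>c. glue_eq I C E `` {(i, c)}) t" "i \<in> I" "t \<in> srel (C i) R"
    by (auto simp: glue_def)
  have "map (glue_map m) tup = map (\<lambda>c. m (i,c)) t"
    using a(1) gm by (simp add: o_def)
  moreover have "map (\<lambda>c. m (i,c)) t \<in> srel T R" using homs[of i] a(2,3) by (auto simp: is_hom_def)
  ultimately show "map (glue_map m) tup \<in> srel T R" by simp
qed
qed

lemma glue_in_dom:
  "i \<in> I \<Longrightarrow> c \<in> sdom (C i) s \<Longrightarrow> glue_eq I C E `` {(i,c)} \<in> sdom (glue I C E) s"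
  by (auto simp: glue_def)

lemma glue_in_rel:
  "i \<in> I \<Longrightarrow> t \<in> srel (C i) R \<Longrightarrow> map (\<lambda>c. glue_eq I C E `` {(i,c)}) t \<in> srel (glue I C E) R"
  by (auto simp: glue_def)

lemma glue_ident:
  assumes "(p,q) \<in> E" "p \<in> glue_pre I C" "q \<in> glue_pre I C"
  shows "glue_eq I C E `` {p} = glue_eq I C E `` {q}"
proof -
  let ?E' = "E \<inter> (glue_pre I C \<times> glue_pre I C)"
  let ?R = "(?E' \<union> ?E'\<inverse>)\<^sup>*"
  have pq: "(p,q) \<in> ?R" "(q,p) \<in> ?R" using assms by auto
  have "?R `` {p} = ?R `` {q}"
  proof
    show "?R `` {p} \<subseteq> ?R `` {q}"
    proof
      fix x assume "x \<in> ?R `` {p}"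
      then have "(p,x) \<in> ?R" by simp
      then have "(q,x) \<in> ?R" by (rule rtrancl_trans[OF pq(2)])
      then show "x \<in> ?R `` {q}" by simp
    qed
    show "?R `` {q} \<subseteq> ?R `` {p}"
    proof
      fix x assume "x \<in> ?R `` {q}"
      then have "(q,x) \<in> ?R" by simp
      then have "(p,x) \<in> ?R" by (rule rtrancl_trans[OF pq(1)])
      then show "x \<in> ?R `` {p}" by simp
    qed
  qed
  then show ?thesis by (simp add: glue_eq_def Let_def)
qed

lemma glue_ident_trans:
  assumes "glue_eq I C E `` {p} = glue_eq I C E `` {q}" "glue_eq I C E `` {q} = glue_eq I C E `` {r}"
  shows "glue_eq I C E `` {p} = glue_eq I C E `` {r}" using assms by simp


section \<open>k-consistency family\<close>

definition kcI :: "nat \<Rightarrow> ('ps, 'pr, 'x) struct \<Rightarrow> ('ps, 'pr, 'a) struct \<Rightarrow> nat \<Rightarrow> 'x set \<Rightarrow> ('x \<Rightarrow> 'a option) set"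
  where "kcI k X A n = (kc_step k X ^^ n) (kc_init k X A)"

lemma kcI_0[simp]: "kcI k X A 0 = kc_init k X A" by (simp add: kcI_def)
lemma kcI_Suc[simp]: "kcI k X A (Suc n) = kc_step k X (kcI k X A n)" by (simp add: kcI_def)
lemma kc_family_def': "kc_family k X A K = (\<Inter>n. kcI k X A n K)" by (simp add: kc_family_def kcI_def)

lemma kc_step_sub: "kc_step k X F K \<subseteq> F K"
  by (auto simp: kc_step_def)

lemma kcI_Suc_sub: "kcI k X A (Suc n) K \<subseteq> kcI k X A n K"
  using kc_step_sub by simp

lemma kcI_mono: "m \<le> n \<Longrightarrow> kcI k X A n K \<subseteq> kcI k X A m K"
proof (induction n)
  case 0 then show ?case by simp
next
  case (Suc n)
  then show ?case using kcI_Suc_sub[of k X A n K] by (cases "m = Suc n") auto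
qed

lemma kcI_init: "f \<in> kcI k X A n K \<Longrightarrow> K \<in> kc_sets k X \<and> partial_hom X A K f"
proof (induction n arbitrary: K f)
  case 0 then show ?case by (auto simp: kc_init_def split: if_splits)
next
  case (Suc n) then show ?case using kcI_Suc_sub by blast
qed

lemma kc_family_init: "f \<in> kc_family k X A K \<Longrightarrow> K \<in> kc_sets k X \<and> partial_hom X A K f"
  unfolding kc_family_def' using kcI_init[of f k X A 0 K] by blast

lemma kc_family_iff: "f \<in> kc_family k X A K \<longleftrightarrow> (\<forall>n. f \<in> kcI k X A n K)"
  by (simp add: kc_family_def')

lemma kc_family_down:
  assumes "f \<in> kc_family k X A K" "L \<in> kc_sets k X" "L \<subseteq> K"
  shows "f |` L \<in> kc_family k X A L"
  unfolding kc_family_iff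
proof
  fix n
  have "f \<in> kcI k X A (Suc n) K" using assms(1) kc_family_iff by blast
  then show "f |` L \<in> kcI k X A n L" using assms(2,3) by (auto simp: kc_step_def)
qed

lemma restrict_map_partial_hom:
  assumes "is_hom X A h" "K \<subseteq> elems X"
  shows "partial_hom X A K ((\<lambda>x. Some (h x)) |` K)"
  unfolding partial_hom_def
proof (intro conjI allI ballI impI)
  show "dom ((\<lambda>x. Some (h x)) |` K) = K" by (auto simp: restrict_map_def split: if_splits)
  fix t v assume "v \<in> K \<inter> sdom X t"
  then show "\<exists>a\<in>sdom A t. ((\<lambda>x. Some (h x)) |` K) v = Some a" using assms(1) by (auto simp: is_hom_def)
next
  fix R tup assume "tup \<in> srel X R" "set tup \<subseteq> K"
  then have "map (the \<circ> ((\<lambda>x. Some (h x)) |` K)) tup = map h tup"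
    by (intro map_cong) (auto simp: restrict_map_def)
  moreover have "map h tup \<in> srel A R" using assms(1) \<open>tup \<in> srel X R\<close> by (simp add: is_hom_def)
  ultimately show "map (the \<circ> ((\<lambda>x. Some (h x)) |` K)) tup \<in> srel A R" by metis
qed

lemma kc_family_hom:
  assumes "is_hom X A h" "K \<in> kc_sets k X"
  shows "(\<lambda>x. Some (h x)) |` K \<in> kc_family k X A K"
  unfolding kc_family_iff
proof
  fix n show "(\<lambda>x. Some (h x)) |` K \<in> kcI k X A n K" using assms(2)
  proof (induction n arbitrary: K)
    case 0
    then have "K \<subseteq> elems X" by (simp add: kc_sets_def)
    from restrict_map_partial_hom[OF assms(1) this] show ?case using 0 by (simp add: kc_init_def)
  next
    case (Suc n)
    have eq: "((\<lambda>x. Some (h x)) |` M) |` L = (\<lambda>x. Some (h x)) |` L" if "L \<subseteq> M" for L M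
      using that by (auto simp: restrict_map_def fun_eq_iff)
    have A: "(\<lambda>x. Some (h x)) |` K \<in> kcI k X A n K" using Suc.IH Suc.prems by blast
    have B: "((\<lambda>x. Some (h x)) |` K) |` L \<in> kcI k X A n L" if "L \<in> kc_sets k X" "L \<subseteq> K" for L
      using Suc.IH[OF that(1)] eq[OF that(2)] by simp
    have C: "\<exists>g'\<in>kcI k X A n M. g' |` K = (\<lambda>x. Some (h x)) |` K" if "M \<in> kc_sets k X" "K \<subseteq> M" for M
      using Suc.IH[OF that(1)] eq[OF that(2)] by blast
    show ?case using A B C by (simp add: kc_step_def)
  qed
qed

lemma elems_finite:
  assumes "finite_struct X" shows "finite (elems (X :: ('s::finite,'r,'e) struct))"
  using assms unfolding elems_def finite_struct_def by (intro finite_UN_I) auto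

lemma kc_sets_finite: "finite (elems X) \<Longrightarrow> finite (kc_sets k X)"
  unfolding kc_sets_def by (rule finite_subset[of _ "Pow (elems X)"]) auto

lemma partial_hom_ran: 
  assumes "partial_hom X A K f" "K \<subseteq> elems X" shows "ran f \<subseteq> elems A"
proof
  fix y assume "y \<in> ran f"
  then obtain x where x: "f x = Some y" by (auto simp: ran_def)
  then have "x \<in> K" using assms(1) by (auto simp: partial_hom_def)
  then obtain t where t: "x \<in> sdom X t" using assms(2) by (auto simp: elems_def)
  then obtain a where "a \<in> sdom A t" "f x = Some a" using assms(1) \<open>x \<in> K\<close> unfolding partial_hom_def by blast
  then show "y \<in> elems A" using x by (auto simp: elems_def)
qed

lemma kc_init_finite:
  assumes "finite (elems X)" "finite (elems A)"
  shows "finite (kc_init k X A K)"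
proof (cases "K \<in> kc_sets k X")
  case True
  have "kc_init k X A K \<subseteq> {m. dom m = K \<and> ran m \<subseteq> elems A}"
  proof
    fix f assume "f \<in> kc_init k X A K"
    then have ph: "partial_hom X A K f" using True by (simp add: kc_init_def)
    have "K \<subseteq> elems X" using True by (simp add: kc_sets_def)
    then show "f \<in> {m. dom m = K \<and> ran m \<subseteq> elems A}" using partial_hom_ran[OF ph] ph
      by (simp add: partial_hom_def)
  qed
  moreover have "finite K" using True by (auto simp: kc_sets_def)
  then have "finite {m. dom m = K \<and> ran m \<subseteq> elems A}" using finite_set_of_finite_maps[OF _ assms(2)] by blast
  ultimately show ?thesis by (rule finite_subset)
qed (simp add: kc_init_def)

lemma kc_stabilizes:
  assumes "finite (elems X)" "finite (elems A)"
  shows "\<exists>N. \<forall>K. kcI k X A (Suc N) K = kcI k X A N K"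
proof -
  define S where "S = kc_sets k X"
  have fS: "finite S" using kc_sets_finite assms(1) S_def by blast
  define s where "s n = (\<Sum>K\<in>S. card (kcI k X A n K))" for n
  have fin: "finite (kcI k X A n K)" for n K
    using kcI_mono[of 0 n k X A K] kc_init_finite[OF assms, of k K] finite_subset by auto
  have dec: "s (Suc n) \<le> s n" for n
    unfolding s_def by (rule sum_mono) (rule card_mono[OF fin kcI_Suc_sub])
  have "\<exists>N. s (Suc N) = s N"
  proof (rule ccontr)
    assume "\<not> ?thesis"
    then have lt: "s (Suc n) < s n" for n using dec[of n] le_neq_implies_less by blast
    have "s n + n \<le> s 0" for n
    proof (induction n)
      case (Suc n) then show ?case using lt[of n] by simp
    qed simp
    from this[of "Suc (s 0)"] show False by simp
  qed
  then obtain N where N: "s (Suc N) = s N" by blast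
  have "kcI k X A (Suc N) K = kcI k X A N K" for K
  proof (cases "K \<in> S")
    case True
    show ?thesis
    proof (rule ccontr)
      assume ne: "kcI k X A (Suc N) K \<noteq> kcI k X A N K"
      then have "card (kcI k X A (Suc N) K) < card (kcI k X A N K)"
        using kcI_Suc_sub[of k X A N K] fin by (meson psubset_card_mono psubset_eq)
      then have "s (Suc N) < s N" unfolding s_def
        using True fS card_mono[OF fin kc_step_sub] by (intro sum_strict_mono_ex1) auto
      then show False using N by simp
    qed
  next
    case False
    then have "kcI k X A n K = {}" for n
      using kcI_init unfolding S_def by blast
    then show ?thesis by metis
  qed
  then show ?thesis by blast
qed

lemma kc_family_up:
  assumes "finite (elems X)" "finite (elems A)"
    and "f \<in> kc_family k X A K" "M \<in> kc_sets k X" "K \<subseteq> M"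
  shows "\<exists>g \<in> kc_family k X A M. g |` K = f"
proof -
  obtain N where N: "\<And>K. kcI k X A (Suc N) K = kcI k X A N K" using kc_stabilizes[OF assms(1,2)] by blast
  have stab0: "kcI k X A (N + d) K = kcI k X A N K" for d K
  proof (induction d arbitrary: K)
    case 0 then show ?case by simp
  next
    case (Suc d)
    have "kcI k X A (N + Suc d) K = kc_step k X (kcI k X A (N + d)) K" by (simp del: kcI_Suc add: kcI_def)
    also have "kcI k X A (N + d) = kcI k X A N" using Suc by blast
    also have "kc_step k X (kcI k X A N) K = kcI k X A (Suc N) K" by (simp del: kcI_Suc add: kcI_def)
    finally show ?case using N by simp
  qed
  have stab: "kcI k X A n K = kcI k X A N K" if "n \<ge> N" for n K
    using stab0[of "n - N" K] that by simp
  have fam: "kc_family k X A K = kcI k X A N K" for K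
    unfolding kc_family_def'
  proof
    show "(\<Inter>n. kcI k X A n K) \<subseteq> kcI k X A N K" by blast
    show "kcI k X A N K \<subseteq> (\<Inter>n. kcI k X A n K)"
    proof
      fix g assume g: "g \<in> kcI k X A N K"
      show "g \<in> (\<Inter>n. kcI k X A n K)"
      proof
        fix n show "g \<in> kcI k X A n K"
          using g stab[of n K] kcI_mono[of n N k X A K] by (cases "n \<le> N") auto
      qed
    qed
  qed
  have "f \<in> kcI k X A (Suc N) K" using assms(3) fam N by simp
  then obtain g where "g \<in> kcI k X A N M" "g |` K = f" using assms(4,5) by (auto simp: kc_step_def)
  then show ?thesis using fam by blast
qed

section \<open>Datalog\<close>

lemma atom_holds_mono: "I \<subseteq> J \<Longrightarrow> atom_holds A I v a \<Longrightarrow> atom_holds A J v a"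
  by (induction A I v a rule: atom_holds.induct) auto

lemma dl_step_mono: 
  fixes A :: "('s, 'r, 'e) struct"
  shows "mono (dl_step P A)"
  unfolding mono_def
proof (intro allI impI)
  fix I J :: "(nat \<times> 'e list) set" assume "I \<subseteq> J"
  then show "dl_step P A I \<subseteq> dl_step P A J"
    unfolding dl_step_def using atom_holds_mono[OF \<open>I \<subseteq> J\<close>] by blast
qed

lemma lfp_fix: "dl_step P A (lfp (dl_step P A)) = lfp (dl_step P A)"
  by (rule sym) (rule lfp_unfold[OF dl_step_mono])

lemma lfp_rule:
  assumes "r \<in> set (rules P)" "\<forall>x \<in> rule_vars r. v x \<in> sdom A (vty r x)"
    "\<forall>a \<in> set (body r). atom_holds A (lfp (dl_step P A)) v a"
  shows "(hd_sym r, map v (hd_args r)) \<in> lfp (dl_step P A)"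
proof -
  have "(hd_sym r, map v (hd_args r)) \<in> dl_step P A (lfp (dl_step P A))"
    unfolding dl_step_def[of P A "lfp (dl_step P A)"]
    apply (rule CollectI)
    apply (rule exI[of _ r])
    apply (rule exI[of _ v])
    using assms by simp
  then show ?thesis by (subst (asm) lfp_fix)
qed

lemma lfp_inv:
  assumes "(S, ts) \<in> lfp (dl_step P A)"
  shows "\<exists>r v. r \<in> set (rules P) \<and> (\<forall>x \<in> rule_vars r. v x \<in> sdom A (vty r x)) \<and>
        (\<forall>a \<in> set (body r). atom_holds A (lfp (dl_step P A)) v a) \<and> S = hd_sym r \<and> ts = map v (hd_args r)"
proof -
  have "(S, ts) \<in> dl_step P A (lfp (dl_step P A))" using assms by (subst lfp_fix)
  then obtain r v where "r \<in> set (rules P)" "(\<forall>x \<in> rule_vars r. v x \<in> sdom A (vty r x))"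
        "(\<forall>a \<in> set (body r). atom_holds A (lfp (dl_step P A)) v a)" "S = hd_sym r" "ts = map v (hd_args r)"
    unfolding dl_step_def[of P A "lfp (dl_step P A)"] by auto
  then show ?thesis by blast
qed

lemma finite_atom_vars: "finite (atom_vars a)" by (cases a) auto

lemma finite_rule_vars: "finite (rule_vars r)"
  unfolding rule_vars_def using finite_atom_vars by auto

lemma prog_width_ge: "r \<in> set (rules P) \<Longrightarrow> card (rule_vars r) \<le> prog_width P"
  unfolding prog_width_def by (rule Max_ge) auto

lemma lfp_tuple_small:
  assumes "(S, ts) \<in> lfp (dl_step P A)"
  shows "set ts \<subseteq> elems A \<and> card (set ts) \<le> prog_width P"
proof -
  obtain r v where rv: "r \<in> set (rules P)" "\<forall>x \<in> rule_vars r. v x \<in> sdom A (vty r x)" "ts = map v (hd_args r)"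
    using lfp_inv[OF assms] by blast
  have sub: "set (hd_args r) \<subseteq> rule_vars r" by (auto simp: rule_vars_def)
  have "set ts \<subseteq> elems A" using rv sub by (auto simp: elems_def)
  moreover have "card (set ts) \<le> card (rule_vars r)"
  proof -
    have "card (set ts) \<le> card (set (hd_args r))" using rv(3) by (simp add: card_image_le)
    also have "\<dots> \<le> card (rule_vars r)" using sub finite_rule_vars by (rule card_mono[rotated])
    finally show ?thesis .
  qed
  ultimately show ?thesis using prog_width_ge[OF rv(1)] by linarith
qed


lemma kc_sets_subset: "V \<in> kc_sets k X \<Longrightarrow> W \<subseteq> V \<Longrightarrow> W \<in> kc_sets k X"
  unfolding kc_sets_def using card_mono[of V W] finite_subset[of W V] by auto

lemma dl_preserve:
  fixes X :: "('s,'r,'x) struct" and A :: "('s,'r,'a) struct" and C :: "('s,'r,'c) struct"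
    and F :: "'x set \<Rightarrow> ('x \<Rightarrow> 'a option) set"
  assumes width: "prog_width P \<le> k"
    and Fph: "\<And>K f. f \<in> F K \<Longrightarrow> K \<in> kc_sets k X \<and> partial_hom X A K f"
    and down: "\<And>K L f. f \<in> F K \<Longrightarrow> L \<in> kc_sets k X \<Longrightarrow> L \<subseteq> K \<Longrightarrow> f |` L \<in> F L"
    and up: "\<And>K M f. f \<in> F K \<Longrightarrow> M \<in> kc_sets k X \<Longrightarrow> K \<subseteq> M \<Longrightarrow> \<exists>g\<in>F M. g |` K = f"
    and iota: "is_hom A C \<iota>"
    and mem: "(S, ts) \<in> lfp (dl_step P X)"
  shows "\<forall>K f. set ts \<subseteq> K \<longrightarrow> f \<in> F K \<longrightarrow> (S, map (\<iota> \<circ> the \<circ> f) ts) \<in> lfp (dl_step P C)"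
proof -
  let ?Q = "{(S, ts). \<forall>K f. set ts \<subseteq> K \<longrightarrow> f \<in> F K \<longrightarrow> (S, map (\<iota> \<circ> the \<circ> f) ts) \<in> lfp (dl_step P C)}"
  have "lfp (dl_step P X) \<subseteq> ?Q"
  proof (rule lfp_induct[OF dl_step_mono])
    show "dl_step P X (inf (lfp (dl_step P X)) ?Q) \<subseteq> ?Q"
    proof
      fix z assume "z \<in> dl_step P X (inf (lfp (dl_step P X)) ?Q)"
      then obtain r v where rv: "r \<in> set (rules P)" "\<forall>x \<in> rule_vars r. v x \<in> sdom X (vty r x)"
        "\<forall>a \<in> set (body r). atom_holds X (inf (lfp (dl_step P X)) ?Q) v a"
        "z = (hd_sym r, map v (hd_args r))"
        unfolding dl_step_def[of P X "inf (lfp (dl_step P X)) ?Q"] by auto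
      show "z \<in> ?Q" unfolding rv(4)
      proof (intro CollectI case_prodI allI impI)
        fix K f assume K: "set (map v (hd_args r)) \<subseteq> K" and f: "f \<in> F K"
        define V where "V = v ` rule_vars r"
        have Vfin: "finite V" unfolding V_def by (rule finite_imageI[OF finite_rule_vars])
        have "card V \<le> card (rule_vars r)" unfolding V_def using finite_rule_vars by (rule card_image_le)
        also have "\<dots> \<le> k" using prog_width_ge[OF rv(1)] width by linarith
        finally have Vcard: "card V \<le> k" .
        have "V \<subseteq> elems X" using rv(2) unfolding V_def elems_def by blast
        then have Vkc: "V \<in> kc_sets k X" using Vfin Vcard by (simp add: kc_sets_def)
        have KVkc: "K \<inter> V \<in> kc_sets k X" using kc_sets_subset[OF Vkc] by blast
        have "f |` (K \<inter> V) \<in> F (K \<inter> V)" using down[OF f KVkc] by blast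
        then obtain g where g: "g \<in> F V" "g |` (K \<inter> V) = f |` (K \<inter> V)" using up[OF _ Vkc] by blast
        have gph: "partial_hom X A V g" using Fph[OF g(1)] by blast
        define v' where "v' = \<iota> \<circ> the \<circ> g \<circ> v"
        have inV: "v x \<in> V" if "x \<in> rule_vars r" for x using that V_def by blast
        have dom': "\<forall>x \<in> rule_vars r. v' x \<in> sdom C (vty r x)"
        proof
          fix x assume x: "x \<in> rule_vars r"
          then have "v x \<in> V \<inter> sdom X (vty r x)" using inV rv(2) by blast
          then obtain a where "a \<in> sdom A (vty r x)" "g (v x) = Some a"
            using gph unfolding partial_hom_def by blast
          then show "v' x \<in> sdom C (vty r x)" using iota unfolding v'_def is_hom_def by simp
        qed
        have body': "\<forall>a \<in> set (body r). atom_holds C (lfp (dl_step P C)) v' a"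
        proof
          fix a assume a: "a \<in> set (body r)"
          then have av: "atom_vars a \<subseteq> rule_vars r" unfolding rule_vars_def by blast
          have ah: "atom_holds X (inf (lfp (dl_step P X)) ?Q) v a" using rv(3) a by blast
          show "atom_holds C (lfp (dl_step P C)) v' a"
          proof (cases a)
            case (Rel Sy xs)
            show ?thesis
            proof (cases Sy)
              case (Inl R)
              have "map v xs \<in> srel X R" using ah Rel Inl by simp
              moreover have "set (map v xs) \<subseteq> V" using av Rel inV by auto
              ultimately have "map (the \<circ> g) (map v xs) \<in> srel A R" using gph unfolding partial_hom_def by blast
              then have "map \<iota> (map (the \<circ> g) (map v xs)) \<in> srel C R" using iota unfolding is_hom_def by blast
              then show ?thesis using Rel Inl by (simp add: v'_def o_assoc)
            next
              case (Inr S')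
              have "(S', map v xs) \<in> ?Q" using ah Rel Inr by simp
              moreover have "set (map v xs) \<subseteq> V" using av Rel inV by auto
              ultimately have "(S', map (\<iota> \<circ> the \<circ> g) (map v xs)) \<in> lfp (dl_step P C)" using g(1) by blast
              then show ?thesis using Rel Inr by (simp add: v'_def)
            qed
          next
            case (Eq x y)
            then show ?thesis using ah by (simp add: v'_def)
          qed
        qed
        have "(hd_sym r, map v' (hd_args r)) \<in> lfp (dl_step P C)" by (rule lfp_rule[OF rv(1) dom' body'])
        moreover have "map v' (hd_args r) = map ((\<iota> \<circ> the \<circ> f) \<circ> v) (hd_args r)"
        proof (rule map_cong[OF refl])
          fix x assume x: "x \<in> set (hd_args r)"
          then have "v x \<in> K \<inter> V" using K inV[of x] unfolding rule_vars_def by auto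
          then have "g (v x) = f (v x)" using g(2) by (metis restrict_in)
          then show "v' x = ((\<iota> \<circ> the \<circ> f) \<circ> v) x" by (simp add: v'_def)
        qed
        ultimately show "(hd_sym r, map (\<iota> \<circ> the \<circ> f) (map v (hd_args r))) \<in> lfp (dl_step P C)" by simp
      qed
    qed
  qed
  then show ?thesis using mem by blast
qed


section \<open>Nat copy\<close>

definition emap :: "('e \<Rightarrow> 'f) \<Rightarrow> ('s, 'r, 'e) struct \<Rightarrow> ('s, 'r, 'f) struct" where
  "emap \<iota> A = \<lparr> sdom = (\<lambda>s. \<iota> ` sdom A s), srel = (\<lambda>R. map \<iota> ` srel A R) \<rparr>"

lemma emap_hom: "is_hom A (emap \<iota> A) \<iota>"
  unfolding is_hom_def emap_def by auto

lemma wf_rel_elems: 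
  assumes "wf_struct ar A" "tup \<in> srel A R" shows "set tup \<subseteq> elems A"
proof
  fix x assume "x \<in> set tup"
  then obtain i where i: "i < length tup" "x = tup ! i" by (auto simp: in_set_conv_nth)
  have "list_all2 (\<lambda>x s. x \<in> sdom A s) tup (ar R)" using assms unfolding wf_struct_def by blast
  then have "x \<in> sdom A (ar R ! i)" using i by (auto simp: list_all2_conv_all_nth)
  then show "x \<in> elems A" by (auto simp: elems_def)
qed

lemma emap_hom_back:
  assumes "wf_struct ar A" "inj_on \<iota> (elems A)"
  shows "is_hom (emap \<iota> A) A (inv_into (elems A) \<iota>)"
  unfolding is_hom_def
proof (intro conjI allI ballI)
  fix s a assume "a \<in> sdom (emap \<iota> A) s"
  then obtain b where b: "b \<in> sdom A s" "a = \<iota> b" by (auto simp: emap_def)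
  then have "b \<in> elems A" by (auto simp: elems_def)
  then show "inv_into (elems A) \<iota> a \<in> sdom A s" using b assms(2) by simp
next
  fix R tup assume "tup \<in> srel (emap \<iota> A) R"
  then obtain t where t: "t \<in> srel A R" "tup = map \<iota> t" by (auto simp: emap_def)
  have "set t \<subseteq> elems A" using wf_rel_elems[OF assms(1) t(1)] .
  then have "map (inv_into (elems A) \<iota>) tup = t" using t(2) assms(2)
    by (auto intro: map_idI simp: subset_iff)
  then show "map (inv_into (elems A) \<iota>) tup \<in> srel A R" using t(1) by simp
qed

lemma emap_wf:
  fixes A :: "('s, 'r, 'e) struct" and \<iota> :: "'e \<Rightarrow> 'f"
  assumes "wf_struct ar A" "inj_on \<iota> (elems A)"
  shows "wf_struct ar (emap \<iota> A)"
  unfolding wf_struct_def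
proof (intro conjI allI impI ballI)
  fix s s' :: 's assume ne: "s \<noteq> s'"
  show "sdom (emap \<iota> A) s \<inter> sdom (emap \<iota> A) s' = {}"
  proof (rule ccontr)
    assume "sdom (emap \<iota> A) s \<inter> sdom (emap \<iota> A) s' \<noteq> {}"
    then obtain a b where ab: "a \<in> sdom A s" "b \<in> sdom A s'" "\<iota> a = \<iota> b" by (auto simp: emap_def)
    then have "a = b" using assms(2) by (auto simp: elems_def inj_on_def)
    then show False using ab assms(1) ne unfolding wf_struct_def by blast
  qed
next
  fix R tup assume "tup \<in> srel (emap \<iota> A) R"
  then obtain t where t: "t \<in> srel A R" "tup = map \<iota> t" by (auto simp: emap_def)
  have "list_all2 (\<lambda>x s. x \<in> sdom A s) t (ar R)" using assms(1) t(1) unfolding wf_struct_def by blast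
  then show "list_all2 (\<lambda>x s. x \<in> sdom (emap \<iota> A) s) tup (ar R)"
    unfolding t(2) list_all2_map1 by (rule list_all2_mono) (auto simp: emap_def)
qed

lemma emap_finite: "finite_struct A \<Longrightarrow> finite_struct (emap \<iota> A)"
  unfolding finite_struct_def emap_def by simp

lemma nat_copy:
  fixes A :: "('s::finite, 'r, 'a) struct"
  assumes "wf_struct ar A" "finite_struct A"
  shows "\<exists>XA :: ('s, 'r, nat) struct. wf_struct ar XA \<and> finite_struct XA \<and> A \<rightarrow>\<^sub>h XA \<and> XA \<rightarrow>\<^sub>h A"
proof -
  obtain \<iota> :: "'a \<Rightarrow> nat" and n where "inj_on \<iota> (elems A)"
    using finite_imp_inj_to_nat_seg[OF elems_finite[OF assms(2)]] by blast
  then show ?thesis using emap_wf[OF assms(1)] emap_finite[OF assms(2)] emap_hom emap_hom_back[OF assms(1)]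
    unfolding hom_to_def by blast
qed

definition bsort :: "('s, 'r, 'e) struct \<Rightarrow> 'e \<Rightarrow> 's" where
  "bsort D d = (SOME s. d \<in> sdom D s)"

lemma bsort_eq: "wf_struct ar D \<Longrightarrow> d \<in> sdom D s \<Longrightarrow> bsort D d = s"
  unfolding bsort_def wf_struct_def by (rule some_equality) auto

lemma wf_rel_sorts: "wf_struct ar D \<Longrightarrow> tup \<in> srel D R \<Longrightarrow>
   length tup = length (ar R) \<and> (\<forall>i < length tup. tup ! i \<in> sdom D (ar R ! i))"
  unfolding wf_struct_def by (auto simp: list_all2_conv_all_nth)


lemma kappa_unfold: "kappa arP arB k A B X = glue (kc_sets k X) (\<lambda>K. power arB B (kc_family k X A K))
   {((K, (t, restrict (\<lambda>g. b (g |` L)) (kc_family k X A K))), (L, (t, b))) | K L t b.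
            K \<in> kc_sets k X \<and> L \<in> kc_sets k X \<and> L \<subseteq> K \<and> b \<in> kc_family k X A L \<rightarrow>\<^sub>E sdom B t}"
  by (simp add: kappa_def Let_def)

lemma kappa_yes:
  assumes h: "is_hom X A h"
  shows "kappa arP arB k A B X \<rightarrow>\<^sub>h B"
proof -
  let ?F = "kc_family k X A"
  let ?m = "\<lambda>(K, c). snd c ((\<lambda>x. Some (h x)) |` K)"
  have "is_hom (kappa arP arB k A B X) B (glue_map ?m)"
    unfolding kappa_unfold
  proof (rule glue_hom)
    fix p q assume "(p, q) \<in> {((K, (t, restrict (\<lambda>g. b (g |` L)) (?F K))), (L, (t, b))) | K L t b.
            K \<in> kc_sets k X \<and> L \<in> kc_sets k X \<and> L \<subseteq> K \<and> b \<in> ?F L \<rightarrow>\<^sub>E sdom B t}"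
    then obtain K L t b where pq: "p = (K, (t, restrict (\<lambda>g. b (g |` L)) (?F K)))" "q = (L, (t, b))"
      "K \<in> kc_sets k X" "L \<in> kc_sets k X" "L \<subseteq> K" by blast
    have "(\<lambda>x. Some (h x)) |` K \<in> ?F K" using kc_family_hom[OF h pq(3)] .
    moreover have "((\<lambda>x. Some (h x)) |` K) |` L = (\<lambda>x. Some (h x)) |` L"
      using pq(5) by (auto simp: restrict_map_def fun_eq_iff)
    ultimately show "?m p = ?m q" using pq(1,2) by simp
  next
    fix K assume K: "K \<in> kc_sets k X"
    have hK: "(\<lambda>x. Some (h x)) |` K \<in> ?F K" using kc_family_hom[OF h K] .
    show "is_hom (power arB B (?F K)) B (\<lambda>c. ?m (K, c))"
      unfolding is_hom_def
    proof (intro conjI allI ballI)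
      fix s a assume "a \<in> sdom (power arB B (?F K)) s"
      then show "?m (K, a) \<in> sdom B s" using hK by (auto simp: power_def)
    next
      fix R tup assume "tup \<in> srel (power arB B (?F K)) R"
      then have "map (\<lambda>b. snd b ((\<lambda>x. Some (h x)) |` K)) tup \<in> srel B R" using hK
        by (auto simp: power_def)
      then show "map (\<lambda>c. ?m (K, c)) tup \<in> srel B R" by simp
    qed
  qed
  then show ?thesis unfolding hom_to_def by blast
qed


type_synonym gidx = "(nat \<times> nat \<times> nat list) + (nat \<times> (nat \<times> nat list) list)"

lemma set_concat_map_snd_zip:
  "length xs = length ws \<Longrightarrow> map snd (zip xs ws) = ws" by simp

lemma interp_rel_comp:
  assumes "tup \<in> srel (interp_app arS \<phi> Z) R" "j < length (arS R)"
  shows "tup ! j \<in> sdom (interp_app arS \<phi> Z) (arS R ! j)"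
proof -
  obtain ws where ws: "tup = zip (arS R) ws" "length ws = length (arS R)"
      "\<forall>j < length ws. ws ! j \<in> dl_output (iT \<phi> (arS R ! j)) Z"
    using assms(1) by (auto simp: interp_app_def)
  then show ?thesis using assms(2) by (auto simp: interp_app_def)
qed

lemma kappa_from_gadget:
  fixes X :: "('ps, 'pr, nat) struct" and XA :: "('ps, 'pr, nat) struct"
    and A :: "('ps, 'pr, 'a) struct"
    and B :: "('bs, 'br, 'b) struct"
    and \<phi> :: "('ps, 'pr, nat, nat) interp" and \<gamma> :: "(nat, nat, 'bs, 'br, nat) gadget"
  assumes finX: "finite (elems X)" and finA: "finite (elems A)"
    and width: "interp_width_le \<phi> k"
    and wfg: "wf_gadget arS arB \<gamma>"
    and G: "is_hom (gadget_app arS \<gamma> (interp_app arS \<phi> XA)) B G"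
    and iota: "is_hom A XA \<iota>"
  shows "gadget_app arS \<gamma> (interp_app arS \<phi> X) \<rightarrow>\<^sub>h kappa arP arB k A B X"
proof -
  define F where "F = kc_family k X A"
  define Y where "Y = interp_app arS \<phi> X"
  define Y' where "Y' = interp_app arS \<phi> XA"
  define CC :: "gidx \<Rightarrow> ('bs, 'br, nat) struct"
    where "CC = (\<lambda>i. case i of Inl (t, a) \<Rightarrow> gD \<gamma> t | Inr (R, tup) \<Rightarrow> gR \<gamma> R)"
  define IY :: "gidx set" where "IY = {Inl (t, a) | t a. a \<in> sdom Y t} \<union> {Inr (R, tup) | R tup. tup \<in> srel Y R}"
  define IY' :: "gidx set" where "IY' = {Inl (t, a) | t a. a \<in> sdom Y' t} \<union> {Inr (R, tup) | R tup. tup \<in> srel Y' R}"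
  define EY :: "((gidx \<times> nat) \<times> (gidx \<times> nat)) set" where "EY = {((Inr (R, tup), gp \<gamma> R i d), (Inl (arS R ! i, tup ! i), d)) | R tup i d.
              tup \<in> srel Y R \<and> i < length (arS R) \<and> d \<in> elems (gD \<gamma> (arS R ! i))}"
  define EY' :: "((gidx \<times> nat) \<times> (gidx \<times> nat)) set" where "EY' = {((Inr (R, tup), gp \<gamma> R i d), (Inl (arS R ! i, tup ! i), d)) | R tup i d.
              tup \<in> srel Y' R \<and> i < length (arS R) \<and> d \<in> elems (gD \<gamma> (arS R ! i))}"
  have gY: "gadget_app arS \<gamma> Y = glue IY CC EY"
    unfolding gadget_app_def IY_def CC_def EY_def by simp
  have gY': "gadget_app arS \<gamma> Y' = glue IY' CC EY'"
    unfolding gadget_app_def IY'_def CC_def EY'_def by simp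
  define EK where "EK = {((K, (t, restrict (\<lambda>g. b (g |` L)) (F K))), (L, (t, b))) | K L t b.
            K \<in> kc_sets k X \<and> L \<in> kc_sets k X \<and> L \<subseteq> K \<and> b \<in> F L \<rightarrow>\<^sub>E sdom B t}"
  define CK where "CK = (\<lambda>K. power arB B (F K))"
  have kap: "kappa arP arB k A B X = glue (kc_sets k X) CK EK"
    unfolding kappa_unfold EK_def CK_def F_def by simp
  define tau :: "(nat \<Rightarrow> 'a option) \<Rightarrow> gidx \<Rightarrow> gidx" where "tau f i = (case i of Inl (t, a) \<Rightarrow> Inl (t, (fst a, map (\<iota> \<circ> the \<circ> f) (snd a)))
      | Inr (R, tup) \<Rightarrow> Inr (R, map (\<lambda>(s, w). (s, map (\<iota> \<circ> the \<circ> f) w)) tup))" for f i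
  define supp where "supp i = (case i of Inl (t, a) \<Rightarrow> set (snd a) | Inr (R, tup) \<Rightarrow> set (concat (map snd tup)))"
    for i :: gidx
  define clsY' where "clsY' p = glue_eq IY' CC EY' `` {p}" for p
  define clsK where "clsK p = glue_eq (kc_sets k X) CK EK `` {p}" for p
  define m where "m = (\<lambda>(i, d). clsK (supp i, (bsort (CC i) d,
         restrict (\<lambda>f. G (clsY' (tau f i, d))) (F (supp i)))))"
  have Fph: "\<And>K f. f \<in> F K \<Longrightarrow> K \<in> kc_sets k X \<and> partial_hom X A K f"
    unfolding F_def by (rule kc_family_init)
  have Fdown: "\<And>K L f. f \<in> F K \<Longrightarrow> L \<in> kc_sets k X \<Longrightarrow> L \<subseteq> K \<Longrightarrow> f |` L \<in> F L"
    unfolding F_def by (rule kc_family_down)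
  have Fup: "\<And>K M f. f \<in> F K \<Longrightarrow> M \<in> kc_sets k X \<Longrightarrow> K \<subseteq> M \<Longrightarrow> \<exists>g\<in>F M. g |` K = f"
    unfolding F_def by (rule kc_family_up[OF finX finA])
  have pres: "(S, map (\<iota> \<circ> the \<circ> f) ts) \<in> lfp (dl_step P XA)"
    if "prog_width P \<le> k" "(S, ts) \<in> lfp (dl_step P X)" "set ts \<subseteq> K" "f \<in> F K" for P S ts K f
  proof -
    have "\<forall>K f. set ts \<subseteq> K \<longrightarrow> f \<in> F K \<longrightarrow> (S, map (\<iota> \<circ> the \<circ> f) ts) \<in> lfp (dl_step P XA)"
      apply (rule dl_preserve[where F=F and A=A])
           apply (rule that(1))
          apply (erule Fph)
         apply (erule (2) Fdown)
        apply (erule (2) Fup)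
       apply (rule iota)
      apply (rule that(2))
      done
    then show ?thesis using that(3,4) by blast
  qed
  have wT: "prog_width (iT \<phi> s) \<le> k" for s using width by (simp add: interp_width_le_def)
  have wR: "prog_width (iR \<phi> R) \<le> k" for R using width by (simp add: interp_width_le_def)
  have small: "set ts \<subseteq> elems X \<and> card (set ts) \<le> k" if "(S, ts) \<in> lfp (dl_step P X)" "prog_width P \<le> k" for P S ts
    using lfp_tuple_small[OF that(1)] that(2) by linarith
  have kcI: "set ts \<in> kc_sets k X" if "(S, ts) \<in> lfp (dl_step P X)" "prog_width P \<le> k" for P S ts
    using small[OF that] by (simp add: kc_sets_def)
  have K12: "supp i \<in> kc_sets k X \<and> (\<forall>f \<in> F (supp i). tau f i \<in> IY' \<and> CC (tau f i) = CC i)" if i: "i \<in> IY" for i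
  proof (cases i)
    case (Inl ta)
    then obtain t a where ta: "i = Inl (t, a)" "a \<in> sdom Y t" using i IY_def by auto
    then obtain w where w: "a = (t, w)" "(outp (iT \<phi> t), w) \<in> lfp (dl_step (iT \<phi> t) X)"
      by (auto simp: Y_def interp_app_def dl_output_def)
    have s: "supp i = set w" using ta w by (simp add: supp_def)
    have "tau f i \<in> IY' \<and> CC (tau f i) = CC i" if "f \<in> F (supp i)" for f
    proof -
      have "(outp (iT \<phi> t), map (\<iota> \<circ> the \<circ> f) w) \<in> lfp (dl_step (iT \<phi> t) XA)"
        using pres[OF wT w(2) _ that] s by simp
      then show ?thesis using ta w
        by (auto simp: tau_def IY'_def Y'_def interp_app_def dl_output_def CC_def)
    qed
    then show ?thesis using kcI[OF w(2) wT] s by simp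
  next
    case (Inr Rt)
    then obtain R tup where rt: "i = Inr (R, tup)" "tup \<in> srel Y R" using i IY_def by auto
    then obtain ws where ws: "tup = zip (arS R) ws" "length ws = length (arS R)"
      "\<forall>j < length ws. ws ! j \<in> dl_output (iT \<phi> (arS R ! j)) X" "concat ws \<in> dl_output (iR \<phi> R) X"
      by (auto simp: Y_def interp_app_def)
    have ms: "map snd tup = ws" using ws(1,2) by simp
    have s: "supp i = set (concat ws)" using rt by (simp add: supp_def ms[symmetric] del: set_concat)
    have cw: "(outp (iR \<phi> R), concat ws) \<in> lfp (dl_step (iR \<phi> R) X)" using ws(4) by (simp add: dl_output_def)
    have "tau f i \<in> IY' \<and> CC (tau f i) = CC i" if f: "f \<in> F (supp i)" for f
    proof -
      let ?g = "\<iota> \<circ> the \<circ> f"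
      have tt: "map (\<lambda>(s, w). (s, map ?g w)) tup = zip (arS R) (map (map ?g) ws)"
        using ws(1,2) by (simp add: zip_map2)
      have "(outp (iR \<phi> R), map ?g (concat ws)) \<in> lfp (dl_step (iR \<phi> R) XA)"
        using pres[OF wR cw _ f] s by simp
      then have c': "concat (map (map ?g) ws) \<in> dl_output (iR \<phi> R) XA"
        by (simp add: dl_output_def map_concat)
      have e': "\<forall>j < length (map (map ?g) ws). map (map ?g) ws ! j \<in> dl_output (iT \<phi> (arS R ! j)) XA"
      proof (intro allI impI)
        fix j assume j: "j < length (map (map ?g) ws)"
        then have "(outp (iT \<phi> (arS R ! j)), ws ! j) \<in> lfp (dl_step (iT \<phi> (arS R ! j)) X)"
          using ws(3) by (simp add: dl_output_def)
        moreover have "set (ws ! j) \<subseteq> supp i" using s j by auto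
        ultimately show "map (map ?g) ws ! j \<in> dl_output (iT \<phi> (arS R ! j)) XA"
          using pres[OF wT _ _ f] j by (simp add: dl_output_def)
      qed
      have "zip (arS R) (map (map ?g) ws) \<in> srel Y' R"
        unfolding Y'_def interp_app_def using ws(2) e' c' by auto
      then show ?thesis using rt tt by (auto simp: tau_def IY'_def CC_def)
    qed
    then show ?thesis using kcI[OF cw wR] s by simp
  qed

  have wfCC: "wf_struct arB (CC i)" for i
    using wfg by (cases i) (auto simp: CC_def wf_gadget_def)
  have Gh: "is_hom (glue IY' CC EY') B G" using G gY' Y'_def by simp
  have fun_in: "restrict (\<lambda>f. G (clsY' (tau f i, d))) (F (supp i)) \<in> F (supp i) \<rightarrow>\<^sub>E sdom B s"
    if i: "i \<in> IY" and d: "d \<in> sdom (CC i) s" for i d s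
  proof (subst restrict_PiE_iff, rule ballI)
    fix f assume f: "f \<in> F (supp i)"
    then have "tau f i \<in> IY'" "CC (tau f i) = CC i" using K12[OF i] by auto
    then have "clsY' (tau f i, d) \<in> sdom (glue IY' CC EY') s"
      unfolding clsY'_def using d by (intro glue_in_dom) auto
    then show "G (clsY' (tau f i, d)) \<in> sdom B s" using Gh by (auto simp: is_hom_def)
  qed
  have K3: "is_hom (CC i) (glue (kc_sets k X) CK EK) (\<lambda>d. m (i, d))" if i: "i \<in> IY" for i
    unfolding is_hom_def
  proof (intro conjI allI ballI)
    fix s d assume d: "d \<in> sdom (CC i) s"
    have "(s, restrict (\<lambda>f. G (clsY' (tau f i, d))) (F (supp i))) \<in> sdom (CK (supp i)) s"
      using fun_in[OF i d] by (simp add: CK_def power_def)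
    then show "m (i, d) \<in> sdom (glue (kc_sets k X) CK EK) s"
      unfolding m_def clsK_def using bsort_eq[OF wfCC d] K12[OF i] by (auto intro: glue_in_dom)
  next
    fix Rb tup' assume tup': "tup' \<in> srel (CC i) Rb"
    have ls: "length tup' = length (arB Rb)" "\<And>j. j < length tup' \<Longrightarrow> tup' ! j \<in> sdom (CC i) (arB Rb ! j)"
      using wf_rel_sorts[OF wfCC tup'] by auto
    define cs where "cs = map (\<lambda>d. (bsort (CC i) d, restrict (\<lambda>f. G (clsY' (tau f i, d))) (F (supp i)))) tup'"
    have "cs \<in> srel (CK (supp i)) Rb"
      unfolding CK_def power_def
    proof (simp, intro conjI allI impI ballI)
      show "length cs = length (arB Rb)" using ls by (simp add: cs_def)
    next
      fix j assume j: "j < length cs"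
      then have j': "j < length tup'" by (simp add: cs_def)
      show "fst (cs ! j) = arB Rb ! j" using j' ls(2)[OF j'] bsort_eq[OF wfCC] by (simp add: cs_def)
      show "snd (cs ! j) \<in> F (supp i) \<rightarrow>\<^sub>E sdom B (arB Rb ! j)"
        using j' fun_in[OF i ls(2)[OF j']] by (simp add: cs_def)
    next
      fix f assume f: "f \<in> F (supp i)"
      then have ti: "tau f i \<in> IY'" "CC (tau f i) = CC i" using K12[OF i] by auto
      have "map (\<lambda>c. glue_eq IY' CC EY' `` {(tau f i, c)}) tup' \<in> srel (glue IY' CC EY') Rb"
        using ti tup' by (intro glue_in_rel) auto
      then have "map G (map (\<lambda>c. glue_eq IY' CC EY' `` {(tau f i, c)}) tup') \<in> srel B Rb"
        using Gh unfolding is_hom_def by blast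
      moreover have "map (\<lambda>b. snd b f) cs = map G (map (\<lambda>c. glue_eq IY' CC EY' `` {(tau f i, c)}) tup')"
        using f by (simp add: cs_def clsY'_def)
      ultimately show "map (\<lambda>b. snd b f) cs \<in> srel B Rb" by simp
    qed
    then have "map (\<lambda>c. glue_eq (kc_sets k X) CK EK `` {(supp i, c)}) cs \<in> srel (glue (kc_sets k X) CK EK) Rb"
      using K12[OF i] by (intro glue_in_rel) auto
    moreover have "map (\<lambda>d. m (i, d)) tup' = map (\<lambda>c. glue_eq (kc_sets k X) CK EK `` {(supp i, c)}) cs"
      by (simp add: cs_def m_def clsK_def)
    ultimately show "map (\<lambda>d. m (i, d)) tup' \<in> srel (glue (kc_sets k X) CK EK) Rb" by simp
  qed
  have K4: "m p = m q" if pq: "(p, q) \<in> EY" for p q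
  proof -
    obtain R tup j d where pqd: "p = (Inr (R, tup), gp \<gamma> R j d)" "q = (Inl (arS R ! j, tup ! j), d)"
      "tup \<in> srel Y R" "j < length (arS R)" "d \<in> elems (gD \<gamma> (arS R ! j))"
      using pq unfolding EY_def by blast
    define i1 :: gidx where "i1 = Inr (R, tup)"
    define i2 :: gidx where "i2 = Inl (arS R ! j, tup ! j)"
    have i1: "i1 \<in> IY" unfolding i1_def IY_def using pqd(3) by blast
    have tj: "tup ! j \<in> sdom Y (arS R ! j)" unfolding Y_def by (rule interp_rel_comp[OF pqd(3)[unfolded Y_def] pqd(4)])
    have i2: "i2 \<in> IY" unfolding i2_def IY_def using tj by blast
    obtain ws where ws: "tup = zip (arS R) ws" "length ws = length (arS R)"
      using pqd(3) by (auto simp: Y_def interp_app_def)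
    define K where "K = supp i1"
    define L where "L = supp i2"
    have Kkc: "K \<in> kc_sets k X" using K12[OF i1] K_def by blast
    have Lkc: "L \<in> kc_sets k X" using K12[OF i2] L_def by blast
    have tupj: "tup ! j = (arS R ! j, ws ! j)" using ws pqd(4) by simp
    have LK: "L \<subseteq> K"
    proof -
      have "map snd tup = ws" using ws by simp
      then have "K = set (concat ws)" by (simp add: K_def supp_def i1_def del: set_concat)
      moreover have "L = set (ws ! j)" using tupj by (simp add: L_def supp_def i2_def)
      ultimately show ?thesis using pqd(4) ws(2) by auto
    qed
    obtain s0 where d0: "d \<in> sdom (gD \<gamma> (arS R ! j)) s0" using pqd(5) by (auto simp: elems_def)
    have gpd: "gp \<gamma> R j d \<in> sdom (gR \<gamma> R) s0"
      using wfg pqd(4) d0 unfolding wf_gadget_def is_hom_def by blast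
    have d2: "d \<in> sdom (CC i2) s0" using d0 by (simp add: CC_def i2_def)
    have d1: "gp \<gamma> R j d \<in> sdom (CC i1) s0" using gpd by (simp add: CC_def i1_def)
    define b where "b = restrict (\<lambda>f. G (clsY' (tau f i2, d))) (F L)"
    have bF: "b \<in> F L \<rightarrow>\<^sub>E sdom B s0" using fun_in[OF i2 d2] by (simp add: b_def L_def)
    have eqf: "restrict (\<lambda>f. G (clsY' (tau f i1, gp \<gamma> R j d))) (F K) = restrict (\<lambda>g. b (g |` L)) (F K)"
    proof (rule restrict_ext)
      fix g assume g: "g \<in> F K"
      have gL: "g |` L \<in> F L" using Fdown[OF g Lkc LK] .
      obtain tupg where tg: "tau g i1 = Inr (R, tupg)" "tupg = map (\<lambda>(s, w). (s, map (\<iota> \<circ> the \<circ> g) w)) tup"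
        by (simp add: tau_def i1_def)
      have "tau g i1 \<in> IY'" using K12[OF i1] g K_def by blast
      then have tgY: "tupg \<in> srel Y' R" using tg by (auto simp: IY'_def)
      have tgj: "tupg ! j \<in> sdom Y' (arS R ! j)" unfolding Y'_def by (rule interp_rel_comp[OF tgY[unfolded Y'_def] pqd(4)])
      have lt: "j < length tup" using ws pqd(4) by simp
      have "tupg ! j = (arS R ! j, map (\<iota> \<circ> the \<circ> g) (ws ! j))" using tg(2) lt tupj by simp
      moreover have "map (\<iota> \<circ> the \<circ> g) (ws ! j) = map (\<iota> \<circ> the \<circ> (g |` L)) (ws ! j)"
      proof (rule map_cong[OF refl])
        fix x assume "x \<in> set (ws ! j)"
        then have "x \<in> L" using tupj by (simp add: L_def supp_def i2_def)
        then show "(\<iota> \<circ> the \<circ> g) x = (\<iota> \<circ> the \<circ> (g |` L)) x" by simp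
      qed
      ultimately have tau2: "tau (g |` L) i2 = Inl (arS R ! j, tupg ! j)"
        using tupj by (simp add: tau_def i2_def)
      have "((Inr (R, tupg), gp \<gamma> R j d), (Inl (arS R ! j, tupg ! j), d)) \<in> EY'"
        unfolding EY'_def using tgY pqd(4,5) by blast
      moreover have "(Inr (R, tupg), gp \<gamma> R j d) \<in> glue_pre IY' CC"
        using tgY gpd by (auto simp: glue_pre_def IY'_def CC_def elems_def)
      moreover have "(Inl (arS R ! j, tupg ! j), d) \<in> glue_pre IY' CC"
      proof -
        have "Inl (arS R ! j, tupg ! j) \<in> IY'" unfolding IY'_def using tgj by blast
        then show ?thesis using pqd(5) by (simp add: glue_pre_def CC_def)
      qed
      ultimately have "clsY' (Inr (R, tupg), gp \<gamma> R j d) = clsY' (Inl (arS R ! j, tupg ! j), d)"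
        unfolding clsY'_def by (rule glue_ident)
      then show "G (clsY' (tau g i1, gp \<gamma> R j d)) = b (g |` L)"
        using tg tau2 gL by (simp add: b_def)
    qed
    have "((K, (s0, restrict (\<lambda>g. b (g |` L)) (F K))), (L, (s0, b))) \<in> EK"
      unfolding EK_def using Kkc Lkc LK bF by blast
    moreover have "(K, (s0, restrict (\<lambda>g. b (g |` L)) (F K))) \<in> glue_pre (kc_sets k X) CK"
    proof -
      have "restrict (\<lambda>g. b (g |` L)) (F K) \<in> F K \<rightarrow>\<^sub>E sdom B s0"
        using bF Fdown[OF _ Lkc LK] by (auto simp: PiE_def Pi_def)
      then show ?thesis using Kkc by (auto simp: glue_pre_def CK_def power_def elems_def)
    qed
    moreover have "(L, (s0, b)) \<in> glue_pre (kc_sets k X) CK"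
      using Lkc bF by (auto simp: glue_pre_def CK_def power_def elems_def)
    ultimately have cl: "clsK (K, (s0, restrict (\<lambda>g. b (g |` L)) (F K))) = clsK (L, (s0, b))"
      unfolding clsK_def by (rule glue_ident)
    have "m p = clsK (K, (s0, restrict (\<lambda>f. G (clsY' (tau f i1, gp \<gamma> R j d))) (F K)))"
      using bsort_eq[OF wfCC d1] by (simp add: m_def pqd(1) K_def i1_def[symmetric])
    also have "\<dots> = clsK (L, (s0, b))" using eqf cl by simp
    also have "\<dots> = m q"
      using bsort_eq[OF wfCC d2] by (simp add: m_def pqd(2) L_def b_def i2_def[symmetric])
    finally show ?thesis .
  qed
  have "is_hom (glue IY CC EY) (glue (kc_sets k X) CK EK) (glue_map m)"
    apply (rule glue_hom)
     apply (erule K4)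
    apply (erule K3)
    done
  then show ?thesis using gY kap unfolding Y_def hom_to_def by auto
qed


definition enc :: "'x set \<Rightarrow> 'x \<Rightarrow> nat" where
  "enc S = (SOME f. inj_on f S)"

lemma enc_inj: fixes S :: "'x set" shows "finite S \<Longrightarrow> inj_on (enc S) S"
proof -
  assume "finite S"
  then obtain f :: "'x \<Rightarrow> nat" and n where "inj_on f S" using finite_imp_inj_to_nat_seg by blast
  then have "\<exists>f :: 'x \<Rightarrow> nat. inj_on f S" by blast
  then show ?thesis unfolding enc_def by (rule someI_ex)
qed

lemma enc_inv[simp]: "finite S \<Longrightarrow> x \<in> S \<Longrightarrow> inv_into S (enc S) (enc S x) = x"
  by (rule inv_into_f_f[OF enc_inj])

definition lst :: "'x set \<Rightarrow> 'x list" where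
  "lst S = (SOME l. set l = S)"

lemma set_lst[simp]: "finite S \<Longrightarrow> set (lst S) = S"
  unfolding lst_def by (rule someI_ex) (rule finite_list)

definition empty_struct :: "('s, 'r, 'e) struct" where
  "empty_struct = \<lparr> sdom = (\<lambda>_. {}), srel = (\<lambda>_. {}) \<rparr>"

definition empty_prog :: "('ps, 'pr) prog" where
  "empty_prog = \<lparr> rules = [], idb_ar = (\<lambda>_. []), outp = 0 \<rparr>"

locale constr =
  fixes arP :: "'pr::finite \<Rightarrow> 'ps::finite list"
    and arB :: "'br::finite \<Rightarrow> 'bs::finite list"
    and k :: nat
    and A :: "('ps, 'pr, 'a) struct"
    and B :: "('bs, 'br, 'b) struct"
  assumes wfA: "wf_struct arP A" and finA: "finite_struct A"
    and wfB: "wf_struct arB B" and finB: "finite_struct B"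
begin

definition TM :: "'ps list \<Rightarrow> 'a list set" where
  "TM \<sigma> = {f. length f = length \<sigma> \<and> (\<forall>i < length \<sigma>. f ! i \<in> sdom A (\<sigma> ! i))}"

definition Sig :: "'ps list set" where
  "Sig = {\<sigma>. length \<sigma> \<le> k}"

definition BD :: "('ps list \<times> 'a list) set" where
  "BD = {(\<sigma>, f). \<sigma> \<in> Sig \<and> f \<in> TM \<sigma>}"

definition PiS :: "'ps list \<Rightarrow> nat list set" where
  "PiS \<sigma> = {\<pi>. length \<pi> \<le> k \<and> (\<forall>x \<in> set \<pi>. x < length \<sigma>)}"

definition bsym :: "'ps list \<Rightarrow> 'a list \<Rightarrow> nat" where
  "bsym \<sigma> f = Suc (enc BD (\<sigma>, f))"

abbreviation cmp :: "'x list \<Rightarrow> nat list \<Rightarrow> 'x list" where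
  "cmp xs \<pi> \<equiv> map (nth xs) \<pi>"

definition rule2 :: "'ps list \<Rightarrow> 'a list \<Rightarrow> 'pr \<Rightarrow> nat list \<Rightarrow> ('ps, 'pr) drule" where
  "rule2 \<sigma> f R js = \<lparr> hd_sym = bsym \<sigma> f, hd_args = [0..<length \<sigma>], body = [Rel (Inl R) js], vty = nth \<sigma> \<rparr>"

definition rule3 :: "'ps list \<Rightarrow> 'a list \<Rightarrow> nat list \<Rightarrow> ('ps, 'pr) drule" where
  "rule3 \<sigma> f \<pi> = \<lparr> hd_sym = bsym \<sigma> f, hd_args = [0..<length \<sigma>],
     body = [Rel (Inr (bsym (cmp \<sigma> \<pi>) (cmp f \<pi>))) \<pi>], vty = nth \<sigma> \<rparr>"

definition ext_set :: "'ps list \<Rightarrow> nat list \<Rightarrow> 'a list \<Rightarrow> 'a list set" where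
  "ext_set \<sigma> \<pi> f' = {g \<in> TM \<sigma>. cmp g \<pi> = f'}"

definition rule4 :: "'ps list \<Rightarrow> nat list \<Rightarrow> 'a list \<Rightarrow> ('ps, 'pr) drule" where
  "rule4 \<sigma> \<pi> f' = \<lparr> hd_sym = bsym (cmp \<sigma> \<pi>) f', hd_args = \<pi>,
     body = map (\<lambda>i. Eq i i) [0..<length \<sigma>] @
            map (\<lambda>g. Rel (Inr (bsym \<sigma> g)) [0..<length \<sigma>]) (lst (ext_set \<sigma> \<pi> f')),
     vty = nth \<sigma> \<rparr>"

definition R2set :: "('ps, 'pr) drule set" where
  "R2set = {rule2 \<sigma> f R js | \<sigma> f R js. \<sigma> \<in> Sig \<and> f \<in> TM \<sigma> \<and> (\<forall>x \<in> set js. x < length \<sigma>) \<and>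
              cmp \<sigma> js = arP R \<and> cmp f js \<notin> srel A R}"

definition R3set :: "('ps, 'pr) drule set" where
  "R3set = {rule3 \<sigma> f \<pi> | \<sigma> f \<pi>. \<sigma> \<in> Sig \<and> f \<in> TM \<sigma> \<and> \<pi> \<in> PiS \<sigma>}"

definition R4set :: "('ps, 'pr) drule set" where
  "R4set = {rule4 \<sigma> \<pi> f' | \<sigma> \<pi> f'. \<sigma> \<in> Sig \<and> \<pi> \<in> PiS \<sigma> \<and> f' \<in> TM (cmp \<sigma> \<pi>)}"

definition badrules :: "('ps, 'pr) drule list" where
  "badrules = lst (R2set \<union> R3set \<union> R4set)"

lemma finite_elemsA: "finite (elems A)" using elems_finite[OF finA] .

lemma finite_Sig: "finite Sig"
proof -
  have "Sig = {\<sigma>. set \<sigma> \<subseteq> UNIV \<and> length \<sigma> \<le> k}" by (simp add: Sig_def)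
  then show ?thesis using finite_lists_length_le[of "UNIV :: 'ps set" k] by simp
qed

lemma TM_sub: "TM \<sigma> \<subseteq> {xs. set xs \<subseteq> elems A \<and> length xs = length \<sigma>}"
proof
  fix f assume f: "f \<in> TM \<sigma>"
  have "set f \<subseteq> elems A"
  proof
    fix x assume "x \<in> set f"
    then obtain i where "i < length f" "x = f ! i" by (auto simp: in_set_conv_nth)
    then show "x \<in> elems A" using f unfolding TM_def elems_def by auto
  qed
  then show "f \<in> {xs. set xs \<subseteq> elems A \<and> length xs = length \<sigma>}" using f by (simp add: TM_def)
qed

lemma finite_TM: "finite (TM \<sigma>)"
  using finite_lists_length_eq[OF finite_elemsA] TM_sub by (rule finite_subset[rotated])

lemma finite_PiS: "finite (PiS \<sigma>)"
proof -
  have "PiS \<sigma> \<subseteq> {xs. set xs \<subseteq> {..<length \<sigma>} \<and> length xs \<le> k}" by (auto simp: PiS_def)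
  moreover have "finite {xs. set xs \<subseteq> {..<length \<sigma>} \<and> length xs \<le> k}"
    by (rule finite_lists_length_le) simp
  ultimately show ?thesis by (rule finite_subset)
qed

lemma finite_BD: "finite BD"
proof -
  have "BD = (\<Union>\<sigma> \<in> Sig. (\<lambda>f. (\<sigma>, f)) ` TM \<sigma>)" by (auto simp: BD_def)
  then show ?thesis using finite_Sig finite_TM by simp
qed

lemma bsym_inj: 
  assumes "(\<sigma>, f) \<in> BD" "(\<sigma>', f') \<in> BD" "bsym \<sigma> f = bsym \<sigma>' f'" shows "\<sigma> = \<sigma>' \<and> f = f'"
proof -
  have "enc BD (\<sigma>, f) = enc BD (\<sigma>', f')" using assms(3) by (simp add: bsym_def)
  then have "(\<sigma>, f) = (\<sigma>', f')" using inj_onD[OF enc_inj[OF finite_BD] _ assms(1,2)] by blast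
  then show ?thesis by simp
qed

lemma bsym_ne0[simp]: "bsym \<sigma> f \<noteq> 0" by (simp add: bsym_def)

lemma finite_R2set: "finite R2set"
proof -
  define M where "M = Max (range (\<lambda>R. length (arP R)))"
  define JS where "JS = {xs. set xs \<subseteq> {..<k} \<and> length xs \<le> M}"
  have fJS: "finite JS" unfolding JS_def by (rule finite_lists_length_le) simp
  have sub: "R2set \<subseteq> (\<lambda>(\<sigma>, f, R, js). rule2 \<sigma> f R js) ` (SIGMA \<sigma>:Sig. TM \<sigma> \<times> ((UNIV :: 'pr set) \<times> JS))"
  proof
    fix r assume "r \<in> R2set"
    then obtain \<sigma> f R js where r: "r = rule2 \<sigma> f R js" "\<sigma> \<in> Sig" "f \<in> TM \<sigma>" "\<forall>x \<in> set js. x < length \<sigma>"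
      "cmp \<sigma> js = arP R" by (auto simp: R2set_def)
    have "length js = length (arP R)" using r(5) by (metis length_map)
    moreover have "length (arP R) \<le> M" unfolding M_def by (rule Max_ge) auto
    moreover have "set js \<subseteq> {..<k}" using r(2,4) by (auto simp: Sig_def)
    ultimately have "js \<in> JS" by (simp add: JS_def)
    then have mem: "(\<sigma>, f, R, js) \<in> (SIGMA \<sigma>:Sig. TM \<sigma> \<times> ((UNIV :: 'pr set) \<times> JS))" using r(2,3) by simp
    show "r \<in> (\<lambda>(\<sigma>, f, R, js). rule2 \<sigma> f R js) ` (SIGMA \<sigma>:Sig. TM \<sigma> \<times> ((UNIV :: 'pr set) \<times> JS))"
      by (rule image_eqI[OF _ mem]) (simp add: r(1))
  qed
  have fU: "finite (UNIV :: 'pr set)" by simp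
  have fin: "finite (SIGMA \<sigma>:Sig. TM \<sigma> \<times> ((UNIV :: 'pr set) \<times> JS))"
    by (intro finite_SigmaI finite_cartesian_product finite_Sig finite_TM fU fJS)
  show ?thesis by (rule finite_surj[OF fin sub])
qed

lemma finite_R3set: "finite R3set"
proof -
  have "R3set \<subseteq> (\<lambda>(\<sigma>, f, \<pi>). rule3 \<sigma> f \<pi>) ` (SIGMA \<sigma>:Sig. TM \<sigma> \<times> PiS \<sigma>)"
  proof
    fix r assume "r \<in> R3set"
    then obtain \<sigma> f \<pi> where r: "r = rule3 \<sigma> f \<pi>" "\<sigma> \<in> Sig" "f \<in> TM \<sigma>" "\<pi> \<in> PiS \<sigma>"
      by (auto simp: R3set_def)
    then show "r \<in> (\<lambda>(\<sigma>, f, \<pi>). rule3 \<sigma> f \<pi>) ` (SIGMA \<sigma>:Sig. TM \<sigma> \<times> PiS \<sigma>)"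
      by (intro image_eqI[where x="(\<sigma>, f, \<pi>)"]) simp_all
  qed
  moreover have "finite (SIGMA \<sigma>:Sig. TM \<sigma> \<times> PiS \<sigma>)"
    using finite_Sig finite_TM finite_PiS by (intro finite_SigmaI finite_cartesian_product) auto
  ultimately show ?thesis by (rule finite_surj[rotated])
qed

lemma finite_R4set: "finite R4set"
proof -
  have "R4set \<subseteq> (\<lambda>(\<sigma>, \<pi>, f'). rule4 \<sigma> \<pi> f') ` (SIGMA \<sigma>:Sig. SIGMA \<pi>:PiS \<sigma>. TM (cmp \<sigma> \<pi>))"
  proof
    fix r assume "r \<in> R4set"
    then obtain \<sigma> \<pi> f' where r: "r = rule4 \<sigma> \<pi> f'" "\<sigma> \<in> Sig" "\<pi> \<in> PiS \<sigma>" "f' \<in> TM (cmp \<sigma> \<pi>)"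
      by (auto simp: R4set_def)
    then show "r \<in> (\<lambda>(\<sigma>, \<pi>, f'). rule4 \<sigma> \<pi> f') ` (SIGMA \<sigma>:Sig. SIGMA \<pi>:PiS \<sigma>. TM (cmp \<sigma> \<pi>))"
      by (intro image_eqI[where x="(\<sigma>, \<pi>, f')"]) simp_all
  qed
  moreover have "finite (SIGMA \<sigma>:Sig. SIGMA \<pi>:PiS \<sigma>. TM (cmp \<sigma> \<pi>))"
    using finite_Sig finite_TM finite_PiS by (intro finite_SigmaI) auto
  ultimately show ?thesis by (rule finite_surj[rotated])
qed

lemma set_badrules: "set badrules = R2set \<union> R3set \<union> R4set"
  unfolding badrules_def using finite_R2set finite_R3set finite_R4set by simp

end


context constr begin

definition idbar :: "'ps list \<Rightarrow> nat \<Rightarrow> 'ps list" where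
  "idbar \<sigma>0 s = (if s = 0 then \<sigma>0 else fst (inv_into BD (enc BD) (s - 1)))"

lemma idbar_bsym: "(\<sigma>, f) \<in> BD \<Longrightarrow> idbar \<sigma>0 (bsym \<sigma> f) = \<sigma>"
  unfolding idbar_def bsym_def using finite_BD by simp

definition batoms :: "'ps list \<Rightarrow> 'a list set \<Rightarrow> nat list \<Rightarrow> 'pr atom list" where
  "batoms \<sigma> T xs = map (\<lambda>f. Rel (Inr (bsym \<sigma> f)) xs) (lst T)"

definition outrule :: "'ps list \<Rightarrow> 'a list set \<Rightarrow> ('ps, 'pr) drule" where
  "outrule \<sigma> T = \<lparr> hd_sym = 0, hd_args = [0..<length \<sigma>], body = batoms \<sigma> T [0..<length \<sigma>], vty = nth \<sigma> \<rparr>"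

definition relrule :: "'ps list \<Rightarrow> 'a list set \<Rightarrow> nat list \<Rightarrow> 'a list set \<Rightarrow> ('ps, 'pr) drule" where
  "relrule \<sigma> T \<pi> T' = \<lparr> hd_sym = 0, hd_args = [0..<length \<sigma>] @ \<pi>,
      body = batoms \<sigma> T [0..<length \<sigma>] @ batoms (cmp \<sigma> \<pi>) T' \<pi>, vty = nth \<sigma> \<rparr>"

definition badprog :: "('ps, 'pr) prog" where
  "badprog = \<lparr> rules = badrules, idb_ar = idbar [], outp = 0 \<rparr>"

definition progT :: "'ps list \<Rightarrow> 'a list set \<Rightarrow> ('ps, 'pr) prog" where
  "progT \<sigma> T = \<lparr> rules = badrules @ [outrule \<sigma> T], idb_ar = idbar \<sigma>, outp = 0 \<rparr>"

definition progR :: "'ps list \<Rightarrow> 'a list set \<Rightarrow> nat list \<Rightarrow> 'a list set \<Rightarrow> ('ps, 'pr) prog" where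
  "progR \<sigma> T \<pi> T' = \<lparr> rules = badrules @ [relrule \<sigma> T \<pi> T'], idb_ar = idbar (\<sigma> @ cmp \<sigma> \<pi>), outp = 0 \<rparr>"

definition VS :: "('ps list \<times> 'a list set) set" where
  "VS = {(\<sigma>, T). \<sigma> \<in> Sig \<and> T \<subseteq> TM \<sigma>}"

definition VR :: "('ps list \<times> 'a list set \<times> nat list \<times> 'a list set) set" where
  "VR = {(\<sigma>, T, \<pi>, T'). (\<sigma>, T) \<in> VS \<and> \<pi> \<in> PiS \<sigma> \<and> T' \<subseteq> TM (cmp \<sigma> \<pi>) \<and>
           (\<forall>g \<in> TM \<sigma>. cmp g \<pi> \<in> T' \<longrightarrow> g \<in> T)}"

lemma finite_VS: "finite VS"
proof -
  have "VS \<subseteq> (\<Union>\<sigma> \<in> Sig. (\<lambda>T. (\<sigma>, T)) ` Pow (TM \<sigma>))" by (auto simp: VS_def)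
  moreover have "finite (\<Union>\<sigma> \<in> Sig. (\<lambda>T. (\<sigma>, T)) ` Pow (TM \<sigma>))"
    by (intro finite_UN_I finite_Sig finite_imageI finite_Pow_iff[THEN iffD2] finite_TM)
  ultimately show ?thesis by (rule finite_subset)
qed

lemma finite_VR: "finite VR"
proof -
  have "VR \<subseteq> (\<Union>\<sigma> \<in> Sig. \<Union>T \<in> Pow (TM \<sigma>). \<Union>\<pi> \<in> PiS \<sigma>. (\<lambda>T'. (\<sigma>, T, \<pi>, T')) ` Pow (TM (cmp \<sigma> \<pi>)))"
    by (auto simp: VR_def VS_def)
  moreover have "finite (\<Union>\<sigma> \<in> Sig. \<Union>T \<in> Pow (TM \<sigma>). \<Union>\<pi> \<in> PiS \<sigma>. (\<lambda>T'. (\<sigma>, T, \<pi>, T')) ` Pow (TM (cmp \<sigma> \<pi>)))"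
    by (intro finite_UN_I finite_Sig finite_imageI finite_Pow_iff[THEN iffD2] finite_TM finite_PiS)
  ultimately show ?thesis by (rule finite_subset)
qed

abbreviation "\<mu> \<equiv> enc VS"
abbreviation "\<rho> \<equiv> enc VR"

definition phi :: "('ps, 'pr, nat, nat) interp" where
  "phi = \<lparr> iT = (\<lambda>c. if c \<in> \<mu> ` VS then progT (fst (inv_into VS \<mu> c)) (snd (inv_into VS \<mu> c)) else empty_prog),
           iR = (\<lambda>r. if r \<in> \<rho> ` VR then (case inv_into VR \<rho> r of (\<sigma>, T, \<pi>, T') \<Rightarrow> progR \<sigma> T \<pi> T')
                     else empty_prog) \<rparr>"

definition arS :: "nat \<Rightarrow> nat list" where
  "arS r = (if r \<in> \<rho> ` VR then (case inv_into VR \<rho> r of (\<sigma>, T, \<pi>, T') \<Rightarrow> [\<mu> (\<sigma>, T), \<mu> (cmp \<sigma> \<pi>, T')]) else [])"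

lemma iT_mu: "(\<sigma>, T) \<in> VS \<Longrightarrow> iT phi (\<mu> (\<sigma>, T)) = progT \<sigma> T"
  unfolding phi_def using finite_VS by simp

lemma iR_rho: "(\<sigma>, T, \<pi>, T') \<in> VR \<Longrightarrow> iR phi (\<rho> (\<sigma>, T, \<pi>, T')) = progR \<sigma> T \<pi> T'"
  unfolding phi_def using finite_VR by simp

lemma arS_rho: "(\<sigma>, T, \<pi>, T') \<in> VR \<Longrightarrow> arS (\<rho> (\<sigma>, T, \<pi>, T')) = [\<mu> (\<sigma>, T), \<mu> (cmp \<sigma> \<pi>, T')]"
  unfolding arS_def using finite_VR by simp

lemma iT_other: "c \<notin> \<mu> ` VS \<Longrightarrow> iT phi c = empty_prog"
  unfolding phi_def by simp

lemma iR_other: "r \<notin> \<rho> ` VR \<Longrightarrow> iR phi r = empty_prog"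
  unfolding phi_def by simp

lemma arS_other: "r \<notin> \<rho> ` VR \<Longrightarrow> arS r = []"
  unfolding arS_def by simp

lemma VR_VS: "(\<sigma>, T, \<pi>, T') \<in> VR \<Longrightarrow> (\<sigma>, T) \<in> VS \<and> (cmp \<sigma> \<pi>, T') \<in> VS"
  unfolding VR_def VS_def PiS_def Sig_def by auto

lemma cmp_TM: "f \<in> TM \<sigma> \<Longrightarrow> \<forall>x \<in> set \<pi>. x < length \<sigma> \<Longrightarrow> cmp f \<pi> \<in> TM (cmp \<sigma> \<pi>)"
  unfolding TM_def by auto

lemma BD_cmp: "\<sigma> \<in> Sig \<Longrightarrow> f \<in> TM \<sigma> \<Longrightarrow> \<pi> \<in> PiS \<sigma> \<Longrightarrow> (cmp \<sigma> \<pi>, cmp f \<pi>) \<in> BD"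
  unfolding BD_def Sig_def PiS_def using cmp_TM by auto

lemma finite_ext_set: "finite (ext_set \<sigma> \<pi> f')"
  unfolding ext_set_def using finite_TM by simp

lemma map_nth_upt: "map (nth \<sigma>) [0..<length \<sigma>] = \<sigma>"
  by (simp add: map_nth)

lemma wt_batoms: "T \<subseteq> TM \<sigma>' \<Longrightarrow> length \<sigma>' \<le> k \<Longrightarrow> map ty xs = \<sigma>' \<Longrightarrow>
    \<forall>a \<in> set (batoms \<sigma>' T xs). wt_atom arP (idbar \<sigma>0) ty a"
  unfolding batoms_def using finite_subset[OF _ finite_TM]
  by (auto simp: idbar_bsym BD_def Sig_def subset_iff)

lemma wt_badrules:
  assumes "r \<in> set badrules"
  shows "map (vty r) (hd_args r) = idbar \<sigma>0 (hd_sym r) \<and> (\<forall>a \<in> set (body r). wt_atom arP (idbar \<sigma>0) (vty r) a)"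
proof -
  have "r \<in> R2set \<or> r \<in> R3set \<or> r \<in> R4set" using assms set_badrules by blast
  then show ?thesis
  proof (elim disjE)
    assume "r \<in> R2set"
    then obtain \<sigma> f R js where r: "r = rule2 \<sigma> f R js" "\<sigma> \<in> Sig" "f \<in> TM \<sigma>" "cmp \<sigma> js = arP R"
      by (auto simp: R2set_def)
    then have "(\<sigma>, f) \<in> BD" by (simp add: BD_def)
    then show ?thesis using r by (simp add: rule2_def idbar_bsym map_nth_upt)
  next
    assume "r \<in> R3set"
    then obtain \<sigma> f \<pi> where r: "r = rule3 \<sigma> f \<pi>" "\<sigma> \<in> Sig" "f \<in> TM \<sigma>" "\<pi> \<in> PiS \<sigma>"
      by (auto simp: R3set_def)
    then have "(\<sigma>, f) \<in> BD" by (simp add: BD_def)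
    then show ?thesis using r BD_cmp[OF r(2,3,4)] by (simp add: rule3_def idbar_bsym map_nth_upt)
  next
    assume "r \<in> R4set"
    then obtain \<sigma> \<pi> f' where r: "r = rule4 \<sigma> \<pi> f'" "\<sigma> \<in> Sig" "\<pi> \<in> PiS \<sigma>" "f' \<in> TM (cmp \<sigma> \<pi>)"
      by (auto simp: R4set_def)
    have "(cmp \<sigma> \<pi>, f') \<in> BD" using r by (simp add: BD_def Sig_def PiS_def)
    moreover have "(\<sigma>, g) \<in> BD" if "g \<in> ext_set \<sigma> \<pi> f'" for g
      using that r(2) by (simp add: BD_def ext_set_def)
    ultimately show ?thesis using r finite_ext_set by (auto simp: rule4_def idbar_bsym map_nth_upt)
  qed
qed

lemma card_le_k: "S \<subseteq> {..<n} \<Longrightarrow> n \<le> k \<Longrightarrow> card S \<le> k"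
  using card_mono[of "{..<n}" S] by simp

lemma vars_badrules:
  assumes "r \<in> set badrules"
  shows "card (rule_vars r) \<le> k"
proof -
  have "r \<in> R2set \<or> r \<in> R3set \<or> r \<in> R4set" using assms set_badrules by blast
  then show ?thesis
  proof (elim disjE)
    assume "r \<in> R2set"
    then obtain \<sigma> f R js where r: "r = rule2 \<sigma> f R js" "\<sigma> \<in> Sig" "\<forall>x \<in> set js. x < length \<sigma>"
      by (auto simp: R2set_def)
    have "rule_vars r \<subseteq> {..<length \<sigma>}" using r by (auto simp: rule_vars_def rule2_def)
    then show ?thesis using r(2) card_le_k by (simp add: Sig_def)
  next
    assume "r \<in> R3set"
    then obtain \<sigma> f \<pi> where r: "r = rule3 \<sigma> f \<pi>" "\<sigma> \<in> Sig" "\<pi> \<in> PiS \<sigma>"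
      by (auto simp: R3set_def)
    have "rule_vars r \<subseteq> {..<length \<sigma>}" using r by (auto simp: rule_vars_def rule3_def PiS_def)
    then show ?thesis using r(2) card_le_k by (simp add: Sig_def)
  next
    assume "r \<in> R4set"
    then obtain \<sigma> \<pi> f' where r: "r = rule4 \<sigma> \<pi> f'" "\<sigma> \<in> Sig" "\<pi> \<in> PiS \<sigma>"
      by (auto simp: R4set_def)
    have "rule_vars r \<subseteq> {..<length \<sigma>}" using r finite_ext_set
      by (auto simp: rule_vars_def rule4_def PiS_def)
    then show ?thesis using r(2) card_le_k by (simp add: Sig_def)
  qed
qed

lemma batoms_vars: "a \<in> set (batoms \<sigma> T xs) \<Longrightarrow> atom_vars a = set xs"
  unfolding batoms_def by auto

lemma width_prog: "(\<forall>r \<in> set (rules P). card (rule_vars r) \<le> k) \<Longrightarrow> prog_width P \<le> k"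
  unfolding prog_width_def by (subst Max_le_iff) auto

end


context constr begin

lemma wf_badrules_ok:
  "\<forall>r \<in> set badrules. map (vty r) (hd_args r) = idbar \<sigma>0 (hd_sym r) \<and>
     (\<forall>a \<in> set (body r). wt_atom arP (idbar \<sigma>0) (vty r) a)"
  using wt_badrules by blast

lemma wf_progT:
  assumes VS: "(\<sigma>, T) \<in> VS" shows "wf_prog arP (progT \<sigma> T)"
proof -
  have h: "map (vty (outrule \<sigma> T)) (hd_args (outrule \<sigma> T)) = idbar \<sigma> (hd_sym (outrule \<sigma> T))"
    by (simp add: outrule_def idbar_def map_nth_upt)
  have b: "\<forall>a \<in> set (body (outrule \<sigma> T)). wt_atom arP (idbar \<sigma>) (vty (outrule \<sigma> T)) a"
    unfolding outrule_def using VS wt_batoms[of T \<sigma> "nth \<sigma>" "[0..<length \<sigma>]" \<sigma>]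
    by (simp add: map_nth_upt VS_def Sig_def)
  show ?thesis unfolding wf_prog_def progT_def using wf_badrules_ok[of \<sigma>] h b by auto
qed

lemma wf_progR:
  assumes VR: "(\<sigma>, T, \<pi>, T') \<in> VR" shows "wf_prog arP (progR \<sigma> T \<pi> T')"
proof -
  have h: "map (vty (relrule \<sigma> T \<pi> T')) (hd_args (relrule \<sigma> T \<pi> T')) = idbar (\<sigma> @ cmp \<sigma> \<pi>) (hd_sym (relrule \<sigma> T \<pi> T'))"
    by (simp add: relrule_def idbar_def map_nth_upt)
  have v: "(\<sigma>, T) \<in> VS" "(cmp \<sigma> \<pi>, T') \<in> VS" using VR_VS[OF VR] by auto
  have b: "\<forall>a \<in> set (body (relrule \<sigma> T \<pi> T')). wt_atom arP (idbar (\<sigma> @ cmp \<sigma> \<pi>)) (vty (relrule \<sigma> T \<pi> T')) a"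
    unfolding relrule_def using v wt_batoms[of T \<sigma> "nth \<sigma>" "[0..<length \<sigma>]" "\<sigma> @ cmp \<sigma> \<pi>"]
      wt_batoms[of T' "cmp \<sigma> \<pi>" "nth \<sigma>" \<pi> "\<sigma> @ cmp \<sigma> \<pi>"]
    by (auto simp: map_nth_upt VS_def Sig_def)
  show ?thesis unfolding wf_prog_def progR_def using wf_badrules_ok[of "\<sigma> @ cmp \<sigma> \<pi>"] h b by auto
qed

lemma wf_empty: "wf_prog arP empty_prog" by (simp add: wf_prog_def empty_prog_def)

lemma wf_interp_phi: "wf_interp arP arS phi"
  unfolding wf_interp_def
proof (intro conjI allI)
  fix s show "wf_prog arP (iT phi s)"
  proof (cases "s \<in> \<mu> ` VS")
    case True then obtain \<sigma> T where "(\<sigma>, T) \<in> VS" "s = \<mu> (\<sigma>, T)" by auto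
    then show ?thesis using iT_mu wf_progT by simp
  qed (simp add: iT_other wf_empty)
next
  fix R show "wf_prog arP (iR phi R)"
  proof (cases "R \<in> \<rho> ` VR")
    case True then obtain \<sigma> T \<pi> T' where "(\<sigma>, T, \<pi>, T') \<in> VR" "R = \<rho> (\<sigma>, T, \<pi>, T')" by auto
    then show ?thesis using iR_rho wf_progR by simp
  qed (simp add: iR_other wf_empty)
  show "prog_ar (iR phi R) = concat (map (\<lambda>s. prog_ar (iT phi s)) (arS R))"
  proof (cases "R \<in> \<rho> ` VR")
    case True then obtain \<sigma> T \<pi> T' where v: "(\<sigma>, T, \<pi>, T') \<in> VR" "R = \<rho> (\<sigma>, T, \<pi>, T')" by auto
    have "(\<sigma>, T) \<in> VS" "(cmp \<sigma> \<pi>, T') \<in> VS" using VR_VS[OF v(1)] by auto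
    then show ?thesis using v iR_rho arS_rho iT_mu
      by (simp add: prog_ar_def progR_def progT_def idbar_def)
  qed (simp add: iR_other arS_other prog_ar_def empty_prog_def)
qed

lemma width_progT: "(\<sigma>, T) \<in> VS \<Longrightarrow> prog_width (progT \<sigma> T) \<le> k"
proof (rule width_prog, intro ballI)
  fix r assume VS: "(\<sigma>, T) \<in> VS" and r: "r \<in> set (rules (progT \<sigma> T))"
  show "card (rule_vars r) \<le> k"
  proof (cases "r \<in> set badrules")
    case True then show ?thesis by (rule vars_badrules)
  next
    case False
    then have "r = outrule \<sigma> T" using r by (simp add: progT_def)
    then have "rule_vars r \<subseteq> {..<length \<sigma>}"
      by (auto simp: rule_vars_def outrule_def dest: batoms_vars)
    then show ?thesis using VS card_le_k by (simp add: VS_def Sig_def)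
  qed
qed

lemma width_progR: "(\<sigma>, T, \<pi>, T') \<in> VR \<Longrightarrow> prog_width (progR \<sigma> T \<pi> T') \<le> k"
proof (rule width_prog, intro ballI)
  fix r assume VR: "(\<sigma>, T, \<pi>, T') \<in> VR" and r: "r \<in> set (rules (progR \<sigma> T \<pi> T'))"
  show "card (rule_vars r) \<le> k"
  proof (cases "r \<in> set badrules")
    case True then show ?thesis by (rule vars_badrules)
  next
    case False
    then have "r = relrule \<sigma> T \<pi> T'" using r by (simp add: progR_def)
    moreover have "\<forall>x \<in> set \<pi>. x < length \<sigma>" using VR by (simp add: VR_def PiS_def)
    ultimately have "rule_vars r \<subseteq> {..<length \<sigma>}"
      by (auto simp: rule_vars_def relrule_def dest: batoms_vars)
    then show ?thesis using VR card_le_k by (simp add: VR_def VS_def Sig_def)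
  qed
qed

lemma width_phi: "interp_width_le phi k"
  unfolding interp_width_le_def
proof (intro conjI allI)
  fix s show "prog_width (iT phi s) \<le> k"
  proof (cases "s \<in> \<mu> ` VS")
    case True then obtain \<sigma> T where "(\<sigma>, T) \<in> VS" "s = \<mu> (\<sigma>, T)" by auto
    then show ?thesis using iT_mu width_progT by simp
  qed (simp add: iT_other empty_prog_def prog_width_def)
next
  fix R show "prog_width (iR phi R) \<le> k"
  proof (cases "R \<in> \<rho> ` VR")
    case True then obtain \<sigma> T \<pi> T' where "(\<sigma>, T, \<pi>, T') \<in> VR" "R = \<rho> (\<sigma>, T, \<pi>, T')" by auto
    then show ?thesis using iR_rho width_progR by simp
  qed (simp add: iR_other empty_prog_def prog_width_def)
qed

lemma finite_sig_phi: "interp_finite_sig arS phi"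
  unfolding interp_finite_sig_def
proof (intro exI conjI allI impI ballI)
  show "finite (\<mu> ` VS)" using finite_VS by simp
  show "finite (\<rho> ` VR)" using finite_VR by simp
  fix s assume "s \<notin> \<mu> ` VS" then show "rules (iT phi s) = []" by (simp add: iT_other empty_prog_def)
next
  fix R assume "R \<notin> \<rho> ` VR" then show "rules (iR phi R) = []" by (simp add: iR_other empty_prog_def)
next
  fix R assume "R \<in> \<rho> ` VR"
  then obtain \<sigma> T \<pi> T' where v: "(\<sigma>, T, \<pi>, T') \<in> VR" "R = \<rho> (\<sigma>, T, \<pi>, T')" by auto
  then show "set (arS R) \<subseteq> \<mu> ` VS" using VR_VS[OF v(1)] arS_rho by auto
qed

end


lemma dl_step_rules_mono:
  "set (rules P) \<subseteq> set (rules Q) \<Longrightarrow> dl_step P X I \<subseteq> dl_step Q X I"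
  unfolding dl_step_def by blast

lemma lfp_rules_mono:
  assumes "set (rules P) \<subseteq> set (rules Q)"
  shows "lfp (dl_step P X) \<subseteq> lfp (dl_step Q X)"
proof (rule lfp_lowerbound)
  have "dl_step P X (lfp (dl_step Q X)) \<subseteq> dl_step Q X (lfp (dl_step Q X))"
    by (rule dl_step_rules_mono[OF assms])
  then show "dl_step P X (lfp (dl_step Q X)) \<subseteq> lfp (dl_step Q X)" using lfp_fix by metis
qed

context constr begin

lemma badrules_hd: 
  assumes "r \<in> set badrules" shows "hd_sym r \<noteq> 0"
proof -
  have "r \<in> R2set \<or> r \<in> R3set \<or> r \<in> R4set" using assms set_badrules by blast
  then show ?thesis
    by (elim disjE) (auto simp: R2set_def R3set_def R4set_def rule2_def rule3_def rule4_def bsym_def)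
qed

lemma sound:
  fixes X :: "('ps, 'pr, 'x) struct"
  assumes h: "is_hom X A h"
    and Prul: "\<forall>r \<in> set (rules P). r \<in> set badrules \<or> hd_sym r = 0"
    and mem: "(bsym \<sigma> f, v) \<in> lfp (dl_step P X)" and BD: "(\<sigma>, f) \<in> BD"
  shows "map h v \<noteq> f"
proof -
  let ?S = "{(s, v). \<forall>\<sigma> f. (\<sigma>, f) \<in> BD \<longrightarrow> s = bsym \<sigma> f \<longrightarrow> map h v \<noteq> f}"
  have "lfp (dl_step P X) \<subseteq> ?S"
  proof (rule lfp_lowerbound, rule subsetI)
    fix z assume "z \<in> dl_step P X ?S"
    then obtain r v where rv: "r \<in> set (rules P)" "\<forall>x \<in> rule_vars r. v x \<in> sdom X (vty r x)"
        "\<forall>a \<in> set (body r). atom_holds X ?S v a" "z = (hd_sym r, map v (hd_args r))"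
      unfolding dl_step_def[of P X ?S] by auto
    show "z \<in> ?S"
    proof (cases "hd_sym r = 0")
      case True then show ?thesis using rv(4) by simp
    next
      case False
      then have "r \<in> set badrules" using Prul rv(1) by auto
      then have "r \<in> R2set \<or> r \<in> R3set \<or> r \<in> R4set" using set_badrules by blast
      then show ?thesis
      proof (elim disjE)
        assume "r \<in> R2set"
        then obtain \<sigma> f R js where r: "r = rule2 \<sigma> f R js" "\<sigma> \<in> Sig" "f \<in> TM \<sigma>" "\<forall>x \<in> set js. x < length \<sigma>"
            "cmp \<sigma> js = arP R" "cmp f js \<notin> srel A R"
          by (auto simp: R2set_def)
        have BD1: "(\<sigma>, f) \<in> BD" using r by (simp add: BD_def)
        have inX: "map v js \<in> srel X R" using rv(3) r(1) by (simp add: rule2_def)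
        show ?thesis unfolding rv(4)
        proof (simp only: mem_Collect_eq case_prod_conv, intro allI impI notI)
          fix \<sigma>' f' assume BD': "(\<sigma>', f') \<in> BD" "hd_sym r = bsym \<sigma>' f'" "map h (map v (hd_args r)) = f'"
          then have eq: "\<sigma>' = \<sigma> \<and> f' = f" using bsym_inj[OF BD1] r(1) by (simp add: rule2_def)
          then have fv: "f = map (h \<circ> v) [0..<length \<sigma>]" using BD'(3) r(1) by (simp add: rule2_def)
          have "cmp f js = map h (map v js)" using r(4) fv by (auto intro!: map_cong)
          moreover have "map h (map v js) \<in> srel A R" using h inX unfolding is_hom_def by blast
          ultimately show False using r(6) by metis
        qed
      next
        assume "r \<in> R3set"
        then obtain \<sigma> f \<pi> where r: "r = rule3 \<sigma> f \<pi>" "\<sigma> \<in> Sig" "f \<in> TM \<sigma>" "\<pi> \<in> PiS \<sigma>"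
          by (auto simp: R3set_def)
        have BD1: "(\<sigma>, f) \<in> BD" using r by (simp add: BD_def)
        have BD2: "(cmp \<sigma> \<pi>, cmp f \<pi>) \<in> BD" using BD_cmp r by blast
        have "(bsym (cmp \<sigma> \<pi>) (cmp f \<pi>), map v \<pi>) \<in> ?S" using rv(3) r(1) by (simp add: rule3_def)
        then have ne: "map h (map v \<pi>) \<noteq> cmp f \<pi>" using BD2 by blast
        show ?thesis unfolding rv(4)
        proof (simp only: mem_Collect_eq case_prod_conv, intro allI impI notI)
          fix \<sigma>' f' assume BD': "(\<sigma>', f') \<in> BD" "hd_sym r = bsym \<sigma>' f'" "map h (map v (hd_args r)) = f'"
          then have eq: "\<sigma>' = \<sigma> \<and> f' = f" using bsym_inj[OF BD1] r(1) by (simp add: rule3_def)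
          then have fv: "f = map (h \<circ> v) [0..<length \<sigma>]" using BD'(3) r(1) by (simp add: rule3_def)
          have "cmp f \<pi> = map h (map v \<pi>)" using r(4) fv by (auto simp: PiS_def intro!: map_cong)
          then show False using ne by simp
        qed
      next
        assume "r \<in> R4set"
        then obtain \<sigma> \<pi> f' where r: "r = rule4 \<sigma> \<pi> f'" "\<sigma> \<in> Sig" "\<pi> \<in> PiS \<sigma>" "f' \<in> TM (cmp \<sigma> \<pi>)"
          by (auto simp: R4set_def)
        have BD1: "(cmp \<sigma> \<pi>, f') \<in> BD" using r by (simp add: BD_def Sig_def PiS_def)
        show ?thesis unfolding rv(4)
        proof (simp only: mem_Collect_eq case_prod_conv, intro allI impI notI)
          fix \<sigma>' f'' assume BD': "(\<sigma>', f'') \<in> BD" "hd_sym r = bsym \<sigma>' f''" "map h (map v (hd_args r)) = f''"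
          then have eq: "\<sigma>' = cmp \<sigma> \<pi> \<and> f'' = f'" using bsym_inj[OF BD1] r(1) by (simp add: rule4_def)
          then have fv: "f' = map h (map v \<pi>)" using BD'(3) r(1) by (simp add: rule4_def)
          define g where "g = map (h \<circ> v) [0..<length \<sigma>]"
          have dom: "v x \<in> sdom X (\<sigma> ! x)" if "x < length \<sigma>" for x
          proof -
            have "x \<in> rule_vars r" using that r(1) by (force simp: rule_vars_def rule4_def)
            then show ?thesis using rv(2) r(1) by (simp add: rule4_def)
          qed
          have gTM: "g \<in> TM \<sigma>" using dom h unfolding g_def TM_def is_hom_def by simp
          have "cmp g \<pi> = f'" using r(3) fv unfolding g_def by (auto simp: PiS_def intro!: map_cong)
          then have gext: "g \<in> ext_set \<sigma> \<pi> f'" using gTM by (simp add: ext_set_def)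
          have "Rel (Inr (bsym \<sigma> g)) [0..<length \<sigma>] \<in> set (body r)"
            using gext finite_ext_set r(1) by (simp add: rule4_def)
          then have "(bsym \<sigma> g, map v [0..<length \<sigma>]) \<in> ?S" using rv(3) by fastforce
          moreover have "(\<sigma>, g) \<in> BD" using gTM r(2) by (simp add: BD_def)
          ultimately have "map h (map v [0..<length \<sigma>]) \<noteq> g" by blast
          then show False by (simp add: g_def)
        qed
      qed
    qed
  qed
  then show ?thesis using mem BD by blast
qed

lemma outT_inv:
  fixes X :: "('ps, 'pr, 'x) struct"
  assumes VS: "(\<sigma>, T) \<in> VS" and w: "w \<in> dl_output (progT \<sigma> T) X"
  shows "length w = length \<sigma> \<and> (\<forall>i < length \<sigma>. w ! i \<in> sdom X (\<sigma> ! i)) \<and>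
         (\<forall>f \<in> T. (bsym \<sigma> f, w) \<in> lfp (dl_step (progT \<sigma> T) X))"
proof -
  have "(0, w) \<in> lfp (dl_step (progT \<sigma> T) X)" using w by (simp add: dl_output_def progT_def)
  from lfp_inv[OF this] obtain r v where rv: "r \<in> set (rules (progT \<sigma> T))"
      "\<forall>x \<in> rule_vars r. v x \<in> sdom X (vty r x)"
      "\<forall>a \<in> set (body r). atom_holds X (lfp (dl_step (progT \<sigma> T) X)) v a" "0 = hd_sym r" "w = map v (hd_args r)"
    by blast
  have "r \<notin> set badrules" using badrules_hd rv(4) by metis
  then have r: "r = outrule \<sigma> T" using rv(1) by (simp add: progT_def)
  have fT: "finite T" using VS finite_subset[OF _ finite_TM] by (auto simp: VS_def)
  have wv: "w = map v [0..<length \<sigma>]" using rv(5) r by (simp add: outrule_def)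
  have "\<forall>i < length \<sigma>. v i \<in> sdom X (\<sigma> ! i)" using rv(2) r by (auto simp: outrule_def rule_vars_def)
  moreover have "\<forall>f \<in> T. (bsym \<sigma> f, w) \<in> lfp (dl_step (progT \<sigma> T) X)"
    using rv(3) r wv fT by (auto simp: outrule_def batoms_def)
  ultimately show ?thesis using wv by simp
qed

lemma outR_inv:
  fixes X :: "('ps, 'pr, 'x) struct"
  assumes VR: "(\<sigma>, T, \<pi>, T') \<in> VR" and w: "w \<in> dl_output (progR \<sigma> T \<pi> T') X"
  shows "\<exists>v. w = map v [0..<length \<sigma>] @ map v \<pi> \<and> (\<forall>i < length \<sigma>. v i \<in> sdom X (\<sigma> ! i)) \<and>
         (\<forall>f \<in> T. (bsym \<sigma> f, map v [0..<length \<sigma>]) \<in> lfp (dl_step (progR \<sigma> T \<pi> T') X)) \<and>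
         (\<forall>f \<in> T'. (bsym (cmp \<sigma> \<pi>) f, map v \<pi>) \<in> lfp (dl_step (progR \<sigma> T \<pi> T') X))"
proof -
  have "(0, w) \<in> lfp (dl_step (progR \<sigma> T \<pi> T') X)" using w by (simp add: dl_output_def progR_def)
  from lfp_inv[OF this] obtain r v where rv: "r \<in> set (rules (progR \<sigma> T \<pi> T'))"
      "\<forall>x \<in> rule_vars r. v x \<in> sdom X (vty r x)"
      "\<forall>a \<in> set (body r). atom_holds X (lfp (dl_step (progR \<sigma> T \<pi> T') X)) v a" "0 = hd_sym r" "w = map v (hd_args r)"
    by blast
  have "r \<notin> set badrules" using badrules_hd rv(4) by metis
  then have r: "r = relrule \<sigma> T \<pi> T'" using rv(1) by (simp add: progR_def)
  have fT: "finite T" "finite T'" using VR finite_subset[OF _ finite_TM] by (auto simp: VR_def VS_def)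
  have wv: "w = map v [0..<length \<sigma>] @ map v \<pi>" using rv(5) r by (simp add: relrule_def)
  have "\<forall>i < length \<sigma>. v i \<in> sdom X (\<sigma> ! i)" using rv(2) r by (auto simp: relrule_def rule_vars_def)
  moreover have "\<forall>f \<in> T. (bsym \<sigma> f, map v [0..<length \<sigma>]) \<in> lfp (dl_step (progR \<sigma> T \<pi> T') X)"
  proof
    fix f assume "f \<in> T"
    then have "Rel (Inr (bsym \<sigma> f)) [0..<length \<sigma>] \<in> set (body r)" using fT r by (simp add: relrule_def batoms_def)
    then have "atom_holds X (lfp (dl_step (progR \<sigma> T \<pi> T') X)) v (Rel (Inr (bsym \<sigma> f)) [0..<length \<sigma>])" using rv(3) by blast
    then show "(bsym \<sigma> f, map v [0..<length \<sigma>]) \<in> lfp (dl_step (progR \<sigma> T \<pi> T') X)" by simp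
  qed
  moreover have "\<forall>f \<in> T'. (bsym (cmp \<sigma> \<pi>) f, map v \<pi>) \<in> lfp (dl_step (progR \<sigma> T \<pi> T') X)"
  proof
    fix f assume "f \<in> T'"
    then have "Rel (Inr (bsym (cmp \<sigma> \<pi>) f)) \<pi> \<in> set (body r)" using fT r by (simp add: relrule_def batoms_def)
    then have "atom_holds X (lfp (dl_step (progR \<sigma> T \<pi> T') X)) v (Rel (Inr (bsym (cmp \<sigma> \<pi>) f)) \<pi>)" using rv(3) by blast
    then show "(bsym (cmp \<sigma> \<pi>) f, map v \<pi>) \<in> lfp (dl_step (progR \<sigma> T \<pi> T') X)" by simp
  qed
  ultimately show ?thesis using wv by blast
qed

end


definition enum :: "'x set \<Rightarrow> 'x list" where
  "enum K = (SOME l. set l = K \<and> distinct l)"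

definition idx :: "'x list \<Rightarrow> 'x \<Rightarrow> nat" where
  "idx e x = (SOME i. i < length e \<and> e ! i = x)"

abbreviation mo :: "'x list \<Rightarrow> 'y list \<Rightarrow> 'x \<Rightarrow> 'y option" where
  "mo e g \<equiv> map_of (zip e g)"

lemma enum_props: "finite K \<Longrightarrow> set (enum K) = K \<and> distinct (enum K)"
  unfolding enum_def by (rule someI_ex) (rule finite_distinct_list)

lemma idx_props: 
  assumes "x \<in> set e" shows "idx e x < length e \<and> e ! idx e x = x"
proof -
  have "\<exists>i. i < length e \<and> e ! i = x" using assms by (simp add: in_set_conv_nth)
  then show ?thesis unfolding idx_def by (rule someI_ex)
qed

lemma cmp_idx: "set l \<subseteq> set e \<Longrightarrow> map (nth e) (map (idx e) l) = l"
  by (induction l) (simp_all add: idx_props)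

lemma idx_bound: "set l \<subseteq> set e \<Longrightarrow> \<forall>x \<in> set (map (idx e) l). x < length e"
proof
  fix j assume sub: "set l \<subseteq> set e" and "j \<in> set (map (idx e) l)"
  then obtain x where x: "x \<in> set l" "j = idx e x" by auto
  then have "x \<in> set e" using sub by blast
  then show "j < length e" using idx_props[OF \<open>x \<in> set e\<close>] x(2) by simp
qed

lemma bsort_in: "x \<in> elems X \<Longrightarrow> x \<in> sdom X (bsort X x)"
  unfolding bsort_def elems_def by (rule someI_ex) auto

lemma dom_mo: "length g = length e \<Longrightarrow> dom (mo e g) = set e"
  by simp

lemma mo_nth: "distinct e \<Longrightarrow> length g = length e \<Longrightarrow> i < length e \<Longrightarrow> mo e g (e ! i) = Some (g ! i)"
  by (rule map_of_zip_nth) auto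

lemma mo_restrict:
  assumes de: "distinct e" and lg: "length g = length e" and dl: "distinct l" and sub: "set l \<subseteq> set e"
  shows "(mo e g) |` set l = mo l (map (nth g) (map (idx e) l))"
proof
  fix x show "((mo e g) |` set l) x = mo l (map (nth g) (map (idx e) l)) x"
  proof (cases "x \<in> set l")
    case True
    then obtain j where j: "j < length l" "x = l ! j" by (auto simp: in_set_conv_nth)
    have xe: "x \<in> set e" using True sub by blast
    have "mo e g x = Some (g ! idx e x)" using mo_nth[OF de lg, of "idx e x"] idx_props[OF xe] by simp
    moreover have "mo l (map (nth g) (map (idx e) l)) x = Some (g ! idx e x)"
      using mo_nth[OF dl, of "map (nth g) (map (idx e) l)" j] j by simp
    ultimately show ?thesis using True by simp
  next
    case False
    have "fst ` set (zip l (map (nth g) (map (idx e) l))) = set l"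
      by (metis length_map map_fst_zip set_map)
    then have nn: "mo l (map (nth g) (map (idx e) l)) x = None"
      using False by (simp add: map_of_eq_None_iff)
    have l0: "((mo e g) |` set l) x = None" using False by simp
    show ?thesis by (subst l0, subst nn, rule refl)
  qed
qed

context constr begin

lemma kc_enum:
  fixes X :: "('ps, 'pr, 'x) struct"
  assumes K: "K \<in> kc_sets k X"
  shows "set (enum K) = K \<and> distinct (enum K) \<and> length (enum K) \<le> k \<and>
         map (bsort X) (enum K) \<in> Sig \<and> (\<forall>i < length (enum K). enum K ! i \<in> sdom X (map (bsort X) (enum K) ! i))"
proof -
  have fK: "finite K" "K \<subseteq> elems X" "card K \<le> k" using K by (auto simp: kc_sets_def)
  have e: "set (enum K) = K" "distinct (enum K)" using enum_props[OF fK(1)] by auto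
  have l: "length (enum K) \<le> k" using e fK(3) distinct_card by fastforce
  have "\<forall>i < length (enum K). enum K ! i \<in> sdom X (map (bsort X) (enum K) ! i)"
  proof (intro allI impI)
    fix i assume i: "i < length (enum K)"
    have "enum K ! i \<in> elems X" using e(1) fK(2) nth_mem[OF i] by blast
    then show "enum K ! i \<in> sdom X (map (bsort X) (enum K) ! i)" using bsort_in i by simp
  qed
  then show ?thesis using e l by (simp add: Sig_def)
qed

lemma badprog_rule:
  fixes X :: "('ps, 'pr, 'x) struct"
  assumes "r \<in> set badrules" "\<forall>x \<in> rule_vars r. v x \<in> sdom X (vty r x)"
    "\<forall>a \<in> set (body r). atom_holds X (lfp (dl_step badprog X)) v a"
  shows "(hd_sym r, map v (hd_args r)) \<in> lfp (dl_step badprog X)"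
  using lfp_rule[of r badprog v X] assms by (simp add: badprog_def)

lemma complete:
  fixes X :: "('ps, 'pr, 'x) struct"
  assumes wfX: "wf_struct arP X"
  shows "K \<in> kc_sets k X \<Longrightarrow> g \<in> TM (map (bsort X) (enum K)) \<Longrightarrow>
     (bsym (map (bsort X) (enum K)) g, enum K) \<notin> lfp (dl_step badprog X) \<Longrightarrow>
     mo (enum K) g \<in> kcI k X A n K"
proof (induction n arbitrary: K g)
  case 0
  define e where "e = enum K"
  define \<sigma> where "\<sigma> = map (bsort X) e"
  have E: "set e = K" "distinct e" "length e \<le> k" "\<sigma> \<in> Sig" "\<forall>i < length e. e ! i \<in> sdom X (\<sigma> ! i)"
    using kc_enum[OF 0(1)] unfolding e_def \<sigma>_def by auto
  have gT: "g \<in> TM \<sigma>" using 0(2) by (simp add: \<sigma>_def e_def)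
  have lg: "length g = length e" using gT by (simp add: TM_def \<sigma>_def)
  have nb: "(bsym \<sigma> g, e) \<notin> lfp (dl_step badprog X)" using 0(3) by (simp add: \<sigma>_def e_def)
  have ph: "partial_hom X A K (mo e g)"
    unfolding partial_hom_def
  proof (intro conjI allI ballI impI)
    show "dom (mo e g) = K" using lg E(1) by simp
  next
    fix t v assume v: "v \<in> K \<inter> sdom X t"
    then obtain i where i: "i < length e" "v = e ! i" using E(1) by (auto simp: in_set_conv_nth)
    have "mo e g v = Some (g ! i)" using mo_nth[OF E(2) lg i(1)] i(2) by simp
    moreover have "g ! i \<in> sdom A (\<sigma> ! i)" using gT i(1) lg by (simp add: TM_def \<sigma>_def)
    moreover have "\<sigma> ! i = t" using bsort_eq[OF wfX] v i by (simp add: \<sigma>_def)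
    ultimately show "\<exists>a\<in>sdom A t. mo e g v = Some a" by blast
  next
    fix R tup assume tup: "tup \<in> srel X R" "set tup \<subseteq> K"
    define js where "js = map (idx e) tup"
    have ejs: "cmp e js = tup" using cmp_idx tup(2) E(1) js_def by blast
    have jsl: "\<forall>x \<in> set js. x < length \<sigma>" using idx_bound[of tup e] tup(2) E(1) by (simp add: js_def \<sigma>_def)
    have ws: "length tup = length (arP R) \<and> (\<forall>i < length tup. tup ! i \<in> sdom X (arP R ! i))"
      using wf_rel_sorts[OF wfX tup(1)] .
    have sjs: "cmp \<sigma> js = arP R"
    proof (rule nth_equalityI)
      show "length (cmp \<sigma> js) = length (arP R)" using ws by (simp add: js_def)
      fix i assume i: "i < length (cmp \<sigma> js)"
      then have i': "i < length tup" by (simp add: js_def)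
      have "cmp \<sigma> js ! i = bsort X (e ! (js ! i))" using jsl i by (simp add: \<sigma>_def)
      also have "e ! (js ! i) = tup ! i" using ejs i' by (metis length_map nth_map)
      also have "bsort X (tup ! i) = arP R ! i" using bsort_eq[OF wfX] ws i' by blast
      finally show "cmp \<sigma> js ! i = arP R ! i" .
    qed
    have "map (the \<circ> mo e g) tup = cmp g js"
    proof -
      have "map (the \<circ> mo e g) tup = map (the \<circ> mo e g) (cmp e js)" using ejs by simp
      also have "\<dots> = cmp g js" using jsl mo_nth[OF E(2) lg] by (auto simp: \<sigma>_def)
      finally show ?thesis .
    qed
    moreover have "cmp g js \<in> srel A R"
    proof (rule ccontr)
      assume nin: "cmp g js \<notin> srel A R"
      have "rule2 \<sigma> g R js \<in> R2set" unfolding R2set_def using E(4) gT jsl sjs nin by blast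
      then have r: "rule2 \<sigma> g R js \<in> set badrules" using set_badrules by blast
      have dom: "\<forall>x \<in> rule_vars (rule2 \<sigma> g R js). (nth e) x \<in> sdom X (vty (rule2 \<sigma> g R js) x)"
        using E(5) jsl by (auto simp: rule_vars_def rule2_def \<sigma>_def)
      have bod: "\<forall>a \<in> set (body (rule2 \<sigma> g R js)). atom_holds X (lfp (dl_step badprog X)) (nth e) a"
        using ejs tup(1) by (simp add: rule2_def)
      have "(bsym \<sigma> g, map (nth e) [0..<length \<sigma>]) \<in> lfp (dl_step badprog X)"
        using badprog_rule[OF r dom bod] by (simp add: rule2_def)
      then show False using nb by (simp add: \<sigma>_def map_nth_upt)
    qed
    ultimately show "map (the \<circ> mo e g) tup \<in> srel A R" by simp
  qed
  then show ?case using 0(1) by (simp add: kc_init_def e_def)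
next
  case (Suc n)
  define e where "e = enum K"
  define \<sigma> where "\<sigma> = map (bsort X) e"
  have E: "set e = K" "distinct e" "length e \<le> k" "\<sigma> \<in> Sig" "\<forall>i < length e. e ! i \<in> sdom X (\<sigma> ! i)"
    using kc_enum[OF Suc(2)] unfolding e_def \<sigma>_def by auto
  have gT: "g \<in> TM \<sigma>" using Suc(3) by (simp add: \<sigma>_def e_def)
  have lg: "length g = length e" using gT by (simp add: TM_def \<sigma>_def)
  have nb: "(bsym \<sigma> g, e) \<notin> lfp (dl_step badprog X)" using Suc(4) by (simp add: \<sigma>_def e_def)
  have A1: "mo e g \<in> kcI k X A n K" using Suc.IH[OF Suc(2,3,4)] by (simp add: e_def)
  have A2: "(mo e g) |` L \<in> kcI k X A n L" if L: "L \<in> kc_sets k X" "L \<subseteq> K" for L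
  proof -
    define eL where "eL = enum L"
    define \<sigma>L where "\<sigma>L = map (bsort X) eL"
    have EL: "set eL = L" "distinct eL" "length eL \<le> k"
      using kc_enum[OF L(1)] unfolding eL_def by auto
    define \<pi> where "\<pi> = map (idx e) eL"
    have ep: "cmp e \<pi> = eL" using cmp_idx EL(1) L(2) E(1) \<pi>_def by blast
    have pl: "\<forall>x \<in> set \<pi>. x < length \<sigma>" using idx_bound[of eL e] EL(1) L(2) E(1) by (simp add: \<pi>_def \<sigma>_def)
    have piS: "\<pi> \<in> PiS \<sigma>" using pl EL(3) by (simp add: PiS_def \<pi>_def)
    have sp: "cmp \<sigma> \<pi> = \<sigma>L" using ep pl by (auto simp: \<sigma>L_def \<sigma>_def)
    have gp: "cmp g \<pi> \<in> TM \<sigma>L" using cmp_TM[OF gT pl] sp by simp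
    have "(bsym \<sigma>L (cmp g \<pi>), eL) \<notin> lfp (dl_step badprog X)"
    proof
      assume bad: "(bsym \<sigma>L (cmp g \<pi>), eL) \<in> lfp (dl_step badprog X)"
      have "rule3 \<sigma> g \<pi> \<in> R3set" unfolding R3set_def using E(4) gT piS by blast
      then have r: "rule3 \<sigma> g \<pi> \<in> set badrules" using set_badrules by blast
      have dom: "\<forall>x \<in> rule_vars (rule3 \<sigma> g \<pi>). (nth e) x \<in> sdom X (vty (rule3 \<sigma> g \<pi>) x)"
        using E(5) pl by (auto simp: rule_vars_def rule3_def \<sigma>_def)
      have bod: "\<forall>a \<in> set (body (rule3 \<sigma> g \<pi>)). atom_holds X (lfp (dl_step badprog X)) (nth e) a"
        using bad ep sp by (simp add: rule3_def)
      have "(bsym \<sigma> g, map (nth e) [0..<length \<sigma>]) \<in> lfp (dl_step badprog X)"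
        using badprog_rule[OF r dom bod] by (simp add: rule3_def)
      then show False using nb by (simp add: \<sigma>_def map_nth_upt)
    qed
    then have "mo eL (cmp g \<pi>) \<in> kcI k X A n L" using Suc.IH[OF L(1)] gp by (simp add: eL_def \<sigma>L_def)
    moreover have "(mo e g) |` L = mo eL (cmp g \<pi>)"
      using mo_restrict[OF E(2) lg EL(2)] EL(1) L(2) E(1) by (simp add: \<pi>_def)
    ultimately show ?thesis by simp
  qed
  have A3: "\<exists>g'\<in>kcI k X A n M. g' |` K = mo e g" if M: "M \<in> kc_sets k X" "K \<subseteq> M" for M
  proof -
    define eM where "eM = enum M"
    define \<sigma>M where "\<sigma>M = map (bsort X) eM"
    have EM: "set eM = M" "distinct eM" "length eM \<le> k" "\<sigma>M \<in> Sig" "\<forall>i < length eM. eM ! i \<in> sdom X (\<sigma>M ! i)"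
      using kc_enum[OF M(1)] unfolding eM_def \<sigma>M_def by auto
    define \<pi> where "\<pi> = map (idx eM) e"
    have ep: "cmp eM \<pi> = e" using cmp_idx E(1) M(2) EM(1) \<pi>_def by blast
    have pl: "\<forall>x \<in> set \<pi>. x < length \<sigma>M" using idx_bound[of e eM] E(1) M(2) EM(1) by (simp add: \<pi>_def \<sigma>M_def)
    have piS: "\<pi> \<in> PiS \<sigma>M" using pl E(3) by (simp add: PiS_def \<pi>_def)
    have sp: "cmp \<sigma>M \<pi> = \<sigma>" using ep pl by (auto simp: \<sigma>M_def \<sigma>_def)
    have "rule4 \<sigma>M \<pi> g \<in> R4set" unfolding R4set_def using EM(4) gT piS sp by blast
    then have r: "rule4 \<sigma>M \<pi> g \<in> set badrules" using set_badrules by blast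
    have dom: "\<forall>x \<in> rule_vars (rule4 \<sigma>M \<pi> g). (nth eM) x \<in> sdom X (vty (rule4 \<sigma>M \<pi> g) x)"
      using EM(5) pl finite_ext_set by (auto simp: rule_vars_def rule4_def \<sigma>M_def)
    have nbod: "\<not> (\<forall>a \<in> set (body (rule4 \<sigma>M \<pi> g)). atom_holds X (lfp (dl_step badprog X)) (nth eM) a)"
    proof
      assume bod: "\<forall>a \<in> set (body (rule4 \<sigma>M \<pi> g)). atom_holds X (lfp (dl_step badprog X)) (nth eM) a"
      have "(bsym (cmp \<sigma>M \<pi>) g, map (nth eM) \<pi>) \<in> lfp (dl_step badprog X)"
        using badprog_rule[OF r dom bod] by (simp add: rule4_def)
      then show False using nb ep sp by simp
    qed
    obtain g' where g': "g' \<in> ext_set \<sigma>M \<pi> g" "(bsym \<sigma>M g', eM) \<notin> lfp (dl_step badprog X)"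
    proof -
      have lM: "map (nth eM) [0..<length \<sigma>M] = eM" by (simp add: \<sigma>M_def map_nth_upt)
      show ?thesis using that finite_ext_set nbod
        by (auto simp: rule4_def lM)
    qed
    have g'T: "g' \<in> TM \<sigma>M" "cmp g' \<pi> = g" using g'(1) by (auto simp: ext_set_def)
    have "mo eM g' \<in> kcI k X A n M" using Suc.IH[OF M(1)] g'T(1) g'(2) by (simp add: eM_def \<sigma>M_def)
    moreover have "(mo eM g') |` K = mo e g"
      using mo_restrict[OF EM(2) _ E(2), of g'] g'T E(1) M(2) EM(1)
      by (simp add: \<pi>_def TM_def \<sigma>M_def)
    ultimately show ?thesis by blast
  qed
  show ?case using A1 A2 A3 by (simp add: kc_step_def e_def)
qed

end


lemma power_wf:
  fixes ar :: "'r \<Rightarrow> 's list" and B :: "('s, 'r, 'b) struct"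
  shows "wf_struct ar (power ar B F)"
  unfolding wf_struct_def
proof (intro conjI allI impI ballI)
  fix s s' :: 's assume "s \<noteq> s'"
  then show "sdom (power ar B F) s \<inter> sdom (power ar B F) s' = {}" by (auto simp: power_def)
next
  fix R tup assume tup: "tup \<in> srel (power ar B F) R"
  show "list_all2 (\<lambda>x s. x \<in> sdom (power ar B F) s) tup (ar R)"
  proof (rule list_all2_all_nthI)
    show "length tup = length (ar R)" using tup by (simp add: power_def)
    fix i assume i: "i < length tup"
    have "tup ! i = (fst (tup ! i), snd (tup ! i))" by simp
    then show "tup ! i \<in> sdom (power ar B F) (ar R ! i)" using tup i
      by (auto simp: power_def) (metis prod.collapse)
  qed
qed

lemma power_elems_sub: "elems (power ar B F) \<subseteq> UNIV \<times> (F \<rightarrow>\<^sub>E elems B)"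
  unfolding elems_def power_def by (force simp: PiE_def Pi_def)

lemma power_elems_finite:
  fixes B :: "('s::finite, 'r, 'b) struct"
  assumes "finite F" "finite (elems B)"
  shows "finite (elems (power ar B F))"
proof -
  have "finite (UNIV \<times> (F \<rightarrow>\<^sub>E elems B) :: ('s \<times> _) set)"
    using assms by (intro finite_cartesian_product finite_PiE) auto
  then show ?thesis using power_elems_sub by (rule finite_subset[rotated])
qed

lemma id_hom: "is_hom D D id" by (simp add: is_hom_def)

lemma eval_hom: "g \<in> F \<Longrightarrow> is_hom (power ar B F) B (\<lambda>c. snd c g)"
  unfolding is_hom_def power_def by auto

lemma emap_hom_back':
  assumes "wf_struct ar D" "inj_on \<iota> S" "elems D \<subseteq> S"
  shows "is_hom (emap \<iota> D) D (inv_into S \<iota>)"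
  unfolding is_hom_def
proof (intro conjI allI ballI)
  fix s a assume "a \<in> sdom (emap \<iota> D) s"
  then obtain b where b: "b \<in> sdom D s" "a = \<iota> b" by (auto simp: emap_def)
  then have "b \<in> S" using assms(3) by (auto simp: elems_def)
  then show "inv_into S \<iota> a \<in> sdom D s" using b assms(2) by simp
next
  fix R tup assume "tup \<in> srel (emap \<iota> D) R"
  then obtain t where t: "t \<in> srel D R" "tup = map \<iota> t" by (auto simp: emap_def)
  have "set t \<subseteq> S" using wf_rel_elems[OF assms(1) t(1)] assms(3) by blast
  then have "map (inv_into S \<iota>) tup = t" using t(2) assms(2)
    by (auto intro: map_idI simp: subset_iff)
  then show "map (inv_into S \<iota>) tup \<in> srel D R" using t(1) by simp
qed

context constr begin

definition GS :: "'ps list \<Rightarrow> 'a list set \<Rightarrow> 'a list set" where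
  "GS \<sigma> T = TM \<sigma> - T"

definition PW :: "'ps list \<Rightarrow> 'a list set \<Rightarrow> ('bs, 'br, 'bs \<times> ('a list \<Rightarrow> 'b)) struct" where
  "PW \<sigma> T = power arB B (GS \<sigma> T)"

definition AllPW :: "('bs \<times> ('a list \<Rightarrow> 'b)) set" where
  "AllPW = (\<Union>p \<in> VS. elems (PW (fst p) (snd p)))"

abbreviation "\<epsilon> \<equiv> enc AllPW"
abbreviation "\<delta> \<equiv> inv_into AllPW \<epsilon>"

definition p2 :: "'ps list \<Rightarrow> 'a list set \<Rightarrow> nat list \<Rightarrow> 'bs \<times> ('a list \<Rightarrow> 'b) \<Rightarrow> 'bs \<times> ('a list \<Rightarrow> 'b)" where
  "p2 \<sigma> T \<pi> x = (fst x, restrict (\<lambda>g. snd x (cmp g \<pi>)) (GS \<sigma> T))"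

definition gam :: "(nat, nat, 'bs, 'br, nat) gadget" where
  "gam = \<lparr> gD = (\<lambda>c. if c \<in> \<mu> ` VS then emap \<epsilon> (PW (fst (inv_into VS \<mu> c)) (snd (inv_into VS \<mu> c))) else empty_struct),
           gR = (\<lambda>r. if r \<in> \<rho> ` VR then (case inv_into VR \<rho> r of (\<sigma>, T, \<pi>, T') \<Rightarrow> emap \<epsilon> (PW \<sigma> T)) else empty_struct),
           gp = (\<lambda>r j n. if r \<in> \<rho> ` VR \<and> j = 1 then (case inv_into VR \<rho> r of (\<sigma>, T, \<pi>, T') \<Rightarrow> \<epsilon> (p2 \<sigma> T \<pi> (\<delta> n))) else n) \<rparr>"

lemma finite_GS: "finite (GS \<sigma> T)" unfolding GS_def using finite_TM by simp

lemma finite_elemsB: "finite (elems B)" using elems_finite[OF finB] .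

lemma finite_AllPW: "finite AllPW"
  unfolding AllPW_def PW_def using finite_VS power_elems_finite[OF finite_GS finite_elemsB] by blast

lemma PW_sub: "(\<sigma>, T) \<in> VS \<Longrightarrow> elems (PW \<sigma> T) \<subseteq> AllPW"
  unfolding AllPW_def by force

lemma eps_inj: "inj_on \<epsilon> AllPW" using enc_inj[OF finite_AllPW] .

lemma gD_mu: "(\<sigma>, T) \<in> VS \<Longrightarrow> gD gam (\<mu> (\<sigma>, T)) = emap \<epsilon> (PW \<sigma> T)"
  unfolding gam_def using finite_VS by simp

lemma gD_other: "c \<notin> \<mu> ` VS \<Longrightarrow> gD gam c = empty_struct"
  unfolding gam_def by simp

lemma gR_rho: "(\<sigma>, T, \<pi>, T') \<in> VR \<Longrightarrow> gR gam (\<rho> (\<sigma>, T, \<pi>, T')) = emap \<epsilon> (PW \<sigma> T)"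
  unfolding gam_def using finite_VR by simp

lemma gR_other: "r \<notin> \<rho> ` VR \<Longrightarrow> gR gam r = empty_struct"
  unfolding gam_def by simp

lemma gp_rho1: "(\<sigma>, T, \<pi>, T') \<in> VR \<Longrightarrow> gp gam (\<rho> (\<sigma>, T, \<pi>, T')) 1 n = \<epsilon> (p2 \<sigma> T \<pi> (\<delta> n))"
  unfolding gam_def using finite_VR by simp

lemma gp_0: "gp gam r 0 n = n"
  unfolding gam_def by simp

lemma delta_eps: "x \<in> AllPW \<Longrightarrow> \<delta> (\<epsilon> x) = x"
  using eps_inj by (simp add: inv_into_f_f)

lemma wf_emapPW: 
  assumes vs: "(\<sigma>, T) \<in> VS" shows "wf_struct arB (emap \<epsilon> (PW \<sigma> T))"
proof -
  have "inj_on \<epsilon> (elems (power arB B (GS \<sigma> T)))" using inj_on_subset[OF eps_inj PW_sub[OF vs]] by (simp add: PW_def)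
  then show ?thesis unfolding PW_def by (rule emap_wf[OF power_wf])
qed

lemma wf_empty_struct: "wf_struct ar empty_struct"
  by (simp add: wf_struct_def empty_struct_def)

lemma delta_hom: 
  assumes vs: "(\<sigma>, T) \<in> VS" shows "is_hom (emap \<epsilon> (PW \<sigma> T)) (PW \<sigma> T) \<delta>"
proof -
  have "elems (power arB B (GS \<sigma> T)) \<subseteq> AllPW" using PW_sub[OF vs] by (simp add: PW_def)
  then show ?thesis unfolding PW_def by (rule emap_hom_back'[OF power_wf eps_inj])
qed

lemma p2_hom:
  assumes VR: "(\<sigma>, T, \<pi>, T') \<in> VR"
  shows "is_hom (PW (cmp \<sigma> \<pi>) T') (PW \<sigma> T) (p2 \<sigma> T \<pi>)"
proof -
  have pl: "\<forall>x \<in> set \<pi>. x < length \<sigma>" using VR by (simp add: VR_def PiS_def)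
  have cl: "cmp g \<pi> \<in> GS (cmp \<sigma> \<pi>) T'" if "g \<in> GS \<sigma> T" for g
    using that VR cmp_TM[OF _ pl] by (auto simp: GS_def VR_def)
  show ?thesis unfolding is_hom_def
  proof (intro conjI allI ballI)
    fix s a assume "a \<in> sdom (PW (cmp \<sigma> \<pi>) T') s"
    then obtain b where a: "a = (s, b)" "b \<in> GS (cmp \<sigma> \<pi>) T' \<rightarrow>\<^sub>E sdom B s" by (auto simp: PW_def power_def)
    have "restrict (\<lambda>g. b (cmp g \<pi>)) (GS \<sigma> T) \<in> GS \<sigma> T \<rightarrow>\<^sub>E sdom B s" using a(2) cl by auto
    then show "p2 \<sigma> T \<pi> a \<in> sdom (PW \<sigma> T) s" using a(1) by (simp add: p2_def PW_def power_def)
  next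
    fix R tup assume tup: "tup \<in> srel (PW (cmp \<sigma> \<pi>) T') R"
    then have t: "length tup = length (arB R)"
      "\<forall>i < length tup. fst (tup ! i) = arB R ! i \<and> snd (tup ! i) \<in> GS (cmp \<sigma> \<pi>) T' \<rightarrow>\<^sub>E sdom B (arB R ! i)"
      "\<forall>f \<in> GS (cmp \<sigma> \<pi>) T'. map (\<lambda>b. snd b f) tup \<in> srel B R"
      by (auto simp: PW_def power_def)
    have c1: "length (map (p2 \<sigma> T \<pi>) tup) = length (arB R)" using t(1) by simp
    have c2: "\<forall>i < length (map (p2 \<sigma> T \<pi>) tup). fst (map (p2 \<sigma> T \<pi>) tup ! i) = arB R ! i \<and>
        snd (map (p2 \<sigma> T \<pi>) tup ! i) \<in> GS \<sigma> T \<rightarrow>\<^sub>E sdom B (arB R ! i)"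
      using t(2) cl by (auto simp: p2_def)
    have c3: "\<forall>f \<in> GS \<sigma> T. map (\<lambda>b. snd b f) (map (p2 \<sigma> T \<pi>) tup) \<in> srel B R"
    proof
      fix f assume f: "f \<in> GS \<sigma> T"
      have eq: "map (\<lambda>b. snd b f) (map (p2 \<sigma> T \<pi>) tup) = map (\<lambda>b. snd b (cmp f \<pi>)) tup"
        using f by (simp add: p2_def)
      show "map (\<lambda>b. snd b f) (map (p2 \<sigma> T \<pi>) tup) \<in> srel B R" unfolding eq using t(3) cl[OF f] by blast
    qed
    have "map (p2 \<sigma> T \<pi>) tup \<in> {bs. length bs = length (arB R) \<and>
                        (\<forall>i < length bs. fst (bs ! i) = arB R ! i \<and>
                                         snd (bs ! i) \<in> GS \<sigma> T \<rightarrow>\<^sub>E sdom B (arB R ! i)) \<and>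
                        (\<forall>f \<in> GS \<sigma> T. map (\<lambda>b. snd b f) bs \<in> srel B R)}"
      using c1 c2 c3 by blast
    then show "map (p2 \<sigma> T \<pi>) tup \<in> srel (PW \<sigma> T) R" by (simp add: PW_def power_def)
  qed
qed

lemma wf_gadget_gam: "wf_gadget arS arB gam"
  unfolding wf_gadget_def
proof (intro conjI allI impI)
  fix t show "wf_struct arB (gD gam t)"
  proof (cases "t \<in> \<mu> ` VS")
    case True then obtain \<sigma> T where "(\<sigma>, T) \<in> VS" "t = \<mu> (\<sigma>, T)" by auto
    then show ?thesis using gD_mu wf_emapPW by simp
  qed (simp add: gD_other wf_empty_struct)
next
  fix R show "wf_struct arB (gR gam R)"
  proof (cases "R \<in> \<rho> ` VR")
    case True then obtain \<sigma> T \<pi> T' where "(\<sigma>, T, \<pi>, T') \<in> VR" "R = \<rho> (\<sigma>, T, \<pi>, T')" by auto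
    then show ?thesis using gR_rho wf_emapPW VR_VS by simp
  qed (simp add: gR_other wf_empty_struct)
next
  fix R i assume i: "i < length (arS R)"
  then have "R \<in> \<rho> ` VR" using arS_other by fastforce
  then obtain \<sigma> T \<pi> T' where v: "(\<sigma>, T, \<pi>, T') \<in> VR" "R = \<rho> (\<sigma>, T, \<pi>, T')" by auto
  have vs: "(\<sigma>, T) \<in> VS" "(cmp \<sigma> \<pi>, T') \<in> VS" using VR_VS[OF v(1)] by auto
  have "i = 0 \<or> i = 1" using i v arS_rho by auto
  then show "is_hom (gD gam (arS R ! i)) (gR gam R) (gp gam R i)"
  proof
    assume "i = 0"
    have "gp gam R 0 = id" by (simp add: fun_eq_iff gp_0)
    then show ?thesis using \<open>i = 0\<close> v vs arS_rho gD_mu gR_rho id_hom by simp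
  next
    assume i1: "i = 1"
    have "is_hom (emap \<epsilon> (PW (cmp \<sigma> \<pi>) T')) (emap \<epsilon> (PW \<sigma> T)) (\<epsilon> \<circ> (p2 \<sigma> T \<pi> \<circ> \<delta>))"
      using is_hom_comp[OF is_hom_comp[OF delta_hom[OF vs(2)] p2_hom[OF v(1)]] emap_hom] .
    moreover have "gp gam R 1 = \<epsilon> \<circ> (p2 \<sigma> T \<pi> \<circ> \<delta>)" using v gp_rho1 by (simp add: fun_eq_iff)
    ultimately show ?thesis using i1 v vs arS_rho gD_mu gR_rho by simp
  qed
qed

end


lemma lfp_empty_prog: "lfp (dl_step empty_prog X) = {}"
proof -
  have "dl_step empty_prog X {} = {}" by (simp add: dl_step_def empty_prog_def)
  then have "lfp (dl_step empty_prog X) \<subseteq> {}" by (intro lfp_lowerbound) simp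
  then show ?thesis by blast
qed

lemma dl_output_empty: "dl_output empty_prog X = {}"
  by (simp add: dl_output_def lfp_empty_prog)

lemma glue_copy_hom: 
  assumes i: "i \<in> I" shows "is_hom (C i) (glue I C E) (\<lambda>c. glue_eq I C E `` {(i, c)})"
  unfolding is_hom_def
proof (intro conjI allI ballI)
  fix s c assume "c \<in> sdom (C i) s"
  then show "glue_eq I C E `` {(i, c)} \<in> sdom (glue I C E) s" by (rule glue_in_dom[OF i])
next
  fix R t assume "t \<in> srel (C i) R"
  then show "map (\<lambda>c. glue_eq I C E `` {(i, c)}) t \<in> srel (glue I C E) R" by (rule glue_in_rel[OF i])
qed

lemma pre_hom:
  assumes "\<forall>g \<in> G. \<phi> g \<in> F"
  shows "is_hom (power ar B F) (power ar B G) (\<lambda>x. (fst x, restrict (\<lambda>g. snd x (\<phi> g)) G))"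
  unfolding is_hom_def
proof (intro conjI allI ballI)
  fix s a assume "a \<in> sdom (power ar B F) s"
  then show "(fst a, restrict (\<lambda>g. snd a (\<phi> g)) G) \<in> sdom (power ar B G) s"
    using assms by (auto simp: power_def)
next
  fix R tup assume tup: "tup \<in> srel (power ar B F) R"
  then have t: "length tup = length (ar R)"
      "\<forall>i < length tup. fst (tup ! i) = ar R ! i \<and> snd (tup ! i) \<in> F \<rightarrow>\<^sub>E sdom B (ar R ! i)"
      "\<forall>f \<in> F. map (\<lambda>b. snd b f) tup \<in> srel B R"
    by (auto simp: power_def)
  let ?q = "\<lambda>x. (fst x, restrict (\<lambda>g. snd x (\<phi> g)) G)"
  have c2: "\<forall>i < length (map ?q tup). fst (map ?q tup ! i) = ar R ! i \<and>
        snd (map ?q tup ! i) \<in> G \<rightarrow>\<^sub>E sdom B (ar R ! i)"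
    using t(2) assms by auto
  have c3: "\<forall>f \<in> G. map (\<lambda>b. snd b f) (map ?q tup) \<in> srel B R"
  proof
    fix f assume f: "f \<in> G"
    have eq: "map (\<lambda>b. snd b f) (map ?q tup) = map (\<lambda>b. snd b (\<phi> f)) tup" using f by simp
    show "map (\<lambda>b. snd b f) (map ?q tup) \<in> srel B R" unfolding eq using t(3) assms f by blast
  qed
  have "map ?q tup \<in> {bs. length bs = length (ar R) \<and>
                        (\<forall>i < length bs. fst (bs ! i) = ar R ! i \<and> snd (bs ! i) \<in> G \<rightarrow>\<^sub>E sdom B (ar R ! i)) \<and>
                        (\<forall>f \<in> G. map (\<lambda>b. snd b f) bs \<in> srel B R)}"
    using t(1) c2 c3 by (simp only: mem_Collect_eq length_map)
  then show "map ?q tup \<in> srel (power ar B G) R" by (simp only: power_def struct.simps)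
qed

lemma len2: "length xs = Suc (Suc 0) \<Longrightarrow> xs = [xs ! 0, xs ! 1]"
proof (cases xs)
  case (Cons a t)
  assume l: "length xs = Suc (Suc 0)"
  then obtain b where "t = [b]" using Cons by (cases t) auto
  then show ?thesis using Cons by simp
qed simp

context constr begin

lemma sdom_Y:
  assumes "a \<in> sdom (interp_app arS phi X) c"
  shows "\<exists>\<sigma> T w. (\<sigma>, T) \<in> VS \<and> c = \<mu> (\<sigma>, T) \<and> a = (c, w) \<and> w \<in> dl_output (progT \<sigma> T) X"
proof -
  obtain w where w: "a = (c, w)" "w \<in> dl_output (iT phi c) X" using assms by (auto simp: interp_app_def)
  have "c \<in> \<mu> ` VS"
  proof (rule ccontr)
    assume "c \<notin> \<mu> ` VS"
    then have "dl_output (iT phi c) X = {}" by (simp add: iT_other dl_output_empty)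
    then show False using w(2) by simp
  qed
  then obtain \<sigma> T where "(\<sigma>, T) \<in> VS" "c = \<mu> (\<sigma>, T)" by auto
  then show ?thesis using w iT_mu by auto
qed

lemma srel_Y:
  assumes "tup \<in> srel (interp_app arS phi X) r"
  shows "\<exists>\<sigma> T \<pi> T' v. (\<sigma>, T, \<pi>, T') \<in> VR \<and> r = \<rho> (\<sigma>, T, \<pi>, T') \<and>
     tup = [(\<mu> (\<sigma>, T), map v [0..<length \<sigma>]), (\<mu> (cmp \<sigma> \<pi>, T'), map v \<pi>)] \<and>
     map v [0..<length \<sigma>] \<in> dl_output (progT \<sigma> T) X \<and> map v \<pi> \<in> dl_output (progT (cmp \<sigma> \<pi>) T') X"
proof -
  obtain ws where ws: "tup = zip (arS r) ws" "length ws = length (arS r)"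
      "\<forall>j < length ws. ws ! j \<in> dl_output (iT phi (arS r ! j)) X" "concat ws \<in> dl_output (iR phi r) X"
    using assms by (auto simp: interp_app_def)
  have "r \<in> \<rho> ` VR"
  proof (rule ccontr)
    assume "r \<notin> \<rho> ` VR"
    then have "dl_output (iR phi r) X = {}" by (simp add: iR_other dl_output_empty)
    then show False using ws(4) by simp
  qed
  then obtain \<sigma> T \<pi> T' where v: "(\<sigma>, T, \<pi>, T') \<in> VR" "r = \<rho> (\<sigma>, T, \<pi>, T')" by auto
  have vs: "(\<sigma>, T) \<in> VS" "(cmp \<sigma> \<pi>, T') \<in> VS" using VR_VS[OF v(1)] by auto
  have ar: "arS r = [\<mu> (\<sigma>, T), \<mu> (cmp \<sigma> \<pi>, T')]" using arS_rho v by simp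
  define w0 where "w0 = ws ! 0"
  define w1 where "w1 = ws ! 1"
  have w01: "ws = [w0, w1]" using ws(2) ar len2[of ws] by (simp add: w0_def w1_def)
  have "ws ! 0 \<in> dl_output (iT phi (arS r ! 0)) X" using ws(3)[rule_format, of 0] ws(2) ar by simp
  then have w0: "w0 \<in> dl_output (progT \<sigma> T) X" using ar iT_mu[OF vs(1)] by (simp add: w0_def)
  have "ws ! 1 \<in> dl_output (iT phi (arS r ! 1)) X" using ws(3)[rule_format, of 1] ws(2) ar by simp
  then have w1: "w1 \<in> dl_output (progT (cmp \<sigma> \<pi>) T') X" using ar iT_mu[OF vs(2)] by (simp add: w1_def)
  have l0: "length w0 = length \<sigma>" using outT_inv[OF vs(1) w0] by simp
  have "w0 @ w1 \<in> dl_output (progR \<sigma> T \<pi> T') X" using ws(4) w01 v iR_rho by simp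
  from outR_inv[OF v(1) this] obtain vv where vv: "w0 @ w1 = map vv [0..<length \<sigma>] @ map vv \<pi>" by blast
  then have ww: "w0 = map vv [0..<length \<sigma>] \<and> w1 = map vv \<pi>" using l0 by (simp add: append_eq_append_conv)
  have tupe: "tup = [(\<mu> (\<sigma>, T), map vv [0..<length \<sigma>]), (\<mu> (cmp \<sigma> \<pi>, T'), map vv \<pi>)]"
    using ws(1) w01 ar ww by simp
  show ?thesis
    apply (rule exI[of _ \<sigma>], rule exI[of _ T], rule exI[of _ \<pi>], rule exI[of _ T'], rule exI[of _ vv])
    using v tupe w0 w1 ww by simp
qed

lemma out_GS:
  fixes X :: "('ps, 'pr, 'x) struct"
  assumes h: "is_hom X A h" and vs: "(\<sigma>, T) \<in> VS" and w: "w \<in> dl_output (progT \<sigma> T) X"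
  shows "map h w \<in> GS \<sigma> T"
proof -
  have o: "length w = length \<sigma>" "\<forall>i < length \<sigma>. w ! i \<in> sdom X (\<sigma> ! i)"
     "\<forall>f \<in> T. (bsym \<sigma> f, w) \<in> lfp (dl_step (progT \<sigma> T) X)" using outT_inv[OF vs w] by auto
  have tm: "map h w \<in> TM \<sigma>" using o h unfolding TM_def is_hom_def by simp
  have "map h w \<notin> T"
  proof
    assume "map h w \<in> T"
    then have m: "(bsym \<sigma> (map h w), w) \<in> lfp (dl_step (progT \<sigma> T) X)" using o(3) by blast
    have P: "\<forall>r \<in> set (rules (progT \<sigma> T)). r \<in> set badrules \<or> hd_sym r = 0"
      by (simp add: progT_def outrule_def)
    have "(\<sigma>, map h w) \<in> BD" using vs tm by (simp add: BD_def VS_def)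
    from sound[OF h P m this] show False by simp
  qed
  then show ?thesis using tm by (simp add: GS_def)
qed

lemma gadget_yes:
  fixes X :: "('ps, 'pr, 'x) struct"
  assumes h: "is_hom X A h"
  shows "gadget_app arS gam (interp_app arS phi X) \<rightarrow>\<^sub>h B"
proof -
  define Y where "Y = interp_app arS phi X"
  define CC :: "(nat \<times> nat \<times> 'x list) + (nat \<times> (nat \<times> 'x list) list) \<Rightarrow> ('bs, 'br, nat) struct"
    where "CC = (\<lambda>i. case i of Inl (t, a) \<Rightarrow> gD gam t | Inr (R, tup) \<Rightarrow> gR gam R)"
  define IY :: "((nat \<times> nat \<times> 'x list) + (nat \<times> (nat \<times> 'x list) list)) set"
    where "IY = {Inl (t, a) | t a. a \<in> sdom Y t} \<union> {Inr (R, tup) | R tup. tup \<in> srel Y R}"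
  define EY :: "((((nat \<times> nat \<times> 'x list) + (nat \<times> (nat \<times> 'x list) list)) \<times> nat) \<times> (((nat \<times> nat \<times> 'x list) + (nat \<times> (nat \<times> 'x list) list)) \<times> nat)) set"
    where "EY = {((Inr (R, tup), gp gam R i d), (Inl (arS R ! i, tup ! i), d)) | R tup i d.
              tup \<in> srel Y R \<and> i < length (arS R) \<and> d \<in> elems (gD gam (arS R ! i))}"
  have gY: "gadget_app arS gam Y = glue IY CC EY"
    unfolding gadget_app_def IY_def CC_def EY_def by simp
  define m :: "(((nat \<times> nat \<times> 'x list) + (nat \<times> (nat \<times> 'x list) list)) \<times> nat) \<Rightarrow> 'b"
    where "m = (\<lambda>(i, n). case i of Inl (c, a) \<Rightarrow> snd (\<delta> n) (map h (snd a))
                                     | Inr (r, tup) \<Rightarrow> snd (\<delta> n) (map h (snd (tup ! 0))))"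
  have evh: "is_hom (emap \<epsilon> (PW \<sigma> T)) B (\<lambda>n. snd (\<delta> n) g0)" if "(\<sigma>, T) \<in> VS" "g0 \<in> GS \<sigma> T" for \<sigma> T g0
  proof -
    have "is_hom (emap \<epsilon> (PW \<sigma> T)) B ((\<lambda>c. snd c g0) \<circ> \<delta>)"
      using is_hom_comp[OF delta_hom[OF that(1), unfolded PW_def] eval_hom[OF that(2)]] by (simp add: PW_def)
    then show ?thesis by (simp add: o_def)
  qed
  have K3: "is_hom (CC i) B (\<lambda>n. m (i, n))" if i: "i \<in> IY" for i
  proof (cases i)
    case (Inl ca)
    then obtain c a where ca: "i = Inl (c, a)" "a \<in> sdom Y c" using i IY_def by auto
    from sdom_Y[OF ca(2)[unfolded Y_def]] obtain \<sigma> T w where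
      s: "(\<sigma>, T) \<in> VS" "c = \<mu> (\<sigma>, T)" "a = (c, w)" "w \<in> dl_output (progT \<sigma> T) X" by blast
    have "map h w \<in> GS \<sigma> T" using out_GS[OF h s(1,4)] .
    from evh[OF s(1) this] show ?thesis using ca s gD_mu by (simp add: CC_def m_def)
  next
    case (Inr rt)
    then obtain r tup where rt: "i = Inr (r, tup)" "tup \<in> srel Y r" using i IY_def by auto
    from srel_Y[OF rt(2)[unfolded Y_def]] obtain \<sigma> T \<pi> T' v where
      s: "(\<sigma>, T, \<pi>, T') \<in> VR" "r = \<rho> (\<sigma>, T, \<pi>, T')"
        "tup = [(\<mu> (\<sigma>, T), map v [0..<length \<sigma>]), (\<mu> (cmp \<sigma> \<pi>, T'), map v \<pi>)]"
        "map v [0..<length \<sigma>] \<in> dl_output (progT \<sigma> T) X" by blast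
    have vs: "(\<sigma>, T) \<in> VS" using VR_VS[OF s(1)] by auto
    have "map h (map v [0..<length \<sigma>]) \<in> GS \<sigma> T" using out_GS[OF h vs s(4)] .
    from evh[OF vs this] show ?thesis using rt s gR_rho by (simp add: CC_def m_def)
  qed
  have K4: "m p = m q" if pq: "(p, q) \<in> EY" for p q
  proof -
    obtain r tup j n where pqd: "p = (Inr (r, tup), gp gam r j n)" "q = (Inl (arS r ! j, tup ! j), n)"
      "tup \<in> srel Y r" "j < length (arS r)" "n \<in> elems (gD gam (arS r ! j))"
      using pq unfolding EY_def by blast
    from srel_Y[OF pqd(3)[unfolded Y_def]] obtain \<sigma> T \<pi> T' v where
      s: "(\<sigma>, T, \<pi>, T') \<in> VR" "r = \<rho> (\<sigma>, T, \<pi>, T')"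
        "tup = [(\<mu> (\<sigma>, T), map v [0..<length \<sigma>]), (\<mu> (cmp \<sigma> \<pi>, T'), map v \<pi>)]"
        "map v [0..<length \<sigma>] \<in> dl_output (progT \<sigma> T) X" by blast
    have vs: "(\<sigma>, T) \<in> VS" "(cmp \<sigma> \<pi>, T') \<in> VS" using VR_VS[OF s(1)] by auto
    have ar: "arS r = [\<mu> (\<sigma>, T), \<mu> (cmp \<sigma> \<pi>, T')]" using arS_rho s by simp
    have "j = 0 \<or> j = 1" using pqd(4) ar by auto
    then show ?thesis
    proof
      assume "j = 0" then show ?thesis using pqd s by (simp add: m_def gp_0)
    next
      assume j1: "j = 1"
      have nel: "n \<in> elems (emap \<epsilon> (PW (cmp \<sigma> \<pi>) T'))" using pqd(5) j1 ar gD_mu[OF vs(2)] by simp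
      then obtain z where z: "z \<in> elems (PW (cmp \<sigma> \<pi>) T')" "n = \<epsilon> z" by (auto simp: emap_def elems_def)
      have dz: "\<delta> n = z" using z PW_sub[OF vs(2)] delta_eps by blast
      obtain s0 where zs: "z \<in> sdom (PW (cmp \<sigma> \<pi>) T') s0" using z(1) by (auto simp: elems_def)
      have "p2 \<sigma> T \<pi> z \<in> sdom (PW \<sigma> T) s0" using p2_hom[OF s(1)] zs unfolding is_hom_def by blast
      then have p2A: "p2 \<sigma> T \<pi> z \<in> AllPW" using PW_sub[OF vs(1)] by (auto simp: elems_def)
      have gp1: "gp gam r 1 n = \<epsilon> (p2 \<sigma> T \<pi> z)" using gp_rho1[OF s(1)] s(2) dz by simp
      have g0: "map h (map v [0..<length \<sigma>]) \<in> GS \<sigma> T" using out_GS[OF h vs(1) s(4)] .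
      have pl: "\<forall>x \<in> set \<pi>. x < length \<sigma>" using s(1) by (simp add: VR_def PiS_def)
      have cm: "cmp (map h (map v [0..<length \<sigma>])) \<pi> = map h (map v \<pi>)" using pl by auto
      have "m p = snd (p2 \<sigma> T \<pi> z) (map h (map v [0..<length \<sigma>]))"
        using pqd(1) s(3) j1 gp1 delta_eps[OF p2A] by (simp add: m_def)
      also have "\<dots> = snd z (cmp (map h (map v [0..<length \<sigma>])) \<pi>)" using g0 by (simp add: p2_def del: map_map)
      also have "\<dots> = snd z (map h (map v \<pi>))" by (simp only: cm)
      also have "\<dots> = m q" using pqd(2) s(3) j1 ar dz by (simp add: m_def)
      finally show ?thesis .
    qed
  qed
  have "is_hom (glue IY CC EY) B (glue_map m)"
    apply (rule glue_hom)
     apply (erule K4)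
    apply (erule K3)
    done
  then show ?thesis using gY unfolding Y_def hom_to_def by auto
qed

end


context constr begin

lemma kappa_to_gadget:
  fixes X :: "('ps, 'pr, 'x) struct"
  assumes wfX: "wf_struct arP X"
  shows "kappa arP arB k A B X \<rightarrow>\<^sub>h gadget_app arS gam (interp_app arS phi X)"
proof -
  define F where "F = kc_family k X A"
  define EK where "EK = {((K, (t, restrict (\<lambda>g. b (g |` L)) (F K))), (L, (t, b))) | K L t b.
            K \<in> kc_sets k X \<and> L \<in> kc_sets k X \<and> L \<subseteq> K \<and> b \<in> F L \<rightarrow>\<^sub>E sdom B t}"
  define CK where "CK = (\<lambda>K. power arB B (F K))"
  have kap: "kappa arP arB k A B X = glue (kc_sets k X) CK EK"
    unfolding kappa_unfold EK_def CK_def F_def by simp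
  define Y where "Y = interp_app arS phi X"
  define CC :: "(nat \<times> nat \<times> 'x list) + (nat \<times> (nat \<times> 'x list) list) \<Rightarrow> ('bs, 'br, nat) struct"
    where "CC = (\<lambda>i. case i of Inl (t, a) \<Rightarrow> gD gam t | Inr (R, tup) \<Rightarrow> gR gam R)"
  define IY :: "((nat \<times> nat \<times> 'x list) + (nat \<times> (nat \<times> 'x list) list)) set"
    where "IY = {Inl (t, a) | t a. a \<in> sdom Y t} \<union> {Inr (R, tup) | R tup. tup \<in> srel Y R}"
  define EY :: "((((nat \<times> nat \<times> 'x list) + (nat \<times> (nat \<times> 'x list) list)) \<times> nat) \<times> (((nat \<times> nat \<times> 'x list) + (nat \<times> (nat \<times> 'x list) list)) \<times> nat)) set"
    where "EY = {((Inr (R, tup), gp gam R i d), (Inl (arS R ! i, tup ! i), d)) | R tup i d.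
              tup \<in> srel Y R \<and> i < length (arS R) \<and> d \<in> elems (gD gam (arS R ! i))}"
  have gY: "gadget_app arS gam Y = glue IY CC EY"
    unfolding gadget_app_def IY_def CC_def EY_def by simp
  define clsY where "clsY p = glue_eq IY CC EY `` {p}" for p
  define eK where "eK K = enum K" for K :: "'x set"
  define sK where "sK K = map (bsort X) (eK K)" for K
  define TK where "TK K = {f \<in> TM (sK K). (bsym (sK K) f, eK K) \<in> lfp (dl_step badprog X)}" for K
  define cK where "cK K = \<mu> (sK K, TK K)" for K
  define qK where "qK K c = (fst c, restrict (\<lambda>g. snd c (mo (eK K) g)) (GS (sK K) (TK K)))" for K
    and c :: "'bs \<times> (('x \<Rightarrow> 'a option) \<Rightarrow> 'b)"
  define iK where "iK K = (Inl (cK K, (cK K, eK K)) :: (nat \<times> nat \<times> 'x list) + (nat \<times> (nat \<times> 'x list) list))" for K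
  define m where "m = (\<lambda>(K, c). clsY (iK K, \<epsilon> (qK K c)))"
  have monoT: "lfp (dl_step badprog X) \<subseteq> lfp (dl_step (progT \<sigma> T) X)" for \<sigma> T
    by (rule lfp_rules_mono) (auto simp: badprog_def progT_def)
  have monoR: "lfp (dl_step badprog X) \<subseteq> lfp (dl_step (progR \<sigma> T \<pi> T') X)" for \<sigma> T \<pi> T'
    by (rule lfp_rules_mono) (auto simp: badprog_def progR_def)
  have KE: "set (eK K) = K \<and> distinct (eK K) \<and> length (eK K) \<le> k \<and> sK K \<in> Sig \<and>
      (\<forall>i < length (eK K). eK K ! i \<in> sdom X (sK K ! i))" if "K \<in> kc_sets k X" for K
    using kc_enum[OF that] unfolding eK_def sK_def by simp
  have lenK: "length (sK K) = length (eK K)" for K by (simp add: sK_def)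
  have vsK: "(sK K, TK K) \<in> VS" if "K \<in> kc_sets k X" for K
    using KE[OF that] by (auto simp: VS_def TK_def)
  have fTK: "finite (TK K)" for K using finite_TM by (simp add: TK_def)
  have outK: "eK K \<in> dl_output (progT (sK K) (TK K)) X" if K: "K \<in> kc_sets k X" for K
  proof -
    let ?r = "outrule (sK K) (TK K)"
    have r: "?r \<in> set (rules (progT (sK K) (TK K)))" by (simp add: progT_def)
    have dom: "\<forall>x \<in> rule_vars ?r. (nth (eK K)) x \<in> sdom X (vty ?r x)"
      using KE[OF K] lenK[of K] by (auto simp: rule_vars_def outrule_def dest: batoms_vars)
    have bod: "\<forall>a \<in> set (body ?r). atom_holds X (lfp (dl_step (progT (sK K) (TK K)) X)) (nth (eK K)) a"
    proof
      fix a assume "a \<in> set (body ?r)"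
      then obtain f where f: "f \<in> TK K" "a = Rel (Inr (bsym (sK K) f)) [0..<length (sK K)]"
        using fTK[of K] by (auto simp: outrule_def batoms_def)
      have "(bsym (sK K) f, eK K) \<in> lfp (dl_step (progT (sK K) (TK K)) X)"
        using f(1) monoT by (auto simp: TK_def)
      then show "atom_holds X (lfp (dl_step (progT (sK K) (TK K)) X)) (nth (eK K)) a"
        using f(2) lenK[of K] by (simp add: map_nth_upt)
    qed
    have "(hd_sym ?r, map (nth (eK K)) (hd_args ?r)) \<in> lfp (dl_step (progT (sK K) (TK K)) X)"
      by (rule lfp_rule[OF r dom bod])
    then show ?thesis using lenK[of K] by (simp add: outrule_def dl_output_def progT_def map_nth_upt)
  qed
  have iKY: "iK K \<in> IY" if K: "K \<in> kc_sets k X" for K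
  proof -
    have "(cK K, eK K) \<in> sdom Y (cK K)"
      using outK[OF K] iT_mu[OF vsK[OF K]] by (simp add: Y_def interp_app_def cK_def)
    then show ?thesis unfolding IY_def iK_def by blast
  qed
  have CCK: "CC (iK K) = emap \<epsilon> (PW (sK K) (TK K))" if K: "K \<in> kc_sets k X" for K
    using gD_mu[OF vsK[OF K]] by (simp add: CC_def iK_def cK_def)
  have compl: "mo (eK K) g \<in> F K" if K: "K \<in> kc_sets k X" and g: "g \<in> GS (sK K) (TK K)" for K g
  proof -
    have "g \<in> TM (map (bsort X) (enum K))" "(bsym (map (bsort X) (enum K)) g, enum K) \<notin> lfp (dl_step badprog X)"
      using g by (auto simp: GS_def TK_def sK_def eK_def)
    then have "\<forall>n. mo (enum K) g \<in> kcI k X A n K" using complete[OF wfX K] by blast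
    then show ?thesis by (simp add: F_def kc_family_def' eK_def)
  qed
  have qhom: "is_hom (CK K) (PW (sK K) (TK K)) (qK K)" if K: "K \<in> kc_sets k X" for K
  proof -
    have "is_hom (power arB B (F K)) (power arB B (GS (sK K) (TK K)))
           (\<lambda>x. (fst x, restrict (\<lambda>g. snd x (mo (eK K) g)) (GS (sK K) (TK K))))"
      by (rule pre_hom) (use compl[OF K] in blast)
    then show ?thesis by (simp add: CK_def PW_def qK_def[abs_def])
  qed
  have K3: "is_hom (CK K) (glue IY CC EY) (\<lambda>c. m (K, c))" if K: "K \<in> kc_sets k X" for K
  proof -
    have h1: "is_hom (CK K) (emap \<epsilon> (PW (sK K) (TK K))) (\<epsilon> \<circ> qK K)"
      by (rule is_hom_comp[OF qhom[OF K] emap_hom])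
    have h2: "is_hom (emap \<epsilon> (PW (sK K) (TK K))) (glue IY CC EY) (\<lambda>d. glue_eq IY CC EY `` {(iK K, d)})"
      using glue_copy_hom[OF iKY[OF K], of CC EY] CCK[OF K] by simp
    have "is_hom (CK K) (glue IY CC EY) ((\<lambda>d. glue_eq IY CC EY `` {(iK K, d)}) \<circ> (\<epsilon> \<circ> qK K))"
      by (rule is_hom_comp[OF h1 h2])
    then show ?thesis by (simp add: m_def clsY_def o_def)
  qed
  have K4: "m p = m q" if pq: "(p, q) \<in> EK" for p q
  proof -
    obtain K L t b where pqd: "p = (K, (t, restrict (\<lambda>g. b (g |` L)) (F K)))" "q = (L, (t, b))"
      "K \<in> kc_sets k X" "L \<in> kc_sets k X" "L \<subseteq> K" "b \<in> F L \<rightarrow>\<^sub>E sdom B t"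
      using pq unfolding EK_def by blast
    define e where "e = eK K"
    define \<sigma> where "\<sigma> = sK K"
    define T where "T = TK K"
    define eL where "eL = eK L"
    define \<sigma>L where "\<sigma>L = sK L"
    define TL where "TL = TK L"
    have E: "set e = K" "distinct e" "length e \<le> k" "\<sigma> \<in> Sig" "\<forall>i < length e. e ! i \<in> sdom X (\<sigma> ! i)"
      using KE[OF pqd(3)] unfolding e_def \<sigma>_def by auto
    have EL: "set eL = L" "distinct eL" "length eL \<le> k"
      using KE[OF pqd(4)] unfolding eL_def by auto
    have le: "length \<sigma> = length e" using lenK by (simp add: \<sigma>_def e_def)
    define \<pi> where "\<pi> = map (idx e) eL"
    have ep: "cmp e \<pi> = eL" using cmp_idx EL(1) pqd(5) E(1) \<pi>_def by blast
    have pl: "\<forall>x \<in> set \<pi>. x < length \<sigma>" using idx_bound[of eL e] EL(1) pqd(5) E(1) le by (simp add: \<pi>_def)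
    have piS: "\<pi> \<in> PiS \<sigma>" using pl EL(3) by (simp add: PiS_def \<pi>_def)
    have sp: "cmp \<sigma> \<pi> = \<sigma>L"
    proof -
      have "cmp \<sigma> \<pi> = map (bsort X) (cmp e \<pi>)"
      proof -
        have "cmp \<sigma> \<pi> = map (\<lambda>x. bsort X (e ! x)) \<pi>"
          using pl le by (intro map_cong) (simp_all add: \<sigma>_def sK_def e_def)
        then show ?thesis by simp
      qed
      then show ?thesis using ep by (simp add: \<sigma>L_def sK_def eL_def)
    qed
    have clos: "g \<in> T" if g: "g \<in> TM \<sigma>" "cmp g \<pi> \<in> TL" for g
    proof -
      have bad: "(bsym \<sigma>L (cmp g \<pi>), eL) \<in> lfp (dl_step badprog X)" using g(2) by (simp add: TL_def TK_def \<sigma>L_def eL_def)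
      have "rule3 \<sigma> g \<pi> \<in> R3set" unfolding R3set_def using E(4) g(1) piS by blast
      then have r: "rule3 \<sigma> g \<pi> \<in> set badrules" using set_badrules by blast
      have dom: "\<forall>x \<in> rule_vars (rule3 \<sigma> g \<pi>). (nth e) x \<in> sdom X (vty (rule3 \<sigma> g \<pi>) x)"
        using E(5) pl le by (auto simp: rule_vars_def rule3_def)
      have bod: "\<forall>a \<in> set (body (rule3 \<sigma> g \<pi>)). atom_holds X (lfp (dl_step badprog X)) (nth e) a"
        using bad ep sp by (simp add: rule3_def)
      have "(bsym \<sigma> g, map (nth e) [0..<length \<sigma>]) \<in> lfp (dl_step badprog X)"
        using badprog_rule[OF r dom bod] by (simp add: rule3_def)
      then show ?thesis using g(1) le by (simp add: T_def TK_def \<sigma>_def e_def map_nth_upt)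
    qed
    have vsL: "(\<sigma>L, TL) \<in> VS" using vsK[OF pqd(4)] by (simp add: \<sigma>L_def TL_def)
    have vr: "(\<sigma>, T, \<pi>, TL) \<in> VR"
      using vsK[OF pqd(3)] piS vsL sp clos by (simp add: VR_def VS_def \<sigma>_def T_def)
    define r where "r = \<rho> (\<sigma>, T, \<pi>, TL)"
    have ar: "arS r = [cK K, cK L]" using arS_rho[OF vr] sp by (simp add: r_def cK_def \<sigma>_def T_def \<sigma>L_def TL_def)
    define tup where "tup = [(cK K, e), (cK L, eL)]"
    have relout: "e @ eL \<in> dl_output (progR \<sigma> T \<pi> TL) X"
    proof -
      let ?r = "relrule \<sigma> T \<pi> TL"
      have rr: "?r \<in> set (rules (progR \<sigma> T \<pi> TL))" by (simp add: progR_def)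
      have dom: "\<forall>x \<in> rule_vars ?r. (nth e) x \<in> sdom X (vty ?r x)"
        using E(5) pl le by (auto simp: rule_vars_def relrule_def dest: batoms_vars)
      have bod: "\<forall>a \<in> set (body ?r). atom_holds X (lfp (dl_step (progR \<sigma> T \<pi> TL) X)) (nth e) a"
      proof
        fix a assume "a \<in> set (body ?r)"
        then have "(\<exists>f \<in> T. a = Rel (Inr (bsym \<sigma> f)) [0..<length \<sigma>]) \<or> (\<exists>f \<in> TL. a = Rel (Inr (bsym (cmp \<sigma> \<pi>) f)) \<pi>)"
          using fTK[of K] fTK[of L] by (auto simp: relrule_def batoms_def T_def TL_def)
        then show "atom_holds X (lfp (dl_step (progR \<sigma> T \<pi> TL) X)) (nth e) a"
        proof (elim disjE bexE)
          fix f assume f: "f \<in> T" "a = Rel (Inr (bsym \<sigma> f)) [0..<length \<sigma>]"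
          have "(bsym \<sigma> f, e) \<in> lfp (dl_step badprog X)" using f(1) by (simp add: T_def TK_def \<sigma>_def e_def)
          then have "(bsym \<sigma> f, e) \<in> lfp (dl_step (progR \<sigma> T \<pi> TL) X)" using monoR by blast
          then show ?thesis using f(2) le by (simp add: map_nth_upt)
        next
          fix f assume f: "f \<in> TL" "a = Rel (Inr (bsym (cmp \<sigma> \<pi>) f)) \<pi>"
          have "(bsym \<sigma>L f, eL) \<in> lfp (dl_step badprog X)" using f(1) by (simp add: TL_def TK_def \<sigma>L_def eL_def)
          then have "(bsym \<sigma>L f, eL) \<in> lfp (dl_step (progR \<sigma> T \<pi> TL) X)" using monoR by blast
          then show ?thesis using f(2) sp ep by simp
        qed
      qed
      have "(hd_sym ?r, map (nth e) (hd_args ?r)) \<in> lfp (dl_step (progR \<sigma> T \<pi> TL) X)"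
        by (rule lfp_rule[OF rr dom bod])
      then show ?thesis using le ep by (simp add: relrule_def dl_output_def progR_def map_nth_upt)
    qed
    have tupY: "tup \<in> srel Y r"
    proof -
      have "[e, eL] ! 0 \<in> dl_output (iT phi (arS r ! 0)) X"
        using outK[OF pqd(3)] ar iT_mu[OF vsK[OF pqd(3)]] by (simp add: e_def cK_def)
      moreover have "[e, eL] ! 1 \<in> dl_output (iT phi (arS r ! 1)) X"
        using outK[OF pqd(4)] ar iT_mu[OF vsK[OF pqd(4)]] by (simp add: eL_def cK_def)
      ultimately have "\<forall>j < length [e, eL]. [e, eL] ! j \<in> dl_output (iT phi (arS r ! j)) X"
        by (auto simp: less_Suc_eq)
      moreover have "concat [e, eL] \<in> dl_output (iR phi r) X" using relout iR_rho[OF vr] by (simp add: r_def)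
      moreover have "tup = zip (arS r) [e, eL]" using ar by (simp add: tup_def)
      ultimately have "tup = zip (arS r) [e, eL] \<and> length [e, eL] = length (arS r) \<and>
          (\<forall>j < length [e, eL]. [e, eL] ! j \<in> dl_output (iT phi (arS r ! j)) X) \<and>
          concat [e, eL] \<in> dl_output (iR phi r) X" using ar by simp
      then show ?thesis unfolding Y_def interp_app_def by (simp only: struct.simps mem_Collect_eq) blast
    qed
    define xx where "xx = (t, restrict (\<lambda>g. b ((mo e g) |` L)) (GS \<sigma> T))"
    define yy where "yy = (t, restrict (\<lambda>g'. b (mo eL g')) (GS \<sigma>L TL))"
    have qp: "qK K (t, restrict (\<lambda>g. b (g |` L)) (F K)) = xx"
      using compl[OF pqd(3)] by (auto simp: qK_def xx_def e_def \<sigma>_def T_def intro!: restrict_ext)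
    have qq: "qK L (t, b) = yy" by (simp add: qK_def yy_def eL_def \<sigma>L_def TL_def)
    have pK: "(t, restrict (\<lambda>g. b (g |` L)) (F K)) \<in> sdom (CK K) t"
    proof -
      have "restrict (\<lambda>g. b (g |` L)) (F K) \<in> F K \<rightarrow>\<^sub>E sdom B t"
      proof (subst restrict_PiE_iff, rule ballI)
        fix g assume "g \<in> F K"
        then have "g |` L \<in> F L" unfolding F_def using kc_family_down pqd(4,5) by blast
        then show "b (g |` L) \<in> sdom B t" using pqd(6) by (auto simp: PiE_def Pi_def)
      qed
      then show ?thesis by (simp add: CK_def power_def)
    qed
    have qL: "(t, b) \<in> sdom (CK L) t" using pqd(6) by (simp add: CK_def power_def)
    have xxPW: "xx \<in> sdom (PW \<sigma> T) t" using qhom[OF pqd(3)] pK qp unfolding is_hom_def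
      by (metis \<sigma>_def T_def)
    have yyPW: "yy \<in> sdom (PW \<sigma>L TL) t" using qhom[OF pqd(4)] qL qq unfolding is_hom_def
      by (metis \<sigma>L_def TL_def)
    have yyA: "yy \<in> AllPW" using yyPW PW_sub[OF vsL] by (auto simp: elems_def)
    have vs0: "(\<sigma>, T) \<in> VS" using vsK[OF pqd(3)] by (simp add: \<sigma>_def T_def)
    have p2y: "p2 \<sigma> T \<pi> yy = xx"
    proof -
      have "restrict (\<lambda>g. snd yy (cmp g \<pi>)) (GS \<sigma> T) = restrict (\<lambda>g. b ((mo e g) |` L)) (GS \<sigma> T)"
      proof (rule restrict_ext)
        fix g assume g: "g \<in> GS \<sigma> T"
        have gT: "g \<in> TM \<sigma>" "g \<notin> T" using g by (auto simp: GS_def)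
        have "cmp g \<pi> \<in> TM \<sigma>L" using cmp_TM[OF gT(1) pl] sp by simp
        moreover have "cmp g \<pi> \<notin> TL" using clos gT by blast
        ultimately have gL: "cmp g \<pi> \<in> GS \<sigma>L TL" by (simp add: GS_def)
        have lg: "length g = length e" using gT(1) le by (simp add: TM_def)
        have "(mo e g) |` L = mo eL (cmp g \<pi>)"
          using mo_restrict[OF E(2) lg EL(2)] EL(1) pqd(5) E(1) by (simp add: \<pi>_def)
        then show "snd yy (cmp g \<pi>) = b ((mo e g) |` L)" using gL by (simp add: yy_def)
      qed
      then show ?thesis by (simp add: p2_def xx_def yy_def)
    qed
    have gp1: "gp gam r 1 (\<epsilon> yy) = \<epsilon> xx" using gp_rho1[OF vr] delta_eps[OF yyA] p2y by (simp add: r_def)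
    have xel: "\<epsilon> xx \<in> elems (emap \<epsilon> (PW \<sigma> T))" using xxPW by (auto simp: emap_def elems_def)
    have yel: "\<epsilon> yy \<in> elems (emap \<epsilon> (PW \<sigma>L TL))" using yyPW by (auto simp: emap_def elems_def)
    have gDK: "gD gam (cK K) = emap \<epsilon> (PW \<sigma> T)" using gD_mu[OF vs0] by (simp add: cK_def \<sigma>_def T_def)
    have gDL: "gD gam (cK L) = emap \<epsilon> (PW \<sigma>L TL)" using gD_mu[OF vsL] by (simp add: cK_def \<sigma>L_def TL_def)
    have gRr: "gR gam r = emap \<epsilon> (PW \<sigma> T)" using gR_rho[OF vr] by (simp add: r_def)
    have iRY: "Inr (r, tup) \<in> IY" using tupY by (simp add: IY_def)
    have e1: "((Inr (r, tup), gp gam r 0 (\<epsilon> xx)), (Inl (arS r ! 0, tup ! 0), \<epsilon> xx)) \<in> EY"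
      unfolding EY_def using tupY ar xel gDK by auto
    have e2: "((Inr (r, tup), gp gam r 1 (\<epsilon> yy)), (Inl (arS r ! 1, tup ! 1), \<epsilon> yy)) \<in> EY"
      unfolding EY_def using tupY ar yel gDL by auto
    have pre1: "(Inr (r, tup), \<epsilon> xx) \<in> glue_pre IY CC"
      using iRY xel gRr by (simp add: glue_pre_def CC_def)
    have pre2: "(iK K, \<epsilon> xx) \<in> glue_pre IY CC"
      using iKY[OF pqd(3)] xel CCK[OF pqd(3)] by (simp add: glue_pre_def \<sigma>_def T_def)
    have pre3: "(iK L, \<epsilon> yy) \<in> glue_pre IY CC"
      using iKY[OF pqd(4)] yel CCK[OF pqd(4)] by (simp add: glue_pre_def \<sigma>L_def TL_def)
    have i0: "Inl (arS r ! 0, tup ! 0) = iK K" using ar by (simp add: tup_def iK_def e_def)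
    have i1: "Inl (arS r ! 1, tup ! 1) = iK L" using ar by (simp add: tup_def iK_def eL_def)
    have c1: "clsY (Inr (r, tup), \<epsilon> xx) = clsY (iK K, \<epsilon> xx)"
      using glue_ident[OF e1[unfolded gp_0 i0] pre1 pre2] by (simp add: clsY_def)
    have c2: "clsY (Inr (r, tup), \<epsilon> xx) = clsY (iK L, \<epsilon> yy)"
      using glue_ident[OF e2[unfolded gp1 i1] pre1 pre3] by (simp add: clsY_def)
    have "m p = clsY (iK K, \<epsilon> xx)" using pqd(1) qp by (simp add: m_def)
    also have "\<dots> = clsY (iK L, \<epsilon> yy)" using c1 c2 by simp
    also have "\<dots> = m q" using pqd(2) qq by (simp add: m_def)
    finally show ?thesis .
  qed
  have "is_hom (glue (kc_sets k X) CK EK) (glue IY CC EY) (glue_map m)"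
    apply (rule glue_hom)
     apply (erule K4)
    apply (erule K3)
    done
  then show ?thesis using gY kap unfolding Y_def hom_to_def by auto
qed

end


lemma dir12:
  fixes arP :: "'pr::finite \<Rightarrow> 'ps::finite list"
    and arB :: "'br::finite \<Rightarrow> 'bs::finite list"
    and A :: "('ps, 'pr, 'a) struct" and A' :: "('ps, 'pr, 'a2) struct"
    and B :: "('bs, 'br, 'b) struct" and B' :: "('bs, 'br, 'b2) struct"
    and \<phi> :: "('ps, 'pr, nat, nat) interp" and \<gamma> :: "(nat, nat, 'bs, 'br, nat) gadget"
  assumes tA: "promise_template arP A A'"
    and width: "interp_width_le \<phi> k"
    and wfg: "wf_gadget arS arB \<gamma>"
    and red: "pcsp_reduction arP A A' B B' (\<lambda>X. gadget_app arS \<gamma> (interp_app arS \<phi> X))"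
  shows "pcsp_reduction arP A A' B B' (kappa arP arB k A B)"
  unfolding pcsp_reduction_def
proof (intro allI impI conjI)
  fix X :: "('ps, 'pr, nat) struct" assume X: "wf_struct arP X \<and> finite_struct X"
  have wfA: "wf_struct arP A" and finA: "finite_struct A" using tA by (auto simp: promise_template_def)
  show "X \<rightarrow>\<^sub>h A \<Longrightarrow> kappa arP arB k A B X \<rightarrow>\<^sub>h B"
    unfolding hom_to_def[of X A] using kappa_yes by blast
  assume kB': "kappa arP arB k A B X \<rightarrow>\<^sub>h B'"
  obtain XA :: "('ps, 'pr, nat) struct" where XA: "wf_struct arP XA" "finite_struct XA" "A \<rightarrow>\<^sub>h XA" "XA \<rightarrow>\<^sub>h A"
    using nat_copy[OF wfA finA] by blast
  have "gadget_app arS \<gamma> (interp_app arS \<phi> XA) \<rightarrow>\<^sub>h B" using red XA unfolding pcsp_reduction_def by blast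
  then obtain G where G: "is_hom (gadget_app arS \<gamma> (interp_app arS \<phi> XA)) B G" by (auto simp: hom_to_def)
  obtain \<iota> where iota: "is_hom A XA \<iota>" using XA(3) by (auto simp: hom_to_def)
  have "gadget_app arS \<gamma> (interp_app arS \<phi> X) \<rightarrow>\<^sub>h kappa arP arB k A B X"
    by (rule kappa_from_gadget[OF elems_finite elems_finite[OF finA] width wfg G iota]) (use X in blast)
  then have "gadget_app arS \<gamma> (interp_app arS \<phi> X) \<rightarrow>\<^sub>h B'" using kB' by (rule hom_to_trans)
  then show "X \<rightarrow>\<^sub>h A'" using red X unfolding pcsp_reduction_def by blast
qed

theorem mainTheorem6:
  fixes arP :: "'pr::finite \<Rightarrow> 'ps::finite list"
    and arB :: "'br::finite \<Rightarrow> 'bs::finite list"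
    and A :: "('ps, 'pr, 'a) struct" and A' :: "('ps, 'pr, 'a2) struct"
    and B :: "('bs, 'br, 'b) struct" and B' :: "('bs, 'br, 'b2) struct"
    and k :: nat
  assumes "k \<ge> 1"
    and "promise_template arP A A'"
    and "promise_template arB B B'"
  shows "(\<exists>(arS :: nat \<Rightarrow> nat list) (\<phi> :: ('ps, 'pr, nat, nat) interp)
             (\<gamma> :: (nat, nat, 'bs, 'br, nat) gadget).
            wf_interp arP arS \<phi> \<and> interp_finite_sig arS \<phi> \<and> interp_width_le \<phi> k \<and>
            wf_gadget arS arB \<gamma> \<and>
            pcsp_reduction arP A A' B B' (\<lambda>X. gadget_app arS \<gamma> (interp_app arS \<phi> X)))
         \<longleftrightarrow> pcsp_reduction arP A A' B B' (kappa arP arB k A B)"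
proof
  assume "\<exists>(arS :: nat \<Rightarrow> nat list) (\<phi> :: ('ps, 'pr, nat, nat) interp)
             (\<gamma> :: (nat, nat, 'bs, 'br, nat) gadget).
            wf_interp arP arS \<phi> \<and> interp_finite_sig arS \<phi> \<and> interp_width_le \<phi> k \<and>
            wf_gadget arS arB \<gamma> \<and>
            pcsp_reduction arP A A' B B' (\<lambda>X. gadget_app arS \<gamma> (interp_app arS \<phi> X))"
  then obtain arS :: "nat \<Rightarrow> nat list" and \<phi> :: "('ps, 'pr, nat, nat) interp"
      and \<gamma> :: "(nat, nat, 'bs, 'br, nat) gadget"
    where h: "interp_width_le \<phi> k" "wf_gadget arS arB \<gamma>"
      "pcsp_reduction arP A A' B B' (\<lambda>X. gadget_app arS \<gamma> (interp_app arS \<phi> X))" by blast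
  show "pcsp_reduction arP A A' B B' (kappa arP arB k A B)"
    by (rule dir12[OF assms(2) h])
next
  assume k2: "pcsp_reduction arP A A' B B' (kappa arP arB k A B)"
  interpret C: constr arP arB k A B
    using assms(2,3) by unfold_locales (auto simp: promise_template_def)
  have red: "pcsp_reduction arP A A' B B' (\<lambda>X. gadget_app C.arS C.gam (interp_app C.arS C.phi X))"
    unfolding pcsp_reduction_def
  proof (intro allI impI conjI)
    fix X :: "('ps, 'pr, nat) struct" assume X: "wf_struct arP X \<and> finite_struct X"
    show "X \<rightarrow>\<^sub>h A \<Longrightarrow> gadget_app C.arS C.gam (interp_app C.arS C.phi X) \<rightarrow>\<^sub>h B"
      unfolding hom_to_def[of X A] using C.gadget_yes by blast
    assume "gadget_app C.arS C.gam (interp_app C.arS C.phi X) \<rightarrow>\<^sub>h B'"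
    moreover have "kappa arP arB k A B X \<rightarrow>\<^sub>h gadget_app C.arS C.gam (interp_app C.arS C.phi X)"
      using C.kappa_to_gadget X by blast
    ultimately have "kappa arP arB k A B X \<rightarrow>\<^sub>h B'" using hom_to_trans by blast
    then show "X \<rightarrow>\<^sub>h A'" using k2 X unfolding pcsp_reduction_def by blast
  qed
  show "\<exists>(arS :: nat \<Rightarrow> nat list) (\<phi> :: ('ps, 'pr, nat, nat) interp)
             (\<gamma> :: (nat, nat, 'bs, 'br, nat) gadget).
            wf_interp arP arS \<phi> \<and> interp_finite_sig arS \<phi> \<and> interp_width_le \<phi> k \<and>
            wf_gadget arS arB \<gamma> \<and>
            pcsp_reduction arP A A' B B' (\<lambda>X. gadget_app arS \<gamma> (interp_app arS \<phi> X))"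
    using C.wf_interp_phi C.finite_sig_phi C.width_phi C.wf_gadget_gam red by blast
qed


end
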